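(* Let the revision protocols $\rho^c$ be arbitrary (Lipschitz) and let $\mathcal M_{\mathcal F}\subseteq\mathrm{NE}(\mathcal F)$ be nonempty and closed, with $\mathcal M=\{B_{S\to K}x:x\in\mathcal M_{\mathcal F}\}$. Assume: (i) for every $\mu\in\mathrm{MSNE}(F,\phi)$ and every $c\in[C]$, $f^{c,r}(\mu)=0$; (ii) there is a set $\bar D_x\subseteq D_x$ containing a relative neighborhood of $\mathcal M_{\mathcal F}$ in $D_x$ and a continuously differentiable $V:\bar D_x\to\mathbb R_{\ge0}$ with $V(x)>0$ on $\bar D_x\setminus\mathcal M_{\mathcal F}$, $V=0$ on $\mathcal M_{\mathcal F}$, and constants $\gamma_1,\gamma_2>0$ such that for all $x\in\bar D_x$: $\nabla V(x)^\top g(x)\le-\gamma_1d_{\mathcal M_{\mathcal F}}(x)^2$ and $\|\nabla V(x)\|\le\gamma_2d_{\mathcal M_{\mathcal F}}(x)$, where $g$ is the reduced vector field (R). Then there is $\epsilon^\star>0$ such that for all $\epsilon\in(0,\epsilon^\star)$ the set $\mathcal M$ is locally asymptotically stable under the evolutionary dynamics (E) with rates $R^c_d=\kappa^c/\epsilon$. If moreover $\bar D_x=D_x$, then $\mathcal M$ is globally asymptotically stable (on $X$).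
   Context: Setting. There are $C$ classes of players, $[C]=\{1,\dots,C\}$. For each class $c\in[C]$: $\mathcal S^c$ is a finite state set with $p^c$ elements; for each $s\in\mathcal S^c$, $\mathcal A^c(s)$ is a nonempty finite action set; $\phi^c(\cdot\mid s,a)$ is a probability distribution on $\mathcal S^c$ for each $s\in\mathcal S^c$, $a\in\mathcal A^c(s)$; $\mathcal U^c_D$ is a finite set of $n^c$ deterministic stationary policies, each $u\in\mathcal U^c_D$ assigning to every $s$ a point mass $u(\cdot\mid s)$ on some action of $\mathcal A^c(s)$; $m^c>0$ is the mass of class $c$; $R^c_d>0$ is the state-transition rate. Let $n=\sum_c n^c$. For $u\in\mathcal U^c_D$ put $\phi^{c,u}(s\mid s')=\sum_{a'\in\mathcal A^c(s')}\phi^c(s\mid s',a')u(a'\mid s')$; standing assumption: the Markov chain on $\mathcal S^c$ with kernel $\phi^{c,u}$ has a unique recurrent communicating class, hence a unique stationary distribution $\eta^{c,u}$. The population state is $\mu=(\mu^c)_{c\in[C]}\in X:=\prod_c X^c$, where $X^c=\{\mu^c\in\mathbb R_{\ge0}^{\mathcal S^c\times\mathcal U^c_D}:\sum_{s,u}\mu^c[s,u]=m^c\}$; write $\mu^c[\mathcal S^c,u]:=\sum_{s\in\mathcal S^c}\mu^c[s,u]$ and $\mu^c[\mathcal S^c,\cdot]\in\mathbb R^{n^c}_{\ge0}$ for the vector of these. A payoff map $F=(F^c)_{c\in[C]}$ is given, with $F^c$ continuously differentiable on an open neighborhood of $X$ and valued in $\mathbb R^{\mathcal U^c_D}$ ($F^c_u(\mu)$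 is the payoff of policy $u$ for class $c$). Each class has a revision protocol $\rho^c=(\rho^c_{uv})_{u,v\in\mathcal U^c_D}$, a Lipschitz continuous map $\mathbb R^{n^c}\times\mathbb R^{n^c}_{\ge0}\to\mathbb R^{n^c\times n^c}_{\ge0}$ whose first argument is a payoff vector and second a policy distribution. The evolutionary dynamics (E) are the ODE on $X$: for all $c\in[C]$, $s\in\mathcal S^c$, $u\in\mathcal U^c_D$, $\dot\mu^c[s,u]=f^{c,d}_{s,u}(\mu)+f^{c,r}_{s,u}(\mu)$, where $f^{c,d}_{s,u}(\mu)=R^c_d\sum_{s'\in\mathcal S^c}\sum_{a'\in\mathcal A^c(s')}\phi^c(s\mid s',a')u(a'\mid s')\mu^c[s',u]-R^c_d\mu^c[s,u]$ and $f^{c,r}_{s,u}(\mu)=\sum_{u'\in\mathcal U^c_D}\mu^c[s,u']\rho^c_{u'u}(F^c(\mu),\mu^c[\mathcal S^c,\cdot])-\mu^c[s,u]\sum_{u'\in\mathcal U^c_D}\rho^c_{uu'}(F^c(\mu),\mu^c[\mathcal S^c,\cdot])$. Solutions from $X$ exist, are unique and remain in $X$. A state $\mu\in X$ is a mixed stationary Nash equilibrium (MSNE) if for every $c\in[C]$: (a) for all $u\in\mathcal U^c_D$, $\mu^c[\mathcal S^c,u]>0\Rightarrow F^c_u(\mu)\ge F^c_v(\mu)$ for all $v\in\mathcal U^c_D$; and (b) $f^{c,d}_{s,u}(\mu)=0$ for all $s\in\mathcal S^c,u\in\mathcal U^c_D$. $\mathrm{MSNE}(F,\phi)$ denotes the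 set of MSNE. Two-time-scale setup. Let $B^c_{S\to K}=[e^1\otimes\eta^{c,u_1}\ \cdots\ e^{n^c}\otimes\eta^{c,u_{n^c}}]\in\mathbb R^{p^cn^c\times n^c}$ (coordinates of $\mu^c$ ordered $(s_1,u_1),\dots,(s_{p^c},u_1),\dots,(s_{p^c},u_{n^c})$; $e^i$ the standard basis of $\mathbb R^{n^c}$), and $B_{S\to K}=\mathrm{diag}_c(B^c_{S\to K})$; thus $(B_{S\to K}x)^c[s,u]=x^c_u\eta^{c,u}(s)$. Let $D_x=\prod_c\{x^c\in\mathbb R^{n^c}_{\ge0}:\mathbf 1^\top x^c=m^c\}$. The steady-state game is $\mathcal F(x):=F(B_{S\to K}x)$ (defined on a neighborhood of $D_x$); $\mathrm{NE}(\mathcal F)$ is the set of $x\in D_x$ with $x^c_u>0\Rightarrow\mathcal F^c_u(x)\ge\mathcal F^c_v(x)$ for all $c,u,v$. One has $\mathrm{MSNE}(F,\phi)=\{B_{S\to K}x:x\in\mathrm{NE}(\mathcal F)\}$ and $\mu^c[\mathcal S^c,u]=x^c_u$ for $\mu=B_{S\to K}x$. For a closed $\mathcal M_{\mathcal F}\subseteq D_x$ put $\mathcal M=\{B_{S\to K}x:x\in\mathcal M_{\mathcal F}\}$. The reduced vector field (R) on $D_x$ is $g^c_u(x)=\sum_{u'}x^c_{u'}\rho^c_{u'u}(\mathcal F^c(x),x^c)-x^c_u\sum_{u'}\rho^c_{uu'}(\mathcal F^c(x),x^c)$. Time-scale parametrization: fix constants $\kappa^c\ge1$ with $\min_c\kappa^c=1$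 and set $R^c_d=\kappa^c/\epsilon$ for $\epsilon>0$ (so $\epsilon=1/\min_cR^c_d$). $d_A(y)=\inf_{a\in A}\|y-a\|$. *)

theory Defs
  imports "HOL-Analysis.Analysis"
begin

text \<open>Classes are the elements of a finite type 'c (so [C] = UNIV).
  All state sets S c are subsets of a finite type 's, all action sets A c s
  subsets of a finite type 'a; a deterministic stationary policy is a map
  u :: 's => 'a (point mass on u s at state s).
  A population state mu is a vector in real^('c * 's * ('s => 'a)); its
  coordinate (c,s,u) is mu^c[s,u].  Coordinates with s not in S c or u not in
  U c are forced to be 0 on X.  Likewise a policy distribution x lives in
  real^('c * ('s => 'a)), coordinate (c,u) being x^c_u.
  phi c s a s' is the probability phi^c(s' | s, a).\<close>

type_synonym ('c,'s,'a) pstate = "real^('c \<times> 's \<times> ('s \<Rightarrow> 'a))"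
type_synonym ('c,'s,'a) pdist = "real^('c \<times> ('s \<Rightarrow> 'a))"

definition C1_on :: "'x::real_normed_vector set \<Rightarrow> ('x \<Rightarrow> 'y::real_normed_vector) \<Rightarrow> bool" where
  "C1_on G f \<longleftrightarrow> (\<exists>f'. (\<forall>x\<in>G. (f has_derivative blinfun_apply (f' x)) (at x)) \<and> continuous_on G f')"

definition kern :: "('c::finite \<Rightarrow> 's::finite \<Rightarrow> 'a::finite \<Rightarrow> 's \<Rightarrow> real) \<Rightarrow> 'c \<Rightarrow> ('s \<Rightarrow> 'a) \<Rightarrow> 's \<Rightarrow> 's \<Rightarrow> real" where
  "kern phi c u s s' = phi c s (u s) s'"

definition reach :: "'s::finite set \<Rightarrow> ('s \<Rightarrow> 's \<Rightarrow> real) \<Rightarrow> 's \<Rightarrow> 's \<Rightarrow> bool" where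
  "reach S P s t \<longleftrightarrow> (s, t) \<in> {(x, y). x \<in> S \<and> y \<in> S \<and> P x y > 0}\<^sup>*"

definition recurrent :: "'s::finite set \<Rightarrow> ('s \<Rightarrow> 's \<Rightarrow> real) \<Rightarrow> 's \<Rightarrow> bool" where
  "recurrent S P s \<longleftrightarrow> s \<in> S \<and> (\<forall>t\<in>S. reach S P s t \<longrightarrow> reach S P t s)"

text \<open>The chain has a unique recurrent communicating class (in a finite chain
  recurrent states always exist; uniqueness means they all communicate).\<close>
definition unique_recurrent_class :: "'s::finite set \<Rightarrow> ('s \<Rightarrow> 's \<Rightarrow> real) \<Rightarrow> bool" where
  "unique_recurrent_class S P \<longleftrightarrow>
     (\<forall>s\<in>S. \<forall>t\<in>S. recurrent S P s \<and> recurrent S P t \<longrightarrow> reach S P s t)"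

definition stationary_dist :: "'s::finite set \<Rightarrow> ('s \<Rightarrow> 's \<Rightarrow> real) \<Rightarrow> ('s \<Rightarrow> real) \<Rightarrow> bool" where
  "stationary_dist S P eta \<longleftrightarrow>
     (\<forall>s. s \<notin> S \<longrightarrow> eta s = 0) \<and> (\<forall>s\<in>S. eta s \<ge> 0) \<and> (\<Sum>s\<in>S. eta s) = 1 \<and>
     (\<forall>s\<in>S. (\<Sum>s'\<in>S. eta s' * P s' s) = eta s)"

definition eta :: "('c::finite \<Rightarrow> 's::finite set) \<Rightarrow> ('c \<Rightarrow> 's \<Rightarrow> 'a::finite \<Rightarrow> 's \<Rightarrow> real) \<Rightarrow> 'c \<Rightarrow> ('s \<Rightarrow> 'a) \<Rightarrow> 's \<Rightarrow> real" where
  "eta S phi c u = (THE e. stationary_dist (S c) (kern phi c u) e)"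

definition popX :: "('c::finite \<Rightarrow> 's::finite set) \<Rightarrow> ('c \<Rightarrow> ('s \<Rightarrow> 'a::finite) set) \<Rightarrow> ('c \<Rightarrow> real) \<Rightarrow> ('c,'s,'a) pstate set" where
  "popX S U m = {\<mu>. (\<forall>c s u. \<mu> $ (c, s, u) \<ge> 0) \<and>
                    (\<forall>c s u. \<not> (s \<in> S c \<and> u \<in> U c) \<longrightarrow> \<mu> $ (c, s, u) = 0) \<and>
                    (\<forall>c. (\<Sum>s\<in>S c. \<Sum>u\<in>U c. \<mu> $ (c, s, u)) = m c)}"

definition pol_mass :: "('c::finite \<Rightarrow> 's::finite set) \<Rightarrow> ('c,'s,'a::finite) pstate \<Rightarrow> 'c \<Rightarrow> ('s \<Rightarrow> 'a) \<Rightarrow> real" where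
  "pol_mass S \<mu> c u = (\<Sum>s\<in>S c. \<mu> $ (c, s, u))"

definition pol_vec :: "('c::finite \<Rightarrow> 's::finite set) \<Rightarrow> ('c \<Rightarrow> ('s \<Rightarrow> 'a::finite) set) \<Rightarrow> ('c,'s,'a) pstate \<Rightarrow> 'c \<Rightarrow> real^('s \<Rightarrow> 'a)" where
  "pol_vec S U \<mu> c = (\<chi> u. if u \<in> U c then pol_mass S \<mu> c u else 0)"

definition pay_vec :: "('c::finite \<Rightarrow> ('s::finite \<Rightarrow> 'a::finite) set) \<Rightarrow> ('c \<Rightarrow> ('c,'s,'a) pstate \<Rightarrow> ('s \<Rightarrow> 'a) \<Rightarrow> real)
     \<Rightarrow> ('c,'s,'a) pstate \<Rightarrow> 'c \<Rightarrow> real^('s \<Rightarrow> 'a)" where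
  "pay_vec U F \<mu> c = (\<chi> u. if u \<in> U c then F c \<mu> u else 0)"

text \<open>f^{c,d}_{s,u}(mu); the sum over actions collapses because u(.|s') is the
  point mass at u s'.\<close>
definition fd :: "('c::finite \<Rightarrow> 's::finite set) \<Rightarrow> ('c \<Rightarrow> 's \<Rightarrow> 'a::finite \<Rightarrow> 's \<Rightarrow> real) \<Rightarrow> ('c \<Rightarrow> real)
     \<Rightarrow> ('c,'s,'a) pstate \<Rightarrow> 'c \<Rightarrow> 's \<Rightarrow> ('s \<Rightarrow> 'a) \<Rightarrow> real" where
  "fd S phi R \<mu> c s u =
     R c * (\<Sum>s'\<in>S c. phi c s' (u s') s * \<mu> $ (c, s', u)) - R c * \<mu> $ (c, s, u)"

text \<open>Revision protocol: rho c p q u v = rho^c_{uv}(p, q).\<close>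
definition fr :: "('c::finite \<Rightarrow> 's::finite set) \<Rightarrow> ('c \<Rightarrow> ('s \<Rightarrow> 'a::finite) set)
     \<Rightarrow> ('c \<Rightarrow> ('c,'s,'a) pstate \<Rightarrow> ('s \<Rightarrow> 'a) \<Rightarrow> real)
     \<Rightarrow> ('c \<Rightarrow> real^('s \<Rightarrow> 'a) \<Rightarrow> real^('s \<Rightarrow> 'a) \<Rightarrow> ('s \<Rightarrow> 'a) \<Rightarrow> ('s \<Rightarrow> 'a) \<Rightarrow> real)
     \<Rightarrow> ('c,'s,'a) pstate \<Rightarrow> 'c \<Rightarrow> 's \<Rightarrow> ('s \<Rightarrow> 'a) \<Rightarrow> real" where
  "fr S U F rho \<mu> c s u =
     (\<Sum>u'\<in>U c. \<mu> $ (c, s, u') * rho c (pay_vec U F \<mu> c) (pol_vec S U \<mu> c) u' u)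
     - \<mu> $ (c, s, u) * (\<Sum>u'\<in>U c. rho c (pay_vec U F \<mu> c) (pol_vec S U \<mu> c) u u')"

definition Efield :: "('c::finite \<Rightarrow> 's::finite set) \<Rightarrow> ('c \<Rightarrow> ('s \<Rightarrow> 'a::finite) set) \<Rightarrow> ('c \<Rightarrow> 's \<Rightarrow> 'a \<Rightarrow> 's \<Rightarrow> real)
     \<Rightarrow> ('c \<Rightarrow> real) \<Rightarrow> ('c \<Rightarrow> ('c,'s,'a) pstate \<Rightarrow> ('s \<Rightarrow> 'a) \<Rightarrow> real)
     \<Rightarrow> ('c \<Rightarrow> real^('s \<Rightarrow> 'a) \<Rightarrow> real^('s \<Rightarrow> 'a) \<Rightarrow> ('s \<Rightarrow> 'a) \<Rightarrow> ('s \<Rightarrow> 'a) \<Rightarrow> real)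
     \<Rightarrow> ('c,'s,'a) pstate \<Rightarrow> ('c,'s,'a) pstate" where
  "Efield S U phi R F rho \<mu> =
     (\<chi> i. case i of (c, s, u) \<Rightarrow>
        if s \<in> S c \<and> u \<in> U c then fd S phi R \<mu> c s u + fr S U F rho \<mu> c s u else 0)"

definition E_solution :: "('c::finite \<Rightarrow> 's::finite set) \<Rightarrow> ('c \<Rightarrow> ('s \<Rightarrow> 'a::finite) set) \<Rightarrow> ('c \<Rightarrow> real)
     \<Rightarrow> ('c \<Rightarrow> 's \<Rightarrow> 'a \<Rightarrow> 's \<Rightarrow> real)
     \<Rightarrow> ('c \<Rightarrow> real) \<Rightarrow> ('c \<Rightarrow> ('c,'s,'a) pstate \<Rightarrow> ('s \<Rightarrow> 'a) \<Rightarrow> real)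
     \<Rightarrow> ('c \<Rightarrow> real^('s \<Rightarrow> 'a) \<Rightarrow> real^('s \<Rightarrow> 'a) \<Rightarrow> ('s \<Rightarrow> 'a) \<Rightarrow> ('s \<Rightarrow> 'a) \<Rightarrow> real)
     \<Rightarrow> ('c,'s,'a) pstate \<Rightarrow> (real \<Rightarrow> ('c,'s,'a) pstate) \<Rightarrow> bool" where
  "E_solution S U m phi R F rho \<mu>0 traj \<longleftrightarrow>
     traj 0 = \<mu>0 \<and> (\<forall>t\<ge>0. traj t \<in> popX S U m) \<and>
     (\<forall>t\<ge>0. (traj has_vector_derivative Efield S U phi R F rho (traj t)) (at t within {0..}))"

text \<open>Condition (b) is f^{c,d}(mu) = 0, which does not depend on the rate
  R^c_d > 0; we evaluate it with rate 1.\<close>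
definition MSNE :: "('c::finite \<Rightarrow> 's::finite set) \<Rightarrow> ('c \<Rightarrow> ('s \<Rightarrow> 'a::finite) set) \<Rightarrow> ('c \<Rightarrow> real)
     \<Rightarrow> ('c \<Rightarrow> 's \<Rightarrow> 'a \<Rightarrow> 's \<Rightarrow> real)
     \<Rightarrow> ('c \<Rightarrow> ('c,'s,'a) pstate \<Rightarrow> ('s \<Rightarrow> 'a) \<Rightarrow> real) \<Rightarrow> ('c,'s,'a) pstate set" where
  "MSNE S U m phi F = {\<mu> \<in> popX S U m. \<forall>c.
      (\<forall>u\<in>U c. pol_mass S \<mu> c u > 0 \<longrightarrow> (\<forall>v\<in>U c. F c \<mu> u \<ge> F c \<mu> v)) \<and>
      (\<forall>s\<in>S c. \<forall>u\<in>U c. fd S phi (\<lambda>_. 1) \<mu> c s u = 0)}"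

definition Dx :: "('c::finite \<Rightarrow> ('s::finite \<Rightarrow> 'a::finite) set) \<Rightarrow> ('c \<Rightarrow> real) \<Rightarrow> ('c,'s,'a) pdist set" where
  "Dx U m = {x. (\<forall>i. x $ i \<ge> 0) \<and> (\<forall>c u. u \<notin> U c \<longrightarrow> x $ (c, u) = 0) \<and>
                (\<forall>c. (\<Sum>u\<in>U c. x $ (c, u)) = m c)}"

definition BSK :: "('c::finite \<Rightarrow> 's::finite set) \<Rightarrow> ('c \<Rightarrow> ('s \<Rightarrow> 'a::finite) set) \<Rightarrow> ('c \<Rightarrow> 's \<Rightarrow> 'a \<Rightarrow> 's \<Rightarrow> real)
     \<Rightarrow> ('c,'s,'a) pdist \<Rightarrow> ('c,'s,'a) pstate" where
  "BSK S U phi x = (\<chi> i. case i of (c, s, u) \<Rightarrow>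
      if s \<in> S c \<and> u \<in> U c then x $ (c, u) * eta S phi c u s else 0)"

definition ssgame :: "('c::finite \<Rightarrow> 's::finite set) \<Rightarrow> ('c \<Rightarrow> ('s \<Rightarrow> 'a::finite) set) \<Rightarrow> ('c \<Rightarrow> 's \<Rightarrow> 'a \<Rightarrow> 's \<Rightarrow> real)
     \<Rightarrow> ('c \<Rightarrow> ('c,'s,'a) pstate \<Rightarrow> ('s \<Rightarrow> 'a) \<Rightarrow> real)
     \<Rightarrow> 'c \<Rightarrow> ('c,'s,'a) pdist \<Rightarrow> ('s \<Rightarrow> 'a) \<Rightarrow> real" where
  "ssgame S U phi F c x u = F c (BSK S U phi x) u"

definition NE_ss :: "('c::finite \<Rightarrow> 's::finite set) \<Rightarrow> ('c \<Rightarrow> ('s \<Rightarrow> 'a::finite) set) \<Rightarrow> ('c \<Rightarrow> real)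
     \<Rightarrow> ('c \<Rightarrow> 's \<Rightarrow> 'a \<Rightarrow> 's \<Rightarrow> real)
     \<Rightarrow> ('c \<Rightarrow> ('c,'s,'a) pstate \<Rightarrow> ('s \<Rightarrow> 'a) \<Rightarrow> real) \<Rightarrow> ('c,'s,'a) pdist set" where
  "NE_ss S U m phi F = {x \<in> Dx U m. \<forall>c. \<forall>u\<in>U c. x $ (c, u) > 0 \<longrightarrow>
      (\<forall>v\<in>U c. ssgame S U phi F c x u \<ge> ssgame S U phi F c x v)}"

definition gred :: "('c::finite \<Rightarrow> 's::finite set) \<Rightarrow> ('c \<Rightarrow> ('s \<Rightarrow> 'a::finite) set) \<Rightarrow> ('c \<Rightarrow> 's \<Rightarrow> 'a \<Rightarrow> 's \<Rightarrow> real)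
     \<Rightarrow> ('c \<Rightarrow> ('c,'s,'a) pstate \<Rightarrow> ('s \<Rightarrow> 'a) \<Rightarrow> real)
     \<Rightarrow> ('c \<Rightarrow> real^('s \<Rightarrow> 'a) \<Rightarrow> real^('s \<Rightarrow> 'a) \<Rightarrow> ('s \<Rightarrow> 'a) \<Rightarrow> ('s \<Rightarrow> 'a) \<Rightarrow> real)
     \<Rightarrow> ('c,'s,'a) pdist \<Rightarrow> ('c,'s,'a) pdist" where
  "gred S U phi F rho x = (\<chi> i. case i of (c, u) \<Rightarrow>
      if u \<in> U c then
        (let p = (\<chi> v. if v \<in> U c then ssgame S U phi F c x v else 0);
             q = (\<chi> v. if v \<in> U c then x $ (c, v) else 0)
         in (\<Sum>u'\<in>U c. x $ (c, u') * rho c p q u' u) - x $ (c, u) * (\<Sum>u'\<in>U c. rho c p q u u'))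
      else 0)"

definition E_LAS :: "('c::finite \<Rightarrow> 's::finite set) \<Rightarrow> ('c \<Rightarrow> ('s \<Rightarrow> 'a::finite) set) \<Rightarrow> ('c \<Rightarrow> real)
     \<Rightarrow> ('c \<Rightarrow> 's \<Rightarrow> 'a \<Rightarrow> 's \<Rightarrow> real)
     \<Rightarrow> ('c \<Rightarrow> real) \<Rightarrow> ('c \<Rightarrow> ('c,'s,'a) pstate \<Rightarrow> ('s \<Rightarrow> 'a) \<Rightarrow> real)
     \<Rightarrow> ('c \<Rightarrow> real^('s \<Rightarrow> 'a) \<Rightarrow> real^('s \<Rightarrow> 'a) \<Rightarrow> ('s \<Rightarrow> 'a) \<Rightarrow> ('s \<Rightarrow> 'a) \<Rightarrow> real)
     \<Rightarrow> ('c,'s,'a) pstate set \<Rightarrow> bool" where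
  "E_LAS S U m phi R F rho M \<longleftrightarrow>
     (\<forall>e>0. \<exists>d>0. \<forall>\<mu>0\<in>popX S U m. \<forall>traj.
        infdist \<mu>0 M < d \<and> E_solution S U m phi R F rho \<mu>0 traj \<longrightarrow>
        (\<forall>t\<ge>0. infdist (traj t) M < e)) \<and>
     (\<exists>d>0. \<forall>\<mu>0\<in>popX S U m. \<forall>traj.
        infdist \<mu>0 M < d \<and> E_solution S U m phi R F rho \<mu>0 traj \<longrightarrow>
        ((\<lambda>t. infdist (traj t) M) \<longlongrightarrow> 0) at_top)"

definition E_GAS :: "('c::finite \<Rightarrow> 's::finite set) \<Rightarrow> ('c \<Rightarrow> ('s \<Rightarrow> 'a::finite) set) \<Rightarrow> ('c \<Rightarrow> real)
     \<Rightarrow> ('c \<Rightarrow> 's \<Rightarrow> 'a \<Rightarrow> 's \<Rightarrow> real)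
     \<Rightarrow> ('c \<Rightarrow> real) \<Rightarrow> ('c \<Rightarrow> ('c,'s,'a) pstate \<Rightarrow> ('s \<Rightarrow> 'a) \<Rightarrow> real)
     \<Rightarrow> ('c \<Rightarrow> real^('s \<Rightarrow> 'a) \<Rightarrow> real^('s \<Rightarrow> 'a) \<Rightarrow> ('s \<Rightarrow> 'a) \<Rightarrow> ('s \<Rightarrow> 'a) \<Rightarrow> real)
     \<Rightarrow> ('c,'s,'a) pstate set \<Rightarrow> bool" where
  "E_GAS S U m phi R F rho M \<longleftrightarrow>
     (\<forall>e>0. \<exists>d>0. \<forall>\<mu>0\<in>popX S U m. \<forall>traj.
        infdist \<mu>0 M < d \<and> E_solution S U m phi R F rho \<mu>0 traj \<longrightarrow>
        (\<forall>t\<ge>0. infdist (traj t) M < e)) \<and>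
     (\<forall>\<mu>0\<in>popX S U m. \<forall>traj.
        E_solution S U m phi R F rho \<mu>0 traj \<longrightarrow>
        ((\<lambda>t. infdist (traj t) M) \<longlongrightarrow> 0) at_top)"

end

theory Submission
  imports Defs
begin


lemma l1_l2_gen: fixes w :: "'s \<Rightarrow> real" shows "(\<Sum>s\<in>S. (w s)\<^sup>2) \<le> (\<Sum>s\<in>S. \<bar>w s\<bar>)\<^sup>2"
proof -
  have "(\<Sum>s\<in>S. (w s)\<^sup>2) = (\<Sum>s\<in>S. \<bar>w s\<bar>\<^sup>2)" by (simp only: power2_abs)
  also have "\<dots> \<le> (\<Sum>s\<in>S. \<bar>w s\<bar>)\<^sup>2"
  proof (induction S rule: infinite_finite_induct)
    case (insert x F)
    have "(\<Sum>s\<in>insert x F. \<bar>w s\<bar>\<^sup>2) = \<bar>w x\<bar>\<^sup>2 + (\<Sum>s\<in>F. \<bar>w s\<bar>\<^sup>2)" using insert by simp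
    also have "\<dots> \<le> \<bar>w x\<bar>\<^sup>2 + (\<Sum>s\<in>F. \<bar>w s\<bar>)\<^sup>2" using insert by simp
    also have "\<dots> \<le> (\<bar>w x\<bar> + (\<Sum>s\<in>F. \<bar>w s\<bar>))\<^sup>2"
      by (simp add: power2_sum sum_nonneg)
    finally show ?case using insert by simp
  qed auto
  finally show ?thesis .
qed

locale mchain =
  fixes S :: "'s::finite set" and P :: "'s \<Rightarrow> 's \<Rightarrow> real"
  assumes S_ne: "S \<noteq> {}"
    and P_nonneg: "\<And>s t. s \<in> S \<Longrightarrow> t \<in> S \<Longrightarrow> P s t \<ge> 0"
    and P_sum: "\<And>s. s \<in> S \<Longrightarrow> (\<Sum>t\<in>S. P s t) = 1"
    and urc: "unique_recurrent_class S P"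
begin

definition Al :: "'s \<Rightarrow> 's \<Rightarrow> real" where
  "Al r t = ((if r = t then 1 else 0) + P r t) / 2"

definition Aop :: "('s \<Rightarrow> real) \<Rightarrow> 's \<Rightarrow> real" where
  "Aop w = (\<lambda>t. \<Sum>r\<in>S. w r * Al r t)"

definition ap :: "nat \<Rightarrow> ('s \<Rightarrow> real) \<Rightarrow> 's \<Rightarrow> real" where
  "ap k w = (Aop ^^ k) w"

fun Kp :: "nat \<Rightarrow> 's \<Rightarrow> 's \<Rightarrow> real" where
  "Kp 0 s t = (if s = t then 1 else 0)"
| "Kp (Suc k) s t = (\<Sum>r\<in>S. Al s r * Kp k r t)"

lemma Al_nonneg: "s \<in> S \<Longrightarrow> t \<in> S \<Longrightarrow> Al s t \<ge> 0"
  using P_nonneg by (simp add: Al_def)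

lemma Al_sum: "s \<in> S \<Longrightarrow> (\<Sum>t\<in>S. Al s t) = 1"
proof -
  assume s: "s \<in> S"
  have "(\<Sum>t\<in>S. Al s t) = ((\<Sum>t\<in>S. (if s = t then 1 else 0)) + (\<Sum>t\<in>S. P s t)) / 2"
    unfolding Al_def by (simp only: sum.distrib[symmetric] sum_divide_distrib)
  also have "\<dots> = 1" using s P_sum[OF s] by simp
  finally show ?thesis .
qed

lemma ap_Kp: "t \<in> S \<Longrightarrow> ap k w t = (\<Sum>s\<in>S. w s * Kp k s t)"
proof (induction k arbitrary: w)
  case 0
  then show ?case by (simp add: ap_def if_distrib cong: if_cong)
next
  case (Suc k)
  have "ap (Suc k) w t = ap k (Aop w) t" by (simp add: ap_def funpow_Suc_right del: funpow.simps)
  also have "\<dots> = (\<Sum>r\<in>S. Aop w r * Kp k r t)" using Suc by simp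
  also have "\<dots> = (\<Sum>r\<in>S. \<Sum>s\<in>S. w s * Al s r * Kp k r t)"
    by (simp add: Aop_def sum_distrib_right)
  also have "\<dots> = (\<Sum>s\<in>S. \<Sum>r\<in>S. w s * Al s r * Kp k r t)" by (rule sum.swap)
  also have "\<dots> = (\<Sum>s\<in>S. w s * Kp (Suc k) s t)"
    by (simp add: sum_distrib_left mult.assoc)
  finally show ?case .
qed

lemma Kp_nonneg: "s \<in> S \<Longrightarrow> t \<in> S \<Longrightarrow> Kp k s t \<ge> 0"
proof (induction k arbitrary: s)
  case 0 then show ?case by simp
next
  case (Suc k) then show ?case by (auto intro!: sum_nonneg mult_nonneg_nonneg Al_nonneg)
qed

lemma Kp_sum: "s \<in> S \<Longrightarrow> (\<Sum>t\<in>S. Kp k s t) = 1"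
proof (induction k arbitrary: s)
  case 0 then show ?case by simp
next
  case (Suc k)
  have "(\<Sum>t\<in>S. Kp (Suc k) s t) = (\<Sum>r\<in>S. \<Sum>t\<in>S. Al s r * Kp k r t)"
    unfolding Kp.simps by (rule sum.swap)
  also have "\<dots> = (\<Sum>r\<in>S. Al s r)" by (simp add: sum_distrib_left[symmetric] Suc)
  also have "\<dots> = 1" using Al_sum Suc by simp
  finally show ?case .
qed

lemma Kp_le1: "s \<in> S \<Longrightarrow> t \<in> S \<Longrightarrow> Kp k s t \<le> 1"
proof -
  assume st: "s \<in> S" "t \<in> S"
  have "Kp k s t \<le> (\<Sum>t\<in>S. Kp k s t)"
    by (rule member_le_sum) (use st Kp_nonneg in auto)
  then show ?thesis using Kp_sum[OF st(1)] by simp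
qed

lemma Kp_Suc_ge: "s \<in> S \<Longrightarrow> r \<in> S \<Longrightarrow> t \<in> S \<Longrightarrow> Kp (Suc k) s t \<ge> Al s r * Kp k r t"
  by simp (rule member_le_sum, auto intro!: mult_nonneg_nonneg Al_nonneg Kp_nonneg)

lemma Kp_pos_mono: "s \<in> S \<Longrightarrow> t \<in> S \<Longrightarrow> Kp k s t > 0 \<Longrightarrow> k \<le> j \<Longrightarrow> Kp j s t > 0"
proof (induction j)
  case 0 then show ?case by simp
next
  case (Suc j)
  show ?case
  proof (cases "k = Suc j")
    case True then show ?thesis using Suc by simp
  next
    case False
    then have "Kp j s t > 0" using Suc by simp
    moreover have "Al s s = (1 + P s s) / 2" by (simp add: Al_def)
    then have "Al s s > 0" using P_nonneg[of s s] Suc.prems by simp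
    ultimately have "Al s s * Kp j s t > 0" by simp
    then show ?thesis using Kp_Suc_ge[of s s t j] Suc.prems by linarith
  qed
qed

lemma reach_pos: "reach S P s t \<Longrightarrow> s \<in> S \<Longrightarrow> t \<in> S \<Longrightarrow> \<exists>k. Kp k s t > 0"
  unfolding reach_def
proof (induction rule: converse_rtrancl_induct)
  case base then show ?case by (intro exI[of _ 0]) simp
next
  case (step y z)
  then have yz: "y \<in> S" "z \<in> S" "P y z > 0" by auto
  then obtain k where k: "Kp k z t > 0" using step by auto
  have "Al y z > 0" using yz P_nonneg by (auto simp: Al_def)
  then have "Al y z * Kp k z t > 0" using k by simp
  then show ?case using Kp_Suc_ge[of y z t k] yz step.prems by (intro exI[of _ "Suc k"]) linarith
qed

lemma reach_refl: "reach S P s s"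
  by (simp add: reach_def)

lemma reach_trans: "reach S P s t \<Longrightarrow> reach S P t u \<Longrightarrow> reach S P s u"
  unfolding reach_def by (rule rtrancl_trans)

lemma reach_in: "reach S P s t \<Longrightarrow> s \<in> S \<Longrightarrow> t \<in> S"
  unfolding reach_def by (induction rule: rtrancl_induct) auto

lemma reaches_recurrent: "s \<in> S \<Longrightarrow> \<exists>t. recurrent S P t \<and> reach S P s t"
proof -
  assume s: "s \<in> S"
  define R where "R = (\<lambda>t. {v \<in> S. reach S P t v})"
  have fin: "finite (R t)" for t by (simp add: R_def)
  define T where "T = {t. reach S P s t}"
  have "s \<in> T" by (simp add: T_def reach_refl)
  obtain t where t: "t \<in> T" and tmin: "\<forall>t'\<in>T. card (R t) \<le> card (R t')"
    using ex_has_least_nat[of "\<lambda>t. t \<in> T" s "\<lambda>t. card (R t)"] \<open>s \<in> T\<close> by auto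
  have tS: "t \<in> S" using t s reach_in by (auto simp: T_def)
  have "recurrent S P t"
    unfolding recurrent_def
  proof (intro conjI ballI impI)
    show "t \<in> S" by fact
    fix v assume v: "v \<in> S" "reach S P t v"
    have "v \<in> T" using t v by (auto simp: T_def intro: reach_trans)
    have sub: "R v \<subseteq> R t" using v by (auto simp: R_def intro: reach_trans)
    have "card (R t) \<le> card (R v)" using tmin \<open>v \<in> T\<close> by auto
    then have "R v = R t" using sub fin by (simp add: card_seteq)
    moreover have "t \<in> R t" using tS by (simp add: R_def reach_refl)
    ultimately have "t \<in> R v" by simp
    then show "reach S P v t" by (simp add: R_def)
  qed
  then show ?thesis using t by (auto simp: T_def)
qed

lemma doeblin: "\<exists>n\<ge>1. \<exists>r\<in>S. \<exists>\<delta>>0. \<forall>s\<in>S. Kp n s r \<ge> \<delta>"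
proof -
  obtain s0 where s0: "s0 \<in> S" using S_ne by auto
  obtain r where r: "recurrent S P r" using reaches_recurrent[OF s0] by auto
  have rS: "r \<in> S" using r by (simp add: recurrent_def)
  have "\<forall>s\<in>S. reach S P s r"
  proof
    fix s assume s: "s \<in> S"
    obtain t where t: "recurrent S P t" "reach S P s t" using reaches_recurrent[OF s] by auto
    have "t \<in> S" using t by (simp add: recurrent_def)
    then have "reach S P t r" using urc t r rS unfolding unique_recurrent_class_def by blast
    then show "reach S P s r" using t reach_trans by blast
  qed
  then have "\<forall>s\<in>S. \<exists>k. Kp k s r > 0" using reach_pos rS by blast
  then obtain k where k: "\<forall>s\<in>S. Kp (k s) s r > 0" by metis
  define n where "n = Suc (Max (k ` S))"
  have kn: "k s \<le> n" if "s \<in> S" for s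
    using that by (simp add: n_def le_SucI)
  have pos: "\<forall>s\<in>S. Kp n s r > 0" using k kn Kp_pos_mono rS by blast
  define \<delta> where "\<delta> = Min ((\<lambda>s. Kp n s r) ` S)"
  have "\<delta> > 0" unfolding \<delta>_def using pos S_ne by (subst Min_gr_iff) auto
  moreover have "\<forall>s\<in>S. Kp n s r \<ge> \<delta>" unfolding \<delta>_def by (auto intro: Min_le)
  ultimately show ?thesis using rS by (intro exI[of _ n]) (auto simp: n_def)
qed

lemma ap_sum: "(\<Sum>t\<in>S. ap k w t) = (\<Sum>s\<in>S. w s)"
proof -
  have "(\<Sum>t\<in>S. ap k w t) = (\<Sum>t\<in>S. \<Sum>s\<in>S. w s * Kp k s t)" by (simp add: ap_Kp)
  also have "\<dots> = (\<Sum>s\<in>S. \<Sum>t\<in>S. w s * Kp k s t)" by (rule sum.swap)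
  also have "\<dots> = (\<Sum>s\<in>S. w s)" by (simp add: sum_distrib_left[symmetric] Kp_sum)
  finally show ?thesis .
qed

lemma ap_add: "ap (a + b) w = ap b (ap a w)"
  unfolding ap_def by (subst add.commute) (simp only: funpow_add comp_apply)

lemma contract:
  assumes r: "r \<in> S" and d: "\<forall>s\<in>S. Kp n s r \<ge> \<delta>" and z: "(\<Sum>s\<in>S. w s) = 0"
  shows "(\<Sum>t\<in>S. \<bar>ap n w t\<bar>) \<le> (1 - \<delta>) * (\<Sum>s\<in>S. \<bar>w s\<bar>)"
proof -
  define K' where "K' s t = Kp n s t - (if t = r then \<delta> else 0)" for s t
  have K'nn: "K' s t \<ge> 0" if "s \<in> S" "t \<in> S" for s t
    using d that Kp_nonneg[of s t n] by (auto simp: K'_def)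
  have eq: "ap n w t = (\<Sum>s\<in>S. w s * K' s t)" if "t \<in> S" for t
  proof -
    have "(\<Sum>s\<in>S. w s * K' s t) = (\<Sum>s\<in>S. w s * Kp n s t) - (\<Sum>s\<in>S. w s) * (if t = r then \<delta> else 0)"
      by (simp add: K'_def right_diff_distrib sum_subtractf sum_distrib_right)
    then show ?thesis using z that by (simp add: ap_Kp)
  qed
  have "(\<Sum>t\<in>S. \<bar>ap n w t\<bar>) \<le> (\<Sum>t\<in>S. \<Sum>s\<in>S. \<bar>w s\<bar> * K' s t)"
  proof (rule sum_mono)
    fix t assume t: "t \<in> S"
    have "\<bar>ap n w t\<bar> \<le> (\<Sum>s\<in>S. \<bar>w s * K' s t\<bar>)" using eq[OF t] by (simp add: sum_abs)
    also have "\<dots> = (\<Sum>s\<in>S. \<bar>w s\<bar> * K' s t)"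
      by (rule sum.cong) (use K'nn t in \<open>auto simp: abs_mult\<close>)
    finally show "\<bar>ap n w t\<bar> \<le> (\<Sum>s\<in>S. \<bar>w s\<bar> * K' s t)" .
  qed
  also have "\<dots> = (\<Sum>s\<in>S. \<bar>w s\<bar> * (\<Sum>t\<in>S. K' s t))"
    by (subst sum.swap) (simp add: sum_distrib_left)
  also have "\<dots> = (\<Sum>s\<in>S. \<bar>w s\<bar> * (1 - \<delta>))"
  proof (rule sum.cong)
    fix s assume s: "s \<in> S"
    have "(\<Sum>t\<in>S. K' s t) = (\<Sum>t\<in>S. Kp n s t) - (\<Sum>t\<in>S. (if t = r then \<delta> else 0))"
      by (simp add: K'_def sum_subtractf)
    also have "\<dots> = 1 - \<delta>" using Kp_sum[OF s] r by simp
    finally show "\<bar>w s\<bar> * (\<Sum>t\<in>S. K' s t) = \<bar>w s\<bar> * (1 - \<delta>)" by simp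
  qed simp
  also have "\<dots> = (1 - \<delta>) * (\<Sum>s\<in>S. \<bar>w s\<bar>)" by (subst sum_distrib_right[symmetric]) (rule mult.commute)
  finally show ?thesis .
qed

lemma contract_iter:
  assumes r: "r \<in> S" and d: "\<forall>s\<in>S. Kp n s r \<ge> \<delta>" and z: "(\<Sum>s\<in>S. w s) = 0"
    and d1: "\<delta> \<le> 1"
  shows "(\<Sum>t\<in>S. \<bar>ap (j * n) w t\<bar>) \<le> (1 - \<delta>) ^ j * (\<Sum>s\<in>S. \<bar>w s\<bar>)"
proof (induction j)
  case 0 then show ?case by (simp add: ap_def)
next
  case (Suc j)
  have "ap (Suc j * n) w = ap n (ap (j * n) w)" by (simp add: ap_add[symmetric] add.commute)
  moreover have "(\<Sum>s\<in>S. ap (j * n) w s) = 0" using z by (simp add: ap_sum)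
  ultimately have "(\<Sum>t\<in>S. \<bar>ap (Suc j * n) w t\<bar>) \<le> (1 - \<delta>) * (\<Sum>t\<in>S. \<bar>ap (j * n) w t\<bar>)"
    using contract[OF r d] by simp
  also have "\<dots> \<le> (1 - \<delta>) * ((1 - \<delta>) ^ j * (\<Sum>s\<in>S. \<bar>w s\<bar>))"
    using Suc d1 by (intro mult_left_mono) auto
  finally show ?case by simp
qed

lemma l1_l2: fixes w :: "'s \<Rightarrow> real" shows "(\<Sum>s\<in>S. (w s)\<^sup>2) \<le> (\<Sum>s\<in>S. \<bar>w s\<bar>)\<^sup>2"
  by (rule l1_l2_gen)

lemma l2_l1: fixes w :: "'s \<Rightarrow> real" shows "(\<Sum>s\<in>S. \<bar>w s\<bar>)\<^sup>2 \<le> real (card S) * (\<Sum>s\<in>S. (w s)\<^sup>2)"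
  using sum_squared_le_sum_of_squares[of "\<lambda>s. \<bar>w s\<bar>" S] by (simp add: mult.commute)

lemma l2_contract: "\<exists>N\<ge>1. \<forall>w. (\<Sum>s\<in>S. w s) = 0 \<longrightarrow>
     (\<Sum>t\<in>S. (ap N w t)\<^sup>2) \<le> 1/4 * (\<Sum>s\<in>S. (w s)\<^sup>2)"
proof -
  obtain n r \<delta> where n: "n \<ge> 1" and r: "r \<in> S" and dp: "\<delta> > 0" and d: "\<forall>s\<in>S. Kp n s r \<ge> \<delta>"
    using doeblin by auto
  have d1: "\<delta> \<le> 1" using d r Kp_le1[OF r r, of n] by force
  define q where "q = (1 - \<delta>)\<^sup>2"
  have q0: "0 \<le> q" by (simp add: q_def)
  have "(1 - \<delta>) * (1 - \<delta>) \<le> 1 * (1 - \<delta>)" using dp d1 by (intro mult_right_mono) auto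
  then have q: "0 \<le> q" "q < 1" using q0 dp by (auto simp: q_def power2_eq_square)
  have "(\<lambda>j. q ^ j) \<longlonglongrightarrow> 0" using q by (intro LIMSEQ_power_zero) auto
  then have "\<forall>\<^sub>F j in sequentially. q ^ j < 1 / (4 * (real (card S) + 1))"
    by (rule order_tendstoD) (simp add: add_pos_nonneg)
  then obtain j0 where j0: "\<forall>j\<ge>j0. q ^ j < 1 / (4 * (real (card S) + 1))"
    by (auto simp: eventually_sequentially)
  define j where "j = Suc j0"
  have "j0 \<le> j" by (simp add: j_def)
  then have qj: "q ^ j < 1 / (4 * (real (card S) + 1))" using j0 by blast
  have qj0: "q ^ j \<ge> 0" using q by simp
  show ?thesis
  proof (intro exI[of _ "j * n"] conjI allI impI)
    show "1 \<le> j * n" using n by (simp add: j_def)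
    fix w :: "'s \<Rightarrow> real" assume z: "(\<Sum>s\<in>S. w s) = 0"
    have "(\<Sum>t\<in>S. (ap (j * n) w t)\<^sup>2) \<le> (\<Sum>t\<in>S. \<bar>ap (j * n) w t\<bar>)\<^sup>2" by (rule l1_l2)
    also have "\<dots> \<le> ((1 - \<delta>) ^ j * (\<Sum>s\<in>S. \<bar>w s\<bar>))\<^sup>2"
      using contract_iter[OF r d z d1, of j] by (intro power_mono) (auto simp: sum_nonneg)
    also have "\<dots> = q ^ j * (\<Sum>s\<in>S. \<bar>w s\<bar>)\<^sup>2" by (simp add: q_def power_mult_distrib power_mult[symmetric] mult.commute)
    also have "\<dots> \<le> q ^ j * (real (card S) * (\<Sum>s\<in>S. (w s)\<^sup>2))"
      using l2_l1 qj0 by (intro mult_left_mono) auto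
    also have "\<dots> \<le> 1/4 * (\<Sum>s\<in>S. (w s)\<^sup>2)"
    proof -
      have W: "(\<Sum>s\<in>S. (w s)\<^sup>2) \<ge> 0" by (simp add: sum_nonneg)
      have "q ^ j * real (card S) \<le> 1/4"
      proof -
        have "q ^ j * real (card S) \<le> q ^ j * (real (card S) + 1)" using qj0 by (simp add: mult_left_mono)
        also have "\<dots> \<le> 1 / (4 * (real (card S) + 1)) * (real (card S) + 1)"
          using qj by (intro mult_right_mono) auto
        also have "\<dots> = 1/4" by simp
        finally show ?thesis .
      qed
      then have "q ^ j * real (card S) * (\<Sum>s\<in>S. (w s)\<^sup>2) \<le> 1/4 * (\<Sum>s\<in>S. (w s)\<^sup>2)"
        using W by (rule mult_right_mono)
      then show ?thesis by (simp add: mult.assoc)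
    qed
    finally show "(\<Sum>t\<in>S. (ap (j * n) w t)\<^sup>2) \<le> 1/4 * (\<Sum>s\<in>S. (w s)\<^sup>2)" .
  qed
qed

lemma ap_l2_bound: "(\<Sum>t\<in>S. (ap k w t)\<^sup>2) \<le> real (card S)^2 * (\<Sum>s\<in>S. (w s)\<^sup>2)"
proof -
  have "(ap k w t)\<^sup>2 \<le> real (card S) * (\<Sum>s\<in>S. (w s)\<^sup>2)" if t: "t \<in> S" for t
  proof -
    have "\<bar>ap k w t\<bar> \<le> (\<Sum>s\<in>S. \<bar>w s\<bar>)"
    proof -
      have "\<bar>ap k w t\<bar> \<le> (\<Sum>s\<in>S. \<bar>w s * Kp k s t\<bar>)" unfolding ap_Kp[OF t] by (rule sum_abs)
      also have "\<dots> \<le> (\<Sum>s\<in>S. \<bar>w s\<bar>)"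
        using t Kp_nonneg Kp_le1 by (intro sum_mono) (auto simp: abs_mult intro: mult_left_le)
      finally show ?thesis .
    qed
    then have "(ap k w t)\<^sup>2 \<le> (\<Sum>s\<in>S. \<bar>w s\<bar>)\<^sup>2"
      by (subst power2_abs[symmetric]) (rule power_mono, auto)
    also have "\<dots> \<le> real (card S) * (\<Sum>s\<in>S. (w s)\<^sup>2)" by (rule l2_l1)
    finally show ?thesis .
  qed
  then have "(\<Sum>t\<in>S. (ap k w t)\<^sup>2) \<le> (\<Sum>t\<in>S. real (card S) * (\<Sum>s\<in>S. (w s)\<^sup>2))"
    by (rule sum_mono)
  also have "\<dots> = real (card S)^2 * (\<Sum>s\<in>S. (w s)\<^sup>2)" by (simp add: power2_eq_square)
  finally show ?thesis .
qed

end


context mchain begin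

lemma Aop_stat: "stationary_dist S P e \<Longrightarrow> t \<in> S \<Longrightarrow> Aop e t = e t"
proof -
  assume st: "stationary_dist S P e" and t: "t \<in> S"
  have "Aop e t = ((\<Sum>r\<in>S. e r * (if r = t then 1 else 0)) + (\<Sum>r\<in>S. e r * P r t)) / 2"
    unfolding Aop_def Al_def
    by (simp only: sum.distrib[symmetric] sum_divide_distrib distrib_left times_divide_eq_right)
  also have "\<dots> = (e t + e t) / 2" using st t
    by (simp add: stationary_dist_def if_distrib cong: if_cong)
  finally show ?thesis by simp
qed

lemma ap_fix: "(\<And>t. t \<in> S \<Longrightarrow> Aop w t = w t) \<Longrightarrow> t \<in> S \<Longrightarrow> ap k w t = w t"
proof (induction k arbitrary: t)
  case 0 then show ?case by (simp add: ap_def)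
next
  case (Suc k)
  have "ap (Suc k) w t = ap k (Aop w) t" by (simp add: ap_def funpow_Suc_right del: funpow.simps)
  also have "\<dots> = (\<Sum>s\<in>S. Aop w s * Kp k s t)" using Suc.prems by (simp add: ap_Kp)
  also have "\<dots> = (\<Sum>s\<in>S. w s * Kp k s t)" using Suc.prems by (intro sum.cong) auto
  also have "\<dots> = ap k w t" using Suc.prems by (simp add: ap_Kp)
  also have "\<dots> = w t" using Suc by simp
  finally show ?case .
qed

lemma Aop_diff: "Aop (\<lambda>s. f s - g s) t = Aop f t - Aop g t"
  by (simp add: Aop_def left_diff_distrib sum_subtractf)

lemma stat_unique: "stationary_dist S P e1 \<Longrightarrow> stationary_dist S P e2 \<Longrightarrow> e1 = e2"
proof -
  assume s1: "stationary_dist S P e1" and s2: "stationary_dist S P e2"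
  define w where "w = (\<lambda>s. e1 s - e2 s)"
  obtain n r \<delta> where n: "n \<ge> 1" and r: "r \<in> S" and dp: "\<delta> > 0" and d: "\<forall>s\<in>S. Kp n s r \<ge> \<delta>"
    using doeblin by auto
  have z: "(\<Sum>s\<in>S. w s) = 0" using s1 s2 by (simp add: w_def sum_subtractf stationary_dist_def)
  have fx: "Aop w t = w t" if "t \<in> S" for t
    using that Aop_stat[OF s1] Aop_stat[OF s2] by (simp add: w_def Aop_diff)
  have "(\<Sum>t\<in>S. \<bar>ap n w t\<bar>) \<le> (1 - \<delta>) * (\<Sum>s\<in>S. \<bar>w s\<bar>)" by (rule contract[OF r d z])
  moreover have "(\<Sum>t\<in>S. \<bar>ap n w t\<bar>) = (\<Sum>t\<in>S. \<bar>w t\<bar>)" using ap_fix[OF fx] by simp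
  ultimately have "(\<Sum>s\<in>S. \<bar>w s\<bar>) \<le> 0" using dp
    by (smt (verit, ccfv_SIG) mult_le_cancel_right1 sum_nonneg abs_ge_zero)
  then have "(\<Sum>s\<in>S. \<bar>w s\<bar>) = 0" by (simp add: eq_iff sum_nonneg)
  then have "\<forall>s\<in>S. w s = 0" by (simp add: sum_nonneg_eq_0_iff)
  then show "e1 = e2" using s1 s2 by (auto simp: w_def stationary_dist_def fun_eq_iff)
qed

definition Delta :: "(real^'s) set" where
  "Delta = {v. (\<forall>s. s \<notin> S \<longrightarrow> v $ s = 0) \<and> (\<forall>s. 0 \<le> v $ s) \<and> (\<Sum>s\<in>S. v $ s) = 1}"

lemma Delta_closed: "closed Delta"
proof -
  have cn: "continuous_on UNIV (\<lambda>v::real^'s. v $ s)" for s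
    by (intro linear_continuous_on bounded_linear_vec_nth)
  have "Delta = (\<Inter>s. {v. s \<notin> S \<longrightarrow> v $ s = 0}) \<inter> (\<Inter>s. {v. 0 \<le> v $ s}) \<inter> {v. (\<Sum>s\<in>S. v $ s) = 1}"
    by (auto simp: Delta_def)
  moreover have "closed {v::real^'s. s \<notin> S \<longrightarrow> v $ s = 0}" for s
    by (cases "s \<in> S") (auto intro!: closed_Collect_eq cn continuous_intros)
  moreover have "closed {v::real^'s. 0 \<le> v $ s}" for s
    by (intro closed_Collect_le cn continuous_intros)
  moreover have "closed {v::real^'s. (\<Sum>s\<in>S. v $ s) = 1}"
    by (intro closed_Collect_eq continuous_on_sum cn continuous_intros)
  ultimately show ?thesis by (auto intro!: closed_Int closed_INT)
qed

lemma Delta_bounded: "bounded Delta"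
proof -
  have "norm v \<le> 1" if "v \<in> Delta" for v
  proof -
    have "norm v \<le> (\<Sum>i\<in>UNIV. \<bar>v $ i\<bar>)" by (rule norm_le_l1_cart)
    also have "\<dots> = (\<Sum>i\<in>S. \<bar>v $ i\<bar>)" using that
      by (intro sum.mono_neutral_right) (auto simp: Delta_def)
    also have "\<dots> = (\<Sum>i\<in>S. v $ i)" using that by (intro sum.cong) (auto simp: Delta_def)
    finally show ?thesis using that by (simp add: Delta_def)
  qed
  then show ?thesis by (auto simp: bounded_iff)
qed

lemma Delta_convex: "convex Delta"
  unfolding convex_def Delta_def
  by (auto simp: sum.distrib sum_distrib_left[symmetric])

lemma stat_exists: "\<exists>e. stationary_dist S P e"
proof -
  define f where "f v = (\<chi> t. if t \<in> S then (\<Sum>s\<in>S. v $ s * P s t) else 0)" for v :: "real^'s"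
  obtain s0 where s0: "s0 \<in> S" using S_ne by auto
  have ne: "Delta \<noteq> {}"
  proof -
    have "(\<chi> s. if s = s0 then (1::real) else 0) \<in> Delta" using s0
      by (auto simp: Delta_def if_distrib cong: if_cong)
    then show ?thesis by auto
  qed
  have cn: "continuous_on UNIV (\<lambda>v::real^'s. v $ s)" for s
    by (intro linear_continuous_on bounded_linear_vec_nth)
  have cf: "continuous_on Delta f" unfolding f_def
  proof (intro continuous_on_vec_lambda)
    fix t
    show "continuous_on Delta (\<lambda>v. if t \<in> S then \<Sum>s\<in>S. v $ s * P s t else 0)"
      by (cases "t \<in> S") (auto intro!: continuous_on_sum continuous_on_mult
          continuous_on_subset[OF cn] continuous_on_const)
  qed
  have fD: "f \<in> Delta \<rightarrow> Delta"
  proof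
    fix v assume v: "v \<in> Delta"
    have "(\<Sum>t\<in>S. f v $ t) = (\<Sum>t\<in>S. \<Sum>s\<in>S. v $ s * P s t)" by (simp add: f_def)
    also have "\<dots> = (\<Sum>s\<in>S. v $ s * (\<Sum>t\<in>S. P s t))" by (subst sum.swap) (simp add: sum_distrib_left)
    also have "\<dots> = (\<Sum>s\<in>S. v $ s)" by (intro sum.cong) (auto simp: P_sum)
    also have "\<dots> = 1" using v by (simp add: Delta_def)
    finally have "(\<Sum>t\<in>S. f v $ t) = 1" .
    moreover have "0 \<le> f v $ t" for t using v P_nonneg
      by (auto simp: f_def Delta_def intro!: sum_nonneg mult_nonneg_nonneg)
    ultimately show "f v \<in> Delta" by (auto simp: Delta_def f_def)
  qed
  obtain v where v: "v \<in> Delta" "f v = v"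
    using brouwer[OF compact_eq_bounded_closed[THEN iffD2, OF conjI[OF Delta_bounded Delta_closed]]
        Delta_convex ne cf fD] by blast
  have "stationary_dist S P (\<lambda>s. v $ s)"
    unfolding stationary_dist_def
  proof (intro conjI allI impI ballI)
    show "\<And>s. s \<notin> S \<Longrightarrow> v $ s = 0" using v by (simp add: Delta_def)
    show "\<And>s. s \<in> S \<Longrightarrow> 0 \<le> v $ s" using v by (simp add: Delta_def)
    show "(\<Sum>s\<in>S. v $ s) = 1" using v by (simp add: Delta_def)
    fix s assume s: "s \<in> S"
    have "f v $ s = v $ s" using v by simp
    then show "(\<Sum>s'\<in>S. v $ s' * P s' s) = v $ s" using s by (simp add: f_def)
  qed
  then show ?thesis by blast
qed

lemma stat_the: "stationary_dist S P (THE e. stationary_dist S P e)"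
  using stat_exists stat_unique by (metis theI)

end


locale model =
  fixes S :: "'c::finite \<Rightarrow> 's::finite set"
    and A :: "'c \<Rightarrow> 's \<Rightarrow> 'a::finite set"
    and phi :: "'c \<Rightarrow> 's \<Rightarrow> 'a \<Rightarrow> 's \<Rightarrow> real"
    and U :: "'c \<Rightarrow> ('s \<Rightarrow> 'a) set"
    and m :: "'c \<Rightarrow> real"
  assumes S_ne: "\<And>c. S c \<noteq> {}"
    and phi_nonneg: "\<And>c s a s'. s \<in> S c \<Longrightarrow> a \<in> A c s \<Longrightarrow> s' \<in> S c \<Longrightarrow> phi c s a s' \<ge> 0"
    and phi_sum: "\<And>c s a. s \<in> S c \<Longrightarrow> a \<in> A c s \<Longrightarrow> (\<Sum>s'\<in>S c. phi c s a s') = 1"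
    and U_ne: "\<And>c. U c \<noteq> {}"
    and U_pol: "\<And>c u s. u \<in> U c \<Longrightarrow> s \<in> S c \<Longrightarrow> u s \<in> A c s"
    and unichain: "\<And>c u. u \<in> U c \<Longrightarrow> unique_recurrent_class (S c) (kern phi c u)"
    and m_pos: "\<And>c. m c > 0"
begin

lemma mc: "u \<in> U c \<Longrightarrow> mchain (S c) (kern phi c u)"
  by unfold_locales (auto simp: kern_def S_ne phi_nonneg phi_sum U_pol unichain)

abbreviation "et c u s \<equiv> eta S phi c u s"

lemma eta_stat: "u \<in> U c \<Longrightarrow> stationary_dist (S c) (kern phi c u) (eta S phi c u)"
  unfolding eta_def using mchain.stat_the[OF mc] .

lemma eta_nonneg: "u \<in> U c \<Longrightarrow> et c u s \<ge> 0"
  using eta_stat[of u c] by (cases "s \<in> S c") (auto simp: stationary_dist_def)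

lemma eta_sum: "u \<in> U c \<Longrightarrow> (\<Sum>s\<in>S c. et c u s) = 1"
  using eta_stat[of u c] by (auto simp: stationary_dist_def)

lemma eta_eq: "u \<in> U c \<Longrightarrow> s \<in> S c \<Longrightarrow> (\<Sum>s'\<in>S c. et c u s' * phi c s' (u s') s) = et c u s"
  using eta_stat[of u c] by (auto simp: stationary_dist_def kern_def)

lemma eta_le1: "u \<in> U c \<Longrightarrow> et c u s \<le> 1"
proof (cases "s \<in> S c")
  case True
  assume u: "u \<in> U c"
  have "et c u s \<le> (\<Sum>s\<in>S c. et c u s)" using True eta_nonneg[OF u] by (intro member_le_sum) auto
  then show ?thesis using eta_sum[OF u] by simp
next
  case False
  assume u: "u \<in> U c"
  then show ?thesis using eta_stat[of u c] False by (auto simp: stationary_dist_def)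
qed

definition xof :: "('c,'s,'a) pstate \<Rightarrow> ('c,'s,'a) pdist" where
  "xof \<mu> = (\<chi> i. case i of (c, u) \<Rightarrow> if u \<in> U c then pol_mass S \<mu> c u else 0)"

lemma xof_nth: "xof \<mu> $ (c, u) = (if u \<in> U c then (\<Sum>s\<in>S c. \<mu> $ (c, s, u)) else 0)"
  by (simp add: xof_def pol_mass_def)

abbreviation "B \<equiv> BSK S U phi"

lemma B_nth: "B x $ (c, s, u) = (if s \<in> S c \<and> u \<in> U c then x $ (c, u) * et c u s else 0)"
  by (simp add: BSK_def)

definition zof :: "('c,'s,'a) pstate \<Rightarrow> ('c,'s,'a) pstate" where
  "zof \<mu> = \<mu> - B (xof \<mu>)"

lemma linear_xof: "linear xof"
  by (rule linearI) (auto simp: vec_eq_iff xof_nth sum.distrib sum_distrib_left)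

lemma linear_B: "linear B"
  by (rule linearI) (auto simp: vec_eq_iff B_nth algebra_simps)

lemma linear_zof: "linear zof"
  unfolding zof_def by (intro linear_compose_sub linear_id[unfolded id_def] linear_compose[OF linear_xof linear_B, unfolded o_def])

lemma xof_B: "(\<And>c u. u \<notin> U c \<Longrightarrow> x $ (c, u) = 0) \<Longrightarrow> xof (B x) = x"
proof -
  assume h: "\<And>c u. u \<notin> U c \<Longrightarrow> x $ (c, u) = 0"
  show ?thesis
  proof (rule vec_eq_iff[THEN iffD2], intro allI)
    fix i :: "'c \<times> ('s \<Rightarrow> 'a)"
    obtain c u where i: "i = (c, u)" by (cases i)
    show "xof (B x) $ i = x $ i"
    proof (cases "u \<in> U c")
      case True
      have "(\<Sum>s\<in>S c. B x $ (c, s, u)) = (\<Sum>s\<in>S c. x $ (c, u) * et c u s)"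
        using True by (intro sum.cong) (auto simp: B_nth)
      also have "\<dots> = x $ (c, u)" using eta_sum[OF True] by (simp add: sum_distrib_left[symmetric])
      finally show ?thesis using True i by (simp add: xof_nth)
    qed (use h i in \<open>simp add: xof_nth\<close>)
  qed
qed

lemma xof_B_Dx: "x \<in> Dx U m \<Longrightarrow> xof (B x) = x"
  by (rule xof_B) (auto simp: Dx_def)

lemma B_popX: "x \<in> Dx U m \<Longrightarrow> B x \<in> popX S U m"
proof -
  assume x: "x \<in> Dx U m"
  have "(\<Sum>s\<in>S c. \<Sum>u\<in>U c. B x $ (c, s, u)) = m c" for c
  proof -
    have "(\<Sum>s\<in>S c. \<Sum>u\<in>U c. B x $ (c, s, u)) = (\<Sum>u\<in>U c. \<Sum>s\<in>S c. x $ (c, u) * et c u s)"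
      by (subst sum.swap) (intro sum.cong, auto simp: B_nth)
    also have "\<dots> = (\<Sum>u\<in>U c. x $ (c, u))"
      by (intro sum.cong) (auto simp: sum_distrib_left[symmetric] eta_sum)
    also have "\<dots> = m c" using x by (simp add: Dx_def)
    finally show ?thesis .
  qed
  moreover have "B x $ (c, s, u) \<ge> 0" for c s u
    using x eta_nonneg[of u c s] by (auto simp: B_nth Dx_def)
  ultimately show ?thesis by (auto simp: popX_def B_nth)
qed

lemma xof_Dx: "\<mu> \<in> popX S U m \<Longrightarrow> xof \<mu> \<in> Dx U m"
proof -
  assume mu: "\<mu> \<in> popX S U m"
  have "(\<Sum>u\<in>U c. xof \<mu> $ (c, u)) = m c" for c
  proof -
    have "(\<Sum>u\<in>U c. xof \<mu> $ (c, u)) = (\<Sum>u\<in>U c. \<Sum>s\<in>S c. \<mu> $ (c, s, u))"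
      by (intro sum.cong) (auto simp: xof_nth)
    also have "\<dots> = m c" using mu by (subst sum.swap) (simp add: popX_def)
    finally show ?thesis .
  qed
  moreover have nn: "\<forall>i. \<mu> $ i \<ge> 0" using mu by (simp add: popX_def)
  then have "\<forall>i. xof \<mu> $ i \<ge> 0"
    by (auto simp: xof_nth intro!: sum_nonneg)
  moreover have "\<forall>c u. u \<notin> U c \<longrightarrow> xof \<mu> $ (c, u) = 0" by (simp add: xof_nth)
  ultimately show ?thesis unfolding Dx_def by blast
qed

lemma fd_B: "u \<in> U c \<Longrightarrow> s \<in> S c \<Longrightarrow> fd S phi R (B x) c s u = 0"
proof -
  assume u: "u \<in> U c" and s: "s \<in> S c"
  have "(\<Sum>s'\<in>S c. phi c s' (u s') s * B x $ (c, s', u)) = x $ (c, u) * (\<Sum>s'\<in>S c. et c u s' * phi c s' (u s') s)"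
    using u by (simp add: B_nth sum_distrib_left mult_ac)
  also have "\<dots> = x $ (c, u) * et c u s" using eta_eq[OF u s] by simp
  finally show ?thesis using u s by (simp add: fd_def B_nth)
qed

lemma fd_sum: "u \<in> U c \<Longrightarrow> (\<Sum>s\<in>S c. fd S phi R \<mu> c s u) = 0"
proof -
  assume u: "u \<in> U c"
  have "(\<Sum>s\<in>S c. \<Sum>s'\<in>S c. phi c s' (u s') s * \<mu> $ (c, s', u)) = (\<Sum>s'\<in>S c. \<mu> $ (c, s', u) * (\<Sum>s\<in>S c. phi c s' (u s') s))"
    by (subst sum.swap) (simp add: sum_distrib_left mult_ac)
  also have "\<dots> = (\<Sum>s'\<in>S c. \<mu> $ (c, s', u))"
    using u by (intro sum.cong) (auto simp: phi_sum U_pol)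
  finally have "(\<Sum>s\<in>S c. \<Sum>s'\<in>S c. phi c s' (u s') s * \<mu> $ (c, s', u)) = (\<Sum>s\<in>S c. \<mu> $ (c, s, u))" .
  then show ?thesis by (simp add: fd_def sum_subtractf sum_distrib_left[symmetric])
qed

lemma zof_nth: "zof \<mu> $ (c, s, u) = \<mu> $ (c, s, u) - (if s \<in> S c \<and> u \<in> U c then (\<Sum>s'\<in>S c. \<mu> $ (c, s', u)) * et c u s else 0)"
  by (simp add: zof_def B_nth xof_nth)

lemma zof_sum: "u \<in> U c \<Longrightarrow> (\<Sum>s\<in>S c. zof \<mu> $ (c, s, u)) = 0"
proof -
  assume u: "u \<in> U c"
  have "(\<Sum>s\<in>S c. zof \<mu> $ (c, s, u)) = (\<Sum>s\<in>S c. \<mu> $ (c, s, u)) - (\<Sum>s'\<in>S c. \<mu> $ (c, s', u)) * (\<Sum>s\<in>S c. et c u s)"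
    using u by (simp add: zof_nth sum_subtractf sum_distrib_left)
  then show ?thesis using eta_sum[OF u] by simp
qed

lemma B_NE: "x \<in> NE_ss S U m phi F \<Longrightarrow> B x \<in> MSNE S U m phi F"
proof -
  assume x: "x \<in> NE_ss S U m phi F"
  then have xD: "x \<in> Dx U m" by (simp add: NE_ss_def)
  have pm: "pol_mass S (B x) c u = x $ (c, u)" if "u \<in> U c" for c u
    using arg_cong[OF xof_B_Dx[OF xD], of "\<lambda>v. v $ (c, u)"] that by (simp add: xof_nth pol_mass_def)
  show ?thesis
    unfolding MSNE_def
  proof (intro CollectI conjI allI ballI impI)
    show "B x \<in> popX S U m" using B_popX[OF xD] .
    fix c
    { fix u v assume u: "u \<in> U c" and p: "pol_mass S (B x) c u > 0" and v: "v \<in> U c"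
      have "x $ (c, u) > 0" using p pm[OF u] by simp
      then show "F c (B x) u \<ge> F c (B x) v" using x u v by (auto simp: NE_ss_def ssgame_def) }
    { fix s u assume "s \<in> S c" "u \<in> U c"
      then show "fd S phi (\<lambda>_. 1) (B x) c s u = 0" by (rule fd_B[rotated]) }
  qed
qed

lemma pay_vec_B: "pay_vec U F (B x) c = (\<chi> v. if v \<in> U c then ssgame S U phi F c x v else 0)"
  unfolding pay_vec_def ssgame_def by simp

lemma pol_vec_B: "x \<in> Dx U m \<Longrightarrow> pol_vec S U (B x) c = (\<chi> v. if v \<in> U c then x $ (c, v) else 0)"
proof -
  assume xD: "x \<in> Dx U m"
  have "pol_mass S (B x) c v = x $ (c, v)" if "v \<in> U c" for v
    using arg_cong[OF xof_B_Dx[OF xD], of "\<lambda>w. w $ (c, v)"] that by (simp add: xof_nth pol_mass_def)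
  then show ?thesis by (simp add: pol_vec_def vec_eq_iff)
qed

lemma gred_eq: "x \<in> Dx U m \<Longrightarrow> u \<in> U c \<Longrightarrow>
   gred S U phi F rho x $ (c, u) = (\<Sum>s\<in>S c. fr S U F rho (B x) c s u)"
proof -
  assume xD: "x \<in> Dx U m" and u: "u \<in> U c"
  define p where "p = (\<chi> v. if v \<in> U c then ssgame S U phi F c x v else 0)"
  define q where "q = (\<chi> v. if v \<in> U c then x $ (c, v) else 0)"
  have pv: "pay_vec U F (B x) c = p" by (simp add: pay_vec_B p_def)
  have qv: "pol_vec S U (B x) c = q" using pol_vec_B[OF xD] by (simp add: q_def)
  have sB: "(\<Sum>s\<in>S c. B x $ (c, s, v)) = x $ (c, v)" if "v \<in> U c" for v
    using arg_cong[OF xof_B_Dx[OF xD], of "\<lambda>w. w $ (c, v)"] that by (simp add: xof_nth)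
  have "(\<Sum>s\<in>S c. fr S U F rho (B x) c s u)
      = (\<Sum>s\<in>S c. (\<Sum>u'\<in>U c. B x $ (c, s, u') * rho c p q u' u) - B x $ (c, s, u) * (\<Sum>u'\<in>U c. rho c p q u u'))"
    by (simp add: fr_def pv qv)
  also have "\<dots> = (\<Sum>s\<in>S c. \<Sum>u'\<in>U c. B x $ (c, s, u') * rho c p q u' u) - (\<Sum>s\<in>S c. B x $ (c, s, u)) * (\<Sum>u'\<in>U c. rho c p q u u')"
    by (simp only: sum_subtractf sum_distrib_right)
  also have "\<dots> = (\<Sum>u'\<in>U c. (\<Sum>s\<in>S c. B x $ (c, s, u')) * rho c p q u' u) - (\<Sum>s\<in>S c. B x $ (c, s, u)) * (\<Sum>u'\<in>U c. rho c p q u u')"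
    by (subst sum.swap) (simp only: sum_distrib_right)
  also have "\<dots> = (\<Sum>u'\<in>U c. x $ (c, u') * rho c p q u' u) - x $ (c, u) * (\<Sum>u'\<in>U c. rho c p q u u')"
    using sB u by simp
  also have "\<dots> = gred S U phi F rho x $ (c, u)"
    using u by (simp add: gred_def p_def q_def Let_def)
  finally show ?thesis by simp
qed

lemma Efield_nth: "Efield S U phi R F rho \<mu> $ (c, s, u) =
   (if s \<in> S c \<and> u \<in> U c then fd S phi R \<mu> c s u + fr S U F rho \<mu> c s u else 0)"
  by (simp add: Efield_def)

lemma xof_Efield: "xof (Efield S U phi R F rho \<mu>) $ (c, u) =
   (if u \<in> U c then (\<Sum>s\<in>S c. fr S U F rho \<mu> c s u) else 0)"
proof (cases "u \<in> U c")
  case True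
  have "(\<Sum>s\<in>S c. Efield S U phi R F rho \<mu> $ (c, s, u)) = (\<Sum>s\<in>S c. fd S phi R \<mu> c s u) + (\<Sum>s\<in>S c. fr S U F rho \<mu> c s u)"
    using True by (simp add: Efield_nth sum.distrib)
  then show ?thesis using True fd_sum[OF True] by (simp add: xof_nth)
qed (simp add: xof_nth)

end


definition lipX :: "'x::real_normed_vector set \<Rightarrow> ('x \<Rightarrow> real) \<Rightarrow> bool" where
  "lipX X f \<longleftrightarrow> (\<exists>L\<ge>0. \<forall>x\<in>X. \<forall>y\<in>X. \<bar>f x - f y\<bar> \<le> L * norm (x - y))"

lemma comp_diff_le: "\<bar>x $ i - y $ i\<bar> \<le> norm (x - y)"
  using component_le_norm_cart[of "x - y" i] by simp

lemma lipX_const: "lipX X (\<lambda>x. c)"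
  unfolding lipX_def by (intro exI[of _ 0]) auto

lemma lipX_add: "lipX X f \<Longrightarrow> lipX X g \<Longrightarrow> lipX X (\<lambda>x. f x + g x)"
proof -
  assume "lipX X f" "lipX X g"
  then obtain L1 L2 where L: "L1 \<ge> 0" "L2 \<ge> 0" "\<forall>x\<in>X. \<forall>y\<in>X. \<bar>f x - f y\<bar> \<le> L1 * norm (x - y)"
    "\<forall>x\<in>X. \<forall>y\<in>X. \<bar>g x - g y\<bar> \<le> L2 * norm (x - y)" by (auto simp: lipX_def)
  show ?thesis unfolding lipX_def
  proof (intro exI[of _ "L1 + L2"] conjI ballI)
    fix x y assume "x \<in> X" "y \<in> X"
    then have "\<bar>f x - f y\<bar> \<le> L1 * norm (x - y)" "\<bar>g x - g y\<bar> \<le> L2 * norm (x - y)" using L by auto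
    then show "\<bar>f x + g x - (f y + g y)\<bar> \<le> (L1 + L2) * norm (x - y)" by (simp add: algebra_simps abs_triangle_ineq4) 
  qed (use L in auto)
qed

lemma lipX_neg: "lipX X f \<Longrightarrow> lipX X (\<lambda>x. - f x)"
proof -
  assume "lipX X f"
  then obtain L where L: "L \<ge> 0" "\<forall>x\<in>X. \<forall>y\<in>X. \<bar>f x - f y\<bar> \<le> L * norm (x - y)"
    unfolding lipX_def by blast
  have "\<bar>- f x - - f y\<bar> \<le> L * norm (x - y)" if "x \<in> X" "y \<in> X" for x y
  proof -
    have "\<bar>- f x - - f y\<bar> = \<bar>f x - f y\<bar>" by (simp add: abs_minus_commute)
    then show ?thesis using L that by simp
  qed
  then show ?thesis using L unfolding lipX_def by blast
qed

lemma lipX_diff: "lipX X f \<Longrightarrow> lipX X g \<Longrightarrow> lipX X (\<lambda>x. f x - g x)"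
  using lipX_add[of X f "\<lambda>x. - g x"] lipX_neg[of X g] by simp

lemma lipX_sum: "finite I \<Longrightarrow> (\<And>i. i \<in> I \<Longrightarrow> lipX X (f i)) \<Longrightarrow> lipX X (\<lambda>x. \<Sum>i\<in>I. f i x)"
proof (induction I rule: finite_induct)
  case empty then show ?case by (simp add: lipX_const)
next
  case (insert a I) then show ?case by (simp add: lipX_add)
qed

lemma lipX_bounded: "lipX X f \<Longrightarrow> bounded X \<Longrightarrow> \<exists>K. \<forall>x\<in>X. \<bar>f x\<bar> \<le> K"
proof (cases "X = {}")
  case False
  assume "lipX X f" "bounded X"
  then obtain L R where L: "L \<ge> 0" "\<forall>x\<in>X. \<forall>y\<in>X. \<bar>f x - f y\<bar> \<le> L * norm (x - y)"
    and R: "\<forall>x\<in>X. norm x \<le> R" by (auto simp: lipX_def bounded_iff)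
  obtain x0 where x0: "x0 \<in> X" using False by auto
  show ?thesis
  proof (intro exI ballI)
    fix x assume x: "x \<in> X"
    have "norm (x - x0) \<le> norm x + norm x0" by (rule norm_triangle_ineq4)
    also have "\<dots> \<le> R + R" using R x x0 by (intro add_mono) auto
    finally have "L * norm (x - x0) \<le> L * (R + R)" using L by (intro mult_left_mono) auto
    moreover have "\<bar>f x - f x0\<bar> \<le> L * norm (x - x0)" using L(2) x x0 by blast
    moreover have "\<bar>f x\<bar> - \<bar>f x0\<bar> \<le> \<bar>f x - f x0\<bar>" by (rule abs_triangle_ineq2)
    ultimately show "\<bar>f x\<bar> \<le> \<bar>f x0\<bar> + L * (R + R)" by linarith
  qed
qed auto

lemma lipX_mult: "lipX X f \<Longrightarrow> lipX X g \<Longrightarrow> bounded X \<Longrightarrow> lipX X (\<lambda>x. f x * g x)"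
proof -
  assume lf: "lipX X f" and lg: "lipX X g" and b: "bounded X"
  obtain Kf where Kf: "\<forall>x\<in>X. \<bar>f x\<bar> \<le> Kf" using lipX_bounded[OF lf b] by auto
  obtain Kg where Kg: "\<forall>x\<in>X. \<bar>g x\<bar> \<le> Kg" using lipX_bounded[OF lg b] by auto
  obtain L1 L2 where L: "L1 \<ge> 0" "L2 \<ge> 0" "\<forall>x\<in>X. \<forall>y\<in>X. \<bar>f x - f y\<bar> \<le> L1 * norm (x - y)"
    "\<forall>x\<in>X. \<forall>y\<in>X. \<bar>g x - g y\<bar> \<le> L2 * norm (x - y)" using lf lg by (auto simp: lipX_def)
  show ?thesis unfolding lipX_def
  proof (intro exI[of _ "\<bar>Kf\<bar> * L2 + \<bar>Kg\<bar> * L1"] conjI ballI)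
    show "0 \<le> \<bar>Kf\<bar> * L2 + \<bar>Kg\<bar> * L1" using L by simp
    fix x y assume x: "x \<in> X" and y: "y \<in> X"
    have "f x * g x - f y * g y = f x * (g x - g y) + g y * (f x - f y)" by (simp add: algebra_simps)
    then have "\<bar>f x * g x - f y * g y\<bar> = \<bar>f x * (g x - g y) + g y * (f x - f y)\<bar>" by simp
    also have "\<dots> \<le> \<bar>f x * (g x - g y)\<bar> + \<bar>g y * (f x - f y)\<bar>" by (rule abs_triangle_ineq)
    also have "\<dots> = \<bar>f x\<bar> * \<bar>g x - g y\<bar> + \<bar>g y\<bar> * \<bar>f x - f y\<bar>" by (simp add: abs_mult)
    also have "\<dots> \<le> \<bar>Kf\<bar> * (L2 * norm (x - y)) + \<bar>Kg\<bar> * (L1 * norm (x - y))"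
    proof -
      have "\<bar>f x\<bar> \<le> Kf" "\<bar>g y\<bar> \<le> Kg" using Kf Kg x y by blast+
      then have a: "\<bar>f x\<bar> \<le> \<bar>Kf\<bar>" "\<bar>g y\<bar> \<le> \<bar>Kg\<bar>" using abs_ge_self[of Kf] abs_ge_self[of Kg] by linarith+
      have b: "\<bar>g x - g y\<bar> \<le> L2 * norm (x - y)" "\<bar>f x - f y\<bar> \<le> L1 * norm (x - y)" using L x y by blast+
      show ?thesis by (intro add_mono mult_mono a b abs_ge_zero)
    qed
    finally show "\<bar>f x * g x - f y * g y\<bar> \<le> (\<bar>Kf\<bar> * L2 + \<bar>Kg\<bar> * L1) * norm (x - y)"
      by (simp add: algebra_simps)
  qed
qed

lemma lipX_vec_nth: "lipX X (\<lambda>x::real^'n. x $ i)"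
  unfolding lipX_def
  by (intro exI[of _ 1]) (auto simp: component_le_norm_cart simp flip: vector_minus_component)

lemma lipX_finite_uniform:
  assumes "finite I" "\<And>i. i \<in> I \<Longrightarrow> lipX X (f i)"
  shows "\<exists>L\<ge>0. \<forall>i\<in>I. \<forall>x\<in>X. \<forall>y\<in>X. \<bar>f i x - f i y\<bar> \<le> L * norm (x - y)"
  using assms
proof (induction I rule: finite_induct)
  case empty then show ?case by auto
next
  case (insert a I)
  then obtain L where L: "L \<ge> 0" "\<forall>i\<in>I. \<forall>x\<in>X. \<forall>y\<in>X. \<bar>f i x - f i y\<bar> \<le> L * norm (x - y)" by auto
  have "lipX X (f a)" using insert.prems by simp
  then obtain La where La: "La \<ge> 0" "\<forall>x\<in>X. \<forall>y\<in>X. \<bar>f a x - f a y\<bar> \<le> La * norm (x - y)"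
    unfolding lipX_def by blast
  show ?case
  proof (intro exI[of _ "L + La"] conjI ballI)
    fix i x y assume i: "i \<in> insert a I" and x: "x \<in> X" and y: "y \<in> X"
    have "L * norm (x - y) \<le> (L + La) * norm (x - y)" "La * norm (x - y) \<le> (L + La) * norm (x - y)"
      using L La by (auto intro!: mult_right_mono)
    then show "\<bar>f i x - f i y\<bar> \<le> (L + La) * norm (x - y)" using i x y L La by force
  qed (use L La in auto)
qed

context model begin

lemma Mnn: "0 \<le> (\<Sum>c\<in>UNIV. m c)"
  using m_pos by (simp add: sum_nonneg less_imp_le)

lemma popX_nonneg: "\<mu> \<in> popX S U m \<Longrightarrow> \<mu> $ i \<ge> 0"
  by (cases i) (auto simp: popX_def)

lemma popX_le: "\<mu> \<in> popX S U m \<Longrightarrow> \<mu> $ i \<le> (\<Sum>c\<in>UNIV. m c)"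
proof -
  assume mu: "\<mu> \<in> popX S U m"
  obtain c s u where i: "i = (c, s, u)" by (cases i)
  show ?thesis
  proof (cases "s \<in> S c \<and> u \<in> U c")
    case True
    have "\<mu> $ (c, s, u) \<le> (\<Sum>u\<in>U c. \<mu> $ (c, s, u))"
      using True mu by (intro member_le_sum) (auto simp: popX_nonneg)
    also have "\<dots> \<le> (\<Sum>s\<in>S c. \<Sum>u\<in>U c. \<mu> $ (c, s, u))"
      using True mu by (intro member_le_sum[of s "S c" "\<lambda>s. \<Sum>u\<in>U c. \<mu> $ (c, s, u)"]) (auto intro!: sum_nonneg simp: popX_nonneg)
    also have "\<dots> = m c" using mu by (simp add: popX_def)
    also have "\<dots> \<le> (\<Sum>c\<in>UNIV. m c)" using m_pos by (intro member_le_sum) (auto intro: less_imp_le)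
    finally show ?thesis by (simp add: i)
  next
    case False
    then show ?thesis using mu Mnn by (auto simp: popX_def i)
  qed
qed

lemma popX_bounded: "bounded (popX S U m)"
proof -
  have "norm \<mu> \<le> real CARD('c \<times> 's \<times> ('s \<Rightarrow> 'a)) * (\<Sum>c\<in>UNIV. m c)" if "\<mu> \<in> popX S U m" for \<mu>
  proof -
    have "norm \<mu> \<le> (\<Sum>i\<in>UNIV. \<bar>\<mu> $ i\<bar>)" by (rule norm_le_l1_cart)
    also have "\<dots> \<le> (\<Sum>i\<in>(UNIV::('c \<times> 's \<times> ('s \<Rightarrow> 'a)) set). (\<Sum>c\<in>UNIV. m c))"
      using that by (intro sum_mono) (simp add: popX_nonneg popX_le)
    finally show ?thesis by simp
  qed
  then show ?thesis by (auto simp: bounded_iff)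
qed

lemma cnth: "continuous_on UNIV (\<lambda>v::real^'n. v $ i)"
  by (intro linear_continuous_on bounded_linear_vec_nth)

lemma popX_closed: "closed (popX S U m)"
proof -
  have "popX S U m = (\<Inter>i. {\<mu>. 0 \<le> \<mu> $ i}) \<inter> (\<Inter>c. \<Inter>s. \<Inter>u. {\<mu>. \<not> (s \<in> S c \<and> u \<in> U c) \<longrightarrow> \<mu> $ (c, s, u) = 0})
      \<inter> (\<Inter>c. {\<mu>. (\<Sum>s\<in>S c. \<Sum>u\<in>U c. \<mu> $ (c, s, u)) = m c})"
    by (auto simp: popX_def)
  moreover have "closed {\<mu>::('c,'s,'a) pstate. 0 \<le> \<mu> $ i}" for i
    by (intro closed_Collect_le cnth continuous_intros)
  moreover have "closed {\<mu>::('c,'s,'a) pstate. \<not> (s \<in> S c \<and> u \<in> U c) \<longrightarrow> \<mu> $ (c, s, u) = 0}" for c s u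
    by (cases "s \<in> S c \<and> u \<in> U c") (auto intro!: closed_Collect_eq cnth continuous_intros)
  moreover have "closed {\<mu>::('c,'s,'a) pstate. (\<Sum>s\<in>S c. \<Sum>u\<in>U c. \<mu> $ (c, s, u)) = m c}" for c
    by (intro closed_Collect_eq continuous_on_sum cnth continuous_intros)
  ultimately show ?thesis by (auto intro!: closed_Int closed_INT)
qed

lemma popX_compact: "compact (popX S U m)"
  using popX_bounded popX_closed by (simp add: compact_eq_bounded_closed)

lemma popX_convex: "convex (popX S U m)"
  unfolding convex_def
proof (intro ballI allI impI)
  fix x y and u v :: real assume xy: "x \<in> popX S U m" "y \<in> popX S U m" and uv: "0 \<le> u" "0 \<le> v" "u + v = 1"
  have e: "u * r + v * r = r" for r using uv by (simp add: distrib_right[symmetric])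
  show "u *\<^sub>R x + v *\<^sub>R y \<in> popX S U m"
    using xy uv unfolding popX_def by (auto simp: sum.distrib sum_distrib_left[symmetric] e)
qed

lemma Dx_closed: "closed (Dx U m)"
proof -
  have "Dx U m = (\<Inter>i. {x. 0 \<le> x $ i}) \<inter> (\<Inter>c. \<Inter>u. {x. u \<notin> U c \<longrightarrow> x $ (c, u) = 0})
      \<inter> (\<Inter>c. {x. (\<Sum>u\<in>U c. x $ (c, u)) = m c})"
    by (auto simp: Dx_def)
  moreover have "closed {x::('c,'s,'a) pdist. 0 \<le> x $ i}" for i
    by (intro closed_Collect_le cnth continuous_intros)
  moreover have "closed {x::('c,'s,'a) pdist. u \<notin> U c \<longrightarrow> x $ (c, u) = 0}" for c u
    by (cases "u \<in> U c") (auto intro!: closed_Collect_eq cnth continuous_intros)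
  moreover have "closed {x::('c,'s,'a) pdist. (\<Sum>u\<in>U c. x $ (c, u)) = m c}" for c
    by (intro closed_Collect_eq continuous_on_sum cnth continuous_intros)
  ultimately show ?thesis by (auto intro!: closed_Int closed_INT)
qed

lemma Dx_le: "x \<in> Dx U m \<Longrightarrow> x $ i \<le> (\<Sum>c\<in>UNIV. m c)"
proof -
  assume x: "x \<in> Dx U m"
  obtain c u where i: "i = (c, u)" by (cases i)
  have nn: "\<forall>i. 0 \<le> x $ i" using x by (simp add: Dx_def)
  show ?thesis
  proof (cases "u \<in> U c")
    case True
    have "x $ (c, u) \<le> (\<Sum>u\<in>U c. x $ (c, u))"
      using True nn by (intro member_le_sum) auto
    also have "\<dots> = m c" using x by (simp add: Dx_def)
    also have "\<dots> \<le> (\<Sum>c\<in>UNIV. m c)" using m_pos by (intro member_le_sum) (auto intro: less_imp_le)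
    finally show ?thesis by (simp add: i)
  next
    case False
    then show ?thesis using x Mnn by (auto simp: Dx_def i)
  qed
qed

lemma Dx_bounded: "bounded (Dx U m)"
proof -
  have "norm x \<le> real CARD('c \<times> ('s \<Rightarrow> 'a)) * (\<Sum>c\<in>UNIV. m c)" if x: "x \<in> Dx U m" for x
  proof -
    have "norm x \<le> (\<Sum>i\<in>UNIV. \<bar>x $ i\<bar>)" by (rule norm_le_l1_cart)
    also have "\<dots> \<le> (\<Sum>i\<in>(UNIV::('c \<times> ('s \<Rightarrow> 'a)) set). (\<Sum>c\<in>UNIV. m c))"
    proof (intro sum_mono)
      fix i have "0 \<le> x $ i" using x unfolding Dx_def by (cases i) auto
      then show "\<bar>x $ i\<bar> \<le> (\<Sum>c\<in>UNIV. m c)" using Dx_le[OF x] by simp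
    qed
    finally show ?thesis by simp
  qed
  then show ?thesis by (auto simp: bounded_iff)
qed

lemma Dx_compact: "compact (Dx U m)"
  using Dx_bounded Dx_closed by (simp add: compact_eq_bounded_closed)

lemma Dx_convex: "convex (Dx U m)"
  unfolding convex_def
proof (intro ballI allI impI)
  fix x y and u v :: real assume xy: "x \<in> Dx U m" "y \<in> Dx U m" and uv: "0 \<le> u" "0 \<le> v" "u + v = 1"
  have e: "u * r + v * r = r" for r using uv by (simp add: distrib_right[symmetric])
  show "u *\<^sub>R x + v *\<^sub>R y \<in> Dx U m"
    using xy uv unfolding Dx_def by (auto simp: sum.distrib sum_distrib_left[symmetric] e)
qed

lemma Dx_ne: "Dx U m \<noteq> {}"
proof -
  define x0 :: "('c,'s,'a) pdist" where "x0 = (\<chi> i. case i of (c, u) \<Rightarrow> if u \<in> U c then m c / real (card (U c)) else 0)"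
  have cU: "card (U c) > 0" for c using U_ne[of c] by (simp add: card_gt_0_iff)
  have "x0 \<in> Dx U m" unfolding Dx_def
  proof (intro CollectI conjI allI impI)
    have p: "0 \<le> m c / real (card (U c))" for c using m_pos[of c] cU[of c] by (simp add: less_imp_le)
    fix i show "0 \<le> x0 $ i" by (cases i) (auto simp: x0_def p)
  next
    fix c u assume "u \<notin> U c" then show "x0 $ (c, u) = 0" by (simp add: x0_def)
  next
    fix c show "(\<Sum>u\<in>U c. x0 $ (c, u)) = m c" using cU[of c] U_ne[of c] by (simp add: x0_def)
  qed
  then show ?thesis by auto
qed

lemma popX_ne: "popX S U m \<noteq> {}"
  using Dx_ne B_popX by auto

end

locale model2 = model S A phi U m for S :: "'c::finite \<Rightarrow> 's::finite set"
    and A :: "'c \<Rightarrow> 's \<Rightarrow> 'a::finite set"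
    and phi :: "'c \<Rightarrow> 's \<Rightarrow> 'a \<Rightarrow> 's \<Rightarrow> real"
    and U :: "'c \<Rightarrow> ('s \<Rightarrow> 'a) set"
    and m :: "'c \<Rightarrow> real" +
  fixes F :: "'c \<Rightarrow> ('c,'s,'a) pstate \<Rightarrow> ('s \<Rightarrow> 'a) \<Rightarrow> real"
    and rho :: "'c \<Rightarrow> real^('s \<Rightarrow> 'a) \<Rightarrow> real^('s \<Rightarrow> 'a) \<Rightarrow> ('s \<Rightarrow> 'a) \<Rightarrow> ('s \<Rightarrow> 'a) \<Rightarrow> real"
  assumes F_C1: "\<exists>G. open G \<and> popX S U m \<subseteq> G \<and> (\<forall>c. \<forall>u\<in>U c. C1_on G (\<lambda>\<mu>. F c \<mu> u))"
    and rho_lip: "\<And>c. \<exists>L. \<forall>u\<in>U c. \<forall>v\<in>U c.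
                    L-lipschitz_on {(p, q). \<forall>i. q $ i \<ge> 0} (\<lambda>(p, q). rho c p q u v)"
begin

lemma F_lip: "u \<in> U c \<Longrightarrow> lipX (popX S U m) (\<lambda>\<mu>. F c \<mu> u)"
proof -
  assume u: "u \<in> U c"
  obtain G where G: "open G" "popX S U m \<subseteq> G" "C1_on G (\<lambda>\<mu>. F c \<mu> u)" using F_C1 u by blast
  then obtain f' where f': "\<forall>x\<in>G. ((\<lambda>\<mu>. F c \<mu> u) has_derivative blinfun_apply (f' x)) (at x)"
    and cf': "continuous_on G f'" by (auto simp: C1_on_def)
  have "compact (f' ` popX S U m)"
    by (rule compact_continuous_image[OF continuous_on_subset[OF cf' G(2)] popX_compact])
  then obtain K where K: "\<forall>x\<in>popX S U m. norm (f' x) \<le> K"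
    by (auto dest!: compact_imp_bounded simp: bounded_iff)
  show ?thesis unfolding lipX_def
  proof (intro exI[of _ "max K 0"] conjI ballI)
    fix x y assume x: "x \<in> popX S U m" and y: "y \<in> popX S U m"
    have "norm (F c x u - F c y u) \<le> max K 0 * norm (x - y)"
    proof (rule differentiable_bound[OF popX_convex _ _ x y])
      fix z assume z: "z \<in> popX S U m"
      show "((\<lambda>\<mu>. F c \<mu> u) has_derivative blinfun_apply (f' z)) (at z within popX S U m)"
        using f' z G(2) by (auto intro: has_derivative_at_withinI)
      have "norm (f' z) \<le> max K 0" using K z by (meson max.coboundedI1)
      then show "onorm (blinfun_apply (f' z)) \<le> max K 0"
        by (simp add: norm_blinfun.rep_eq[symmetric])
    qed
    then show "\<bar>F c x u - F c y u\<bar> \<le> max K 0 * norm (x - y)" by simp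
  qed simp
qed

lemma pay_pol_lip: "\<exists>L\<ge>0. \<forall>\<mu>\<in>popX S U m. \<forall>\<nu>\<in>popX S U m.
   norm (pay_vec U F \<mu> c - pay_vec U F \<nu> c) + norm (pol_vec S U \<mu> c - pol_vec S U \<nu> c) \<le> L * norm (\<mu> - \<nu>)"
proof -
  obtain LF where LF: "LF \<ge> 0" "\<forall>v\<in>U c. \<forall>x\<in>popX S U m. \<forall>y\<in>popX S U m. \<bar>F c x v - F c y v\<bar> \<le> LF * norm (x - y)"
    using lipX_finite_uniform[of "U c" "popX S U m" "\<lambda>v \<mu>. F c \<mu> v"] F_lip by auto
  define L where "L = real CARD('s \<Rightarrow> 'a) * LF + real CARD('s \<Rightarrow> 'a) * real CARD('s)"
  show ?thesis
  proof (intro exI[of _ L] conjI ballI)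
    show "0 \<le> L" using LF by (simp add: L_def)
    fix x y assume x: "x \<in> popX S U m" and y: "y \<in> popX S U m"
    have "norm (pay_vec U F x c - pay_vec U F y c) \<le> (\<Sum>v\<in>UNIV. \<bar>(pay_vec U F x c - pay_vec U F y c) $ v\<bar>)"
      by (rule norm_le_l1_cart)
    also have "\<dots> \<le> (\<Sum>v\<in>(UNIV::('s \<Rightarrow> 'a) set). LF * norm (x - y))"
      using LF x y by (intro sum_mono) (auto simp: pay_vec_def)
    finally have 1: "norm (pay_vec U F x c - pay_vec U F y c) \<le> real CARD('s \<Rightarrow> 'a) * LF * norm (x - y)" by simp
    have "norm (pol_vec S U x c - pol_vec S U y c) \<le> (\<Sum>v\<in>UNIV. \<bar>(pol_vec S U x c - pol_vec S U y c) $ v\<bar>)"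
      by (rule norm_le_l1_cart)
    also have "\<dots> \<le> (\<Sum>v\<in>(UNIV::('s \<Rightarrow> 'a) set). real CARD('s) * norm (x - y))"
    proof (intro sum_mono)
      fix v
      have "\<bar>(\<Sum>s\<in>S c. x $ (c, s, v)) - (\<Sum>s\<in>S c. y $ (c, s, v))\<bar> \<le> (\<Sum>s\<in>S c. \<bar>x $ (c, s, v) - y $ (c, s, v)\<bar>)"
        by (simp add: sum_subtractf[symmetric] sum_abs)
      also have "\<dots> \<le> (\<Sum>s\<in>S c. norm (x - y))"
        by (intro sum_mono comp_diff_le)
      also have "\<dots> \<le> (\<Sum>s\<in>(UNIV::'s set). norm (x - y))"
        by (intro sum_mono2) auto
      finally show "\<bar>(pol_vec S U x c - pol_vec S U y c) $ v\<bar> \<le> real CARD('s) * norm (x - y)"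
        by (auto simp: pol_vec_def pol_mass_def)
    qed
    finally have 2: "norm (pol_vec S U x c - pol_vec S U y c) \<le> real CARD('s \<Rightarrow> 'a) * real CARD('s) * norm (x - y)" by simp
    show "norm (pay_vec U F x c - pay_vec U F y c) + norm (pol_vec S U x c - pol_vec S U y c) \<le> L * norm (x - y)"
      using 1 2 by (simp add: L_def algebra_simps)
  qed
qed

lemma pol_vec_nonneg: "\<mu> \<in> popX S U m \<Longrightarrow> \<forall>i. pol_vec S U \<mu> c $ i \<ge> 0"
  by (auto simp: pol_vec_def pol_mass_def intro!: sum_nonneg popX_nonneg)

lemma rho_comp_lip: "u' \<in> U c \<Longrightarrow> u \<in> U c \<Longrightarrow>
   lipX (popX S U m) (\<lambda>\<mu>. rho c (pay_vec U F \<mu> c) (pol_vec S U \<mu> c) u' u)"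
proof -
  assume u': "u' \<in> U c" and u: "u \<in> U c"
  obtain Lr where Lr: "Lr-lipschitz_on {(p, q). \<forall>i. q $ i \<ge> 0} (\<lambda>(p, q). rho c p q u' u)"
    using rho_lip[of c] u u' by blast
  obtain L where L: "L \<ge> 0" "\<forall>\<mu>\<in>popX S U m. \<forall>\<nu>\<in>popX S U m.
   norm (pay_vec U F \<mu> c - pay_vec U F \<nu> c) + norm (pol_vec S U \<mu> c - pol_vec S U \<nu> c) \<le> L * norm (\<mu> - \<nu>)"
    using pay_pol_lip by blast
  have Lr0: "Lr \<ge> 0" using Lr by (simp add: lipschitz_on_def)
  show ?thesis unfolding lipX_def
  proof (intro exI[of _ "Lr * L"] conjI ballI)
    show "0 \<le> Lr * L" using Lr0 L by simp
    fix x y assume x: "x \<in> popX S U m" and y: "y \<in> popX S U m"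
    define px py qx qy where "px = pay_vec U F x c" "py = pay_vec U F y c" "qx = pol_vec S U x c" "qy = pol_vec S U y c"
    have inX: "(px, qx) \<in> {(p, q). \<forall>i. q $ i \<ge> 0}" "(py, qy) \<in> {(p, q). \<forall>i. q $ i \<ge> 0}"
      using pol_vec_nonneg x y by (auto simp: px_py_qx_qy_def)
    have "\<bar>rho c px qx u' u - rho c py qy u' u\<bar> \<le> Lr * dist (px, qx) (py, qy)"
      using Lr inX unfolding lipschitz_on_def by (force simp: dist_real_def)
    also have "dist (px, qx) (py, qy) \<le> dist px py + dist qx qy"
      by (simp add: dist_Pair_Pair sqrt_sum_squares_le_sum)
    also have "\<dots> \<le> L * norm (x - y)" using L x y by (simp add: dist_norm px_py_qx_qy_def)
    finally show "\<bar>rho c (pay_vec U F x c) (pol_vec S U x c) u' u - rho c (pay_vec U F y c) (pol_vec S U y c) u' u\<bar> \<le> Lr * L * norm (x - y)"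
      using Lr0 by (simp add: px_py_qx_qy_def mult.assoc mult_left_mono)
  qed
qed

lemma fr_lipX: "u \<in> U c \<Longrightarrow> lipX (popX S U m) (\<lambda>\<mu>. fr S U F rho \<mu> c s u)"
proof -
  assume u: "u \<in> U c"
  let ?g = "\<lambda>v w \<mu>. rho c (pay_vec U F \<mu> c) (pol_vec S U \<mu> c) v w"
  have l1: "lipX (popX S U m) (\<lambda>\<mu>. \<Sum>u'\<in>U c. \<mu> $ (c, s, u') * ?g u' u \<mu>)"
  proof (rule lipX_sum)
    fix u' assume u': "u' \<in> U c"
    show "lipX (popX S U m) (\<lambda>\<mu>. \<mu> $ (c, s, u') * ?g u' u \<mu>)"
      by (rule lipX_mult[OF lipX_vec_nth rho_comp_lip[OF u' u] popX_bounded])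
  qed simp
  have l2: "lipX (popX S U m) (\<lambda>\<mu>. \<Sum>u'\<in>U c. ?g u u' \<mu>)"
  proof (rule lipX_sum)
    fix u' assume u': "u' \<in> U c"
    show "lipX (popX S U m) (?g u u')" by (rule rho_comp_lip[OF u u'])
  qed simp
  have l3: "lipX (popX S U m) (\<lambda>\<mu>. \<mu> $ (c, s, u) * (\<Sum>u'\<in>U c. ?g u u' \<mu>))"
    by (rule lipX_mult[OF lipX_vec_nth l2 popX_bounded])
  show ?thesis unfolding fr_def by (rule lipX_diff[OF l1 l3])
qed

lemma fr_lip: "\<exists>L\<ge>0. \<forall>c s u. u \<in> U c \<longrightarrow> (\<forall>\<mu>\<in>popX S U m. \<forall>\<nu>\<in>popX S U m.
    \<bar>fr S U F rho \<mu> c s u - fr S U F rho \<nu> c s u\<bar> \<le> L * norm (\<mu> - \<nu>))"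
proof -
  define f where "f i \<mu> = (case i of (c, s, u) \<Rightarrow> fr S U F rho \<mu> c s u)" for i \<mu>
  have "lipX (popX S U m) (f i)" if "i \<in> {(c, s, u). u \<in> U c}" for i
  proof -
    have fe: "f (c, s, u) = (\<lambda>\<mu>. fr S U F rho \<mu> c s u)" for c s u by (simp add: fun_eq_iff f_def)
    show ?thesis using that fr_lipX by (cases i) (simp add: fe)
  qed
  then obtain L where L: "L \<ge> 0" "\<forall>i\<in>{(c, s, u). u \<in> U c}. \<forall>x\<in>popX S U m. \<forall>y\<in>popX S U m.
     \<bar>f i x - f i y\<bar> \<le> L * norm (x - y)"
    using lipX_finite_uniform[of "{(c, s, u). u \<in> U c}" "popX S U m" f] by auto
  show ?thesis
  proof (intro exI[of _ L] conjI allI impI ballI)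
    fix c s u x y assume "u \<in> U c" "x \<in> popX S U m" "y \<in> popX S U m"
    then show "\<bar>fr S U F rho x c s u - fr S U F rho y c s u\<bar> \<le> L * norm (x - y)"
      using L(2)[rule_format, of "(c, s, u)" x y] by (simp add: f_def)
  qed (use L in simp)
qed

end


lemma two_ab_le: "(\<eta>::real) > 0 \<Longrightarrow> 2 * a * b \<le> \<eta> * a\<^sup>2 + b\<^sup>2 / \<eta>"
proof -
  assume e: "\<eta> > 0"
  have "0 \<le> (\<eta> * a - b)\<^sup>2 / \<eta>" using e by simp
  also have "(\<eta> * a - b)\<^sup>2 / \<eta> = \<eta> * a\<^sup>2 - 2 * a * b + b\<^sup>2 / \<eta>"
    using e by (simp add: power2_eq_square field_simps)
  finally show ?thesis by simp
qed

context mchain begin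

lemma ap0: "ap 0 w = w" by (simp add: ap_def)

lemma ap_Suc: "ap k (Aop w) = ap (Suc k) w"
  by (simp add: ap_def funpow_Suc_right del: funpow.simps)

lemma tele:
  assumes N: "\<And>w. (\<Sum>s\<in>S. w s) = 0 \<Longrightarrow> (\<Sum>t\<in>S. (ap N w t)\<^sup>2) \<le> 1/4 * (\<Sum>s\<in>S. (w s)\<^sup>2)"
    and z0: "(\<Sum>s\<in>S. z s) = 0" and R: "R \<ge> 0" and e: "\<eta> > 0"
  shows "(\<Sum>k<N. \<Sum>t\<in>S. 2 * ap k z t * (2 * R * (ap (Suc k) z t - ap k z t) + ap k h t))
    \<le> - (3/2) * R * (\<Sum>s\<in>S. (z s)\<^sup>2) + real N * (real (card S))\<^sup>2 * (\<eta> * (\<Sum>s\<in>S. (z s)\<^sup>2) + (\<Sum>s\<in>S. (h s)\<^sup>2) / \<eta>)"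
proof -
  define g where "g k = (\<Sum>t\<in>S. (ap k z t)\<^sup>2)" for k
  define Z where "Z = (\<Sum>s\<in>S. (z s)\<^sup>2)"
  define H where "H = (\<Sum>s\<in>S. (h s)\<^sup>2)"
  have pt: "2 * a * (2 * R * (a' - a) + b) \<le> 2 * R * (a'\<^sup>2 - a\<^sup>2) + (\<eta> * a\<^sup>2 + b\<^sup>2 / \<eta>)" for a a' b
  proof -
    have "0 \<le> 2 * R * (a' - a)\<^sup>2" using R by simp
    then have "2 * a * (2 * R * (a' - a)) \<le> 2 * R * (a'\<^sup>2 - a\<^sup>2)"
      by (simp add: power2_eq_square algebra_simps)
    then show ?thesis using two_ab_le[OF e, of a b] by (simp add: algebra_simps)
  qed
  have "(\<Sum>k<N. \<Sum>t\<in>S. 2 * ap k z t * (2 * R * (ap (Suc k) z t - ap k z t) + ap k h t))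
      \<le> (\<Sum>k<N. \<Sum>t\<in>S. 2 * R * ((ap (Suc k) z t)\<^sup>2 - (ap k z t)\<^sup>2) + (\<eta> * (ap k z t)\<^sup>2 + (ap k h t)\<^sup>2 / \<eta>))"
    by (intro sum_mono pt)
  also have "\<dots> = (\<Sum>k<N. 2 * R * (g (Suc k) - g k) + (\<eta> * g k + (\<Sum>t\<in>S. (ap k h t)\<^sup>2) / \<eta>))"
    by (intro sum.cong refl) (simp add: g_def sum.distrib sum_subtractf sum_distrib_left sum_divide_distrib right_diff_distrib)
  also have "\<dots> = (\<Sum>k<N. 2 * R * (g (Suc k) - g k)) + (\<Sum>k<N. \<eta> * g k + (\<Sum>t\<in>S. (ap k h t)\<^sup>2) / \<eta>)"
    by (rule sum.distrib)
  also have "(\<Sum>k<N. 2 * R * (g (Suc k) - g k)) = 2 * R * (g N - g 0)"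
    by (simp add: sum_distrib_left[symmetric] sum_lessThan_telescope)
  also have "g N \<le> 1/4 * Z" using N[OF z0] by (simp add: g_def Z_def)
  then have "2 * R * (g N - g 0) \<le> 2 * R * (1/4 * Z - Z)"
    using R by (intro mult_left_mono) (auto simp: g_def Z_def ap0)
  also have "(\<Sum>k<N. \<eta> * g k + (\<Sum>t\<in>S. (ap k h t)\<^sup>2) / \<eta>) \<le> (\<Sum>k<N. \<eta> * ((real (card S))\<^sup>2 * Z) + (real (card S))\<^sup>2 * H / \<eta>)"
  proof (intro sum_mono add_mono)
    fix k
    show "\<eta> * g k \<le> \<eta> * ((real (card S))\<^sup>2 * Z)" using e ap_l2_bound by (simp add: g_def Z_def)
    show "(\<Sum>t\<in>S. (ap k h t)\<^sup>2) / \<eta> \<le> (real (card S))\<^sup>2 * H / \<eta>"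
      using e ap_l2_bound by (simp add: H_def divide_right_mono)
  qed
  finally show ?thesis by (simp add: Z_def H_def algebra_simps)
qed

end


locale setting = model2 S A phi U m F rho
  for S :: "'c::finite \<Rightarrow> 's::finite set"
    and A :: "'c \<Rightarrow> 's \<Rightarrow> 'a::finite set"
    and phi :: "'c \<Rightarrow> 's \<Rightarrow> 'a \<Rightarrow> 's \<Rightarrow> real"
    and U :: "'c \<Rightarrow> ('s \<Rightarrow> 'a) set"
    and m :: "'c \<Rightarrow> real"
    and F :: "'c \<Rightarrow> ('c,'s,'a) pstate \<Rightarrow> ('s \<Rightarrow> 'a) \<Rightarrow> real"
    and rho :: "'c \<Rightarrow> real^('s \<Rightarrow> 'a) \<Rightarrow> real^('s \<Rightarrow> 'a) \<Rightarrow> ('s \<Rightarrow> 'a) \<Rightarrow> ('s \<Rightarrow> 'a) \<Rightarrow> real" +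
  fixes \<kappa> :: "'c \<Rightarrow> real"
    and MF :: "('c,'s,'a) pdist set"
    and Dbar :: "('c,'s,'a) pdist set"
    and V :: "('c,'s,'a) pdist \<Rightarrow> real"
    and V' :: "('c,'s,'a) pdist \<Rightarrow> ('c,'s,'a) pdist \<Rightarrow>\<^sub>L real"
    and \<gamma>1 \<gamma>2 :: real
  assumes \<kappa>_ge: "\<And>c. \<kappa> c \<ge> 1"
    and MF_ne: "MF \<noteq> {}"
    and MF_closed: "closed MF"
    and MF_NE: "MF \<subseteq> NE_ss S U m phi F"
    and hyp_i: "\<And>\<mu> c s u. \<mu> \<in> MSNE S U m phi F \<Longrightarrow> s \<in> S c \<Longrightarrow> u \<in> U c \<Longrightarrow> fr S U F rho \<mu> c s u = 0"
    and Dbar_sub: "Dbar \<subseteq> Dx U m"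
    and Dbar_nbhd: "\<exists>W. open W \<and> MF \<subseteq> W \<and> W \<inter> Dx U m \<subseteq> Dbar"
    and V_C1: "\<exists>G. open G \<and> Dbar \<subseteq> G \<and>
                 (\<forall>x\<in>G. (V has_derivative blinfun_apply (V' x)) (at x)) \<and> continuous_on G V'"
    and V_nonneg: "\<And>x. x \<in> Dbar \<Longrightarrow> V x \<ge> 0"
    and V_pos: "\<And>x. x \<in> Dbar - MF \<Longrightarrow> V x > 0"
    and V_zero: "\<And>x. x \<in> MF \<Longrightarrow> V x = 0"
    and \<gamma>1_pos: "\<gamma>1 > 0" and \<gamma>2_pos: "\<gamma>2 > 0"
    and V_decr: "\<And>x. x \<in> Dbar \<Longrightarrow> V' x (gred S U phi F rho x) \<le> - \<gamma>1 * (infdist x MF)\<^sup>2"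
    and V_grad: "\<And>x. x \<in> Dbar \<Longrightarrow> norm (V' x) \<le> \<gamma>2 * infdist x MF"
begin

abbreviation "AP c u \<equiv> mchain.ap (S c) (kern phi c u)"
abbreviation "KP c u \<equiv> mchain.Kp (S c) (kern phi c u)"
abbreviation "AO c u \<equiv> mchain.Aop (S c) (kern phi c u)"

definition Nn :: "'c \<Rightarrow> ('s \<Rightarrow> 'a) \<Rightarrow> nat" where
  "Nn c u = (SOME N. N \<ge> 1 \<and> (\<forall>w. (\<Sum>s\<in>S c. w s) = 0 \<longrightarrow>
     (\<Sum>t\<in>S c. (AP c u N w t)\<^sup>2) \<le> 1/4 * (\<Sum>s\<in>S c. (w s)\<^sup>2)))"

lemma Nn: "u \<in> U c \<Longrightarrow> Nn c u \<ge> 1 \<and> (\<forall>w. (\<Sum>s\<in>S c. w s) = 0 \<longrightarrow>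
     (\<Sum>t\<in>S c. (AP c u (Nn c u) w t)\<^sup>2) \<le> 1/4 * (\<Sum>s\<in>S c. (w s)\<^sup>2))"
  unfolding Nn_def by (rule someI_ex) (rule mchain.l2_contract[OF mc])

definition zc :: "('c,'s,'a) pstate \<Rightarrow> 'c \<Rightarrow> ('s \<Rightarrow> 'a) \<Rightarrow> 's \<Rightarrow> real" where
  "zc z c u = (\<lambda>s. z $ (c, s, u))"

definition Phi :: "('c,'s,'a) pstate \<Rightarrow> real" where
  "Phi z = (\<Sum>c\<in>UNIV. \<Sum>u\<in>U c. \<Sum>k<Nn c u. \<Sum>t\<in>S c. (\<Sum>s\<in>S c. z $ (c, s, u) * KP c u k s t)\<^sup>2)"

definition PhiD :: "('c,'s,'a) pstate \<Rightarrow> ('c,'s,'a) pstate \<Rightarrow> real" where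
  "PhiD z w = (\<Sum>c\<in>UNIV. \<Sum>u\<in>U c. \<Sum>k<Nn c u. \<Sum>t\<in>S c.
      2 * (\<Sum>s\<in>S c. z $ (c, s, u) * KP c u k s t) * (\<Sum>s\<in>S c. w $ (c, s, u) * KP c u k s t))"

definition sq :: "('c,'s,'a) pstate \<Rightarrow> real" where
  "sq z = (\<Sum>c\<in>UNIV. \<Sum>u\<in>U c. \<Sum>s\<in>S c. (z $ (c, s, u))\<^sup>2)"

definition hh :: "('c,'s,'a) pstate \<Rightarrow> ('c,'s,'a) pstate" where
  "hh \<mu> = (\<chi> i. case i of (c, s, u) \<Rightarrow> if s \<in> S c \<and> u \<in> U c then
      fr S U F rho \<mu> c s u - et c u s * (\<Sum>s'\<in>S c. fr S U F rho \<mu> c s' u) else 0)"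

definition NP :: real where
  "NP = (\<Sum>c\<in>UNIV. \<Sum>u\<in>U c. real (Nn c u) * (real (card (S c)))\<^sup>2)"

lemma ap_KP: "u \<in> U c \<Longrightarrow> t \<in> S c \<Longrightarrow> AP c u k w t = (\<Sum>s\<in>S c. w s * KP c u k s t)"
  by (rule mchain.ap_Kp[OF mc])

lemma Phi_ap: "Phi z = (\<Sum>c\<in>UNIV. \<Sum>u\<in>U c. \<Sum>k<Nn c u. \<Sum>t\<in>S c. (AP c u k (zc z c u) t)\<^sup>2)"
  unfolding Phi_def by (intro sum.cong refl) (simp add: ap_KP zc_def)

lemma PhiD_ap: "PhiD z w = (\<Sum>c\<in>UNIV. \<Sum>u\<in>U c. \<Sum>k<Nn c u. \<Sum>t\<in>S c.
      2 * AP c u k (zc z c u) t * AP c u k (zc w c u) t)"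
  unfolding PhiD_def by (intro sum.cong refl) (simp add: ap_KP zc_def)

lemma AO_eq: "u \<in> U c \<Longrightarrow> s \<in> S c \<Longrightarrow> AO c u w s = (w s + (\<Sum>r\<in>S c. w r * phi c r (u r) s)) / 2"
proof -
  assume u: "u \<in> U c" and s: "s \<in> S c"
  have "AO c u w s = (\<Sum>r\<in>S c. w r * (((if r = s then 1 else 0) + kern phi c u r s) / 2))"
    by (simp add: mchain.Aop_def[OF mc[OF u]] mchain.Al_def[OF mc[OF u]])
  also have "\<dots> = ((\<Sum>r\<in>S c. w r * (if r = s then 1 else 0)) + (\<Sum>r\<in>S c. w r * kern phi c u r s)) / 2"
    by (simp add: sum_divide_distrib[symmetric] sum.distrib[symmetric] distrib_left)
  also have "\<dots> = (w s + (\<Sum>r\<in>S c. w r * phi c r (u r) s)) / 2"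
    using s by (simp add: kern_def if_distrib cong: if_cong)
  finally show ?thesis .
qed

lemma dz: "u \<in> U c \<Longrightarrow> s \<in> S c \<Longrightarrow>
   zof (Efield S U phi R F rho \<mu>) $ (c, s, u) =
   2 * R c * (AO c u (zc (zof \<mu>) c u) s - zof \<mu> $ (c, s, u)) + hh \<mu> $ (c, s, u)"
proof -
  assume u: "u \<in> U c" and s: "s \<in> S c"
  define x where "x = (\<Sum>s'\<in>S c. \<mu> $ (c, s', u))"
  have mu: "\<mu> $ (c, s', u) = zof \<mu> $ (c, s', u) + x * et c u s'" if "s' \<in> S c" for s'
    using that u by (simp add: zof_nth x_def)
  have "(\<Sum>s'\<in>S c. phi c s' (u s') s * \<mu> $ (c, s', u))
      = (\<Sum>s'\<in>S c. zof \<mu> $ (c, s', u) * phi c s' (u s') s) + x * (\<Sum>s'\<in>S c. et c u s' * phi c s' (u s') s)"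
    by (simp add: mu sum.distrib sum_distrib_left algebra_simps cong: sum.cong)
  also have "\<dots> = (\<Sum>s'\<in>S c. zof \<mu> $ (c, s', u) * phi c s' (u s') s) + x * et c u s"
    using eta_eq[OF u s] by simp
  finally have e1: "(\<Sum>s'\<in>S c. phi c s' (u s') s * \<mu> $ (c, s', u))
      = (\<Sum>s'\<in>S c. zof \<mu> $ (c, s', u) * phi c s' (u s') s) + x * et c u s" .
  have fdz: "fd S phi R \<mu> c s u = 2 * R c * (AO c u (zc (zof \<mu>) c u) s - zof \<mu> $ (c, s, u))"
    unfolding fd_def e1 using mu[OF s] AO_eq[OF u s, of "zc (zof \<mu>) c u"]
    by (simp add: zc_def algebra_simps)
  have sE: "(\<Sum>s'\<in>S c. Efield S U phi R F rho \<mu> $ (c, s', u)) = (\<Sum>s'\<in>S c. fr S U F rho \<mu> c s' u)"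
    using xof_Efield[where R=R and F=F and rho=rho and \<mu>=\<mu> and c=c and u=u] u by (simp add: xof_nth)
  have "zof (Efield S U phi R F rho \<mu>) $ (c, s, u) = Efield S U phi R F rho \<mu> $ (c, s, u)
      - (\<Sum>s'\<in>S c. Efield S U phi R F rho \<mu> $ (c, s', u)) * et c u s"
    using u s by (simp add: zof_nth)
  also have "\<dots> = Efield S U phi R F rho \<mu> $ (c, s, u) - (\<Sum>s'\<in>S c. fr S U F rho \<mu> c s' u) * et c u s"
    unfolding sE ..
  also have "\<dots> = 2 * R c * (AO c u (zc (zof \<mu>) c u) s - zof \<mu> $ (c, s, u)) + hh \<mu> $ (c, s, u)"
    using u s by (simp add: Efield_nth fdz hh_def)
  finally show ?thesis .
qed

lemma AP_dz: "u \<in> U c \<Longrightarrow> t \<in> S c \<Longrightarrow>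
   AP c u k (zc (zof (Efield S U phi R F rho \<mu>)) c u) t =
   2 * R c * (AP c u (Suc k) (zc (zof \<mu>) c u) t - AP c u k (zc (zof \<mu>) c u) t) + AP c u k (zc (hh \<mu>) c u) t"
proof -
  assume u: "u \<in> U c" and t: "t \<in> S c"
  have "AP c u k (zc (zof (Efield S U phi R F rho \<mu>)) c u) t
     = (\<Sum>s\<in>S c. (2 * R c * (AO c u (zc (zof \<mu>) c u) s - zof \<mu> $ (c, s, u)) + hh \<mu> $ (c, s, u)) * KP c u k s t)"
    using u t by (simp add: ap_KP zc_def dz)
  also have "\<dots> = 2 * R c * ((\<Sum>s\<in>S c. AO c u (zc (zof \<mu>) c u) s * KP c u k s t) - (\<Sum>s\<in>S c. zof \<mu> $ (c, s, u) * KP c u k s t))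
       + (\<Sum>s\<in>S c. hh \<mu> $ (c, s, u) * KP c u k s t)"
    by (simp add: algebra_simps sum.distrib sum_subtractf sum_distrib_left)
  also have "\<dots> = 2 * R c * (AP c u k (AO c u (zc (zof \<mu>) c u)) t - AP c u k (zc (zof \<mu>) c u) t) + AP c u k (zc (hh \<mu>) c u) t"
    using u t by (simp add: ap_KP zc_def)
  also have "AP c u k (AO c u (zc (zof \<mu>) c u)) = AP c u (Suc k) (zc (zof \<mu>) c u)"
    by (rule mchain.ap_Suc[OF mc[OF u]])
  finally show ?thesis .
qed

lemma PhiD_bound:
  assumes R: "\<And>c. R c \<ge> 1 / \<epsilon>" and ep: "\<epsilon> > 0" and e: "\<eta> > 0"
  shows "PhiD (zof \<mu>) (zof (Efield S U phi R F rho \<mu>)) \<le>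
     - (3/2) * (1 / \<epsilon>) * sq (zof \<mu>) + NP * (\<eta> * sq (zof \<mu>) + sq (hh \<mu>) / \<eta>)"
proof -
  define Z where "Z c u = (\<Sum>s\<in>S c. (zc (zof \<mu>) c u s)\<^sup>2)" for c u
  define H where "H c u = (\<Sum>s\<in>S c. (zc (hh \<mu>) c u s)\<^sup>2)" for c u
  define a where "a c u = real (Nn c u) * (real (card (S c)))\<^sup>2" for c u
  have Rp: "R c \<ge> 0" for c using R[of c] ep by (smt (verit) divide_pos_pos)
  have Z0: "Z c u \<ge> 0" "H c u \<ge> 0" for c u by (auto simp: Z_def H_def intro: sum_nonneg)
  have sqZ: "sq (zof \<mu>) = (\<Sum>c\<in>UNIV. \<Sum>u\<in>U c. Z c u)" by (simp add: sq_def Z_def zc_def)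
  have sqH: "sq (hh \<mu>) = (\<Sum>c\<in>UNIV. \<Sum>u\<in>U c. H c u)" by (simp add: sq_def H_def zc_def)
  have trm: "(\<Sum>k<Nn c u. \<Sum>t\<in>S c. 2 * AP c u k (zc (zof \<mu>) c u) t * AP c u k (zc (zof (Efield S U phi R F rho \<mu>)) c u) t)
      \<le> - (3/2) * (1 / \<epsilon>) * Z c u + a c u * (\<eta> * Z c u + H c u / \<eta>)" if u: "u \<in> U c" for c u
  proof -
    have "(\<Sum>k<Nn c u. \<Sum>t\<in>S c. 2 * AP c u k (zc (zof \<mu>) c u) t * AP c u k (zc (zof (Efield S U phi R F rho \<mu>)) c u) t)
       = (\<Sum>k<Nn c u. \<Sum>t\<in>S c. 2 * AP c u k (zc (zof \<mu>) c u) t * (2 * R c * (AP c u (Suc k) (zc (zof \<mu>) c u) t - AP c u k (zc (zof \<mu>) c u) t) + AP c u k (zc (hh \<mu>) c u) t))"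
      using u by (intro sum.cong refl) (simp add: AP_dz)
    also have "\<dots> \<le> - (3/2) * R c * Z c u + a c u * (\<eta> * Z c u + H c u / \<eta>)"
      unfolding Z_def H_def a_def
      by (rule mchain.tele[OF mc[OF u]]) (use Nn[OF u] zof_sum[OF u] Rp e in \<open>auto simp: zc_def\<close>)
    also have "- (3/2) * R c * Z c u \<le> - (3/2) * (1 / \<epsilon>) * Z c u"
    proof -
      have h: "(1 / \<epsilon>) * Z c u \<le> R c * Z c u" by (rule mult_right_mono[OF R[of c] Z0(1)])
      have "- (3/2) * (R c * Z c u) \<le> - (3/2) * ((1 / \<epsilon>) * Z c u)" by (rule mult_left_mono_neg[OF h]) simp
      then show ?thesis by (simp only: mult.assoc)
    qed
    finally show ?thesis by simp
  qed
  have aN: "a c u \<le> NP" if "u \<in> U c" for c u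
  proof -
    have "a c u \<le> (\<Sum>u\<in>U c. a c u)" using that by (intro member_le_sum) (auto simp: a_def)
    also have "\<dots> \<le> (\<Sum>c\<in>UNIV. \<Sum>u\<in>U c. a c u)"
      by (intro member_le_sum[of c UNIV "\<lambda>c. \<Sum>u\<in>U c. a c u"]) (auto simp: a_def intro!: sum_nonneg)
    finally show ?thesis by (simp add: NP_def a_def)
  qed
  have "PhiD (zof \<mu>) (zof (Efield S U phi R F rho \<mu>)) \<le> (\<Sum>c\<in>UNIV. \<Sum>u\<in>U c. - (3/2) * (1 / \<epsilon>) * Z c u + a c u * (\<eta> * Z c u + H c u / \<eta>))"
    unfolding PhiD_ap by (intro sum_mono trm)
  also have "\<dots> \<le> (\<Sum>c\<in>UNIV. \<Sum>u\<in>U c. - (3/2) * (1 / \<epsilon>) * Z c u + NP * (\<eta> * Z c u + H c u / \<eta>))"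
    using aN Z0 e by (intro sum_mono add_left_mono mult_right_mono) (auto intro!: add_nonneg_nonneg divide_nonneg_pos)
  also have "\<dots> = - (3/2) * (1 / \<epsilon>) * sq (zof \<mu>) + NP * (\<eta> * sq (zof \<mu>) + sq (hh \<mu>) / \<eta>)"
    by (simp add: sqZ sqH sum.distrib sum_subtractf sum_negf sum_distrib_left sum_divide_distrib distrib_left)
  finally show ?thesis .
qed

end


lemma sum_triple: "(\<Sum>i\<in>UNIV. (g::('c::finite \<times> 's::finite \<times> 'u::finite) \<Rightarrow> real) i) = (\<Sum>c\<in>UNIV. \<Sum>s\<in>UNIV. \<Sum>u\<in>UNIV. g (c, s, u))"
  by (simp add: UNIV_Times_UNIV[symmetric] sum.cartesian_product del: UNIV_Times_UNIV)

context setting begin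

lemma norm_sq: "(\<And>c s u. \<not> (s \<in> S c \<and> u \<in> U c) \<Longrightarrow> z $ (c, s, u) = 0) \<Longrightarrow> (norm z)\<^sup>2 = sq z"
proof -
  assume z: "\<And>c s u. \<not> (s \<in> S c \<and> u \<in> U c) \<Longrightarrow> z $ (c, s, u) = 0"
  have "(norm z)\<^sup>2 = z \<bullet> z" by (rule power2_norm_eq_inner)
  also have "\<dots> = (\<Sum>i\<in>UNIV. (z $ i)\<^sup>2)" by (simp add: inner_vec_def power2_eq_square)
  also have "\<dots> = (\<Sum>c\<in>UNIV. \<Sum>s\<in>UNIV. \<Sum>u\<in>UNIV. (z $ (c, s, u))\<^sup>2)" by (rule sum_triple)
  also have "\<dots> = (\<Sum>c\<in>UNIV. \<Sum>s\<in>S c. \<Sum>u\<in>U c. (z $ (c, s, u))\<^sup>2)"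
  proof (rule sum.cong[OF refl])
    fix c assume "c \<in> (UNIV::'c set)"
    have "(\<Sum>s\<in>UNIV. \<Sum>u\<in>UNIV. (z $ (c, s, u))\<^sup>2) = (\<Sum>s\<in>UNIV. \<Sum>u\<in>U c. (z $ (c, s, u))\<^sup>2)"
      using z by (intro sum.cong refl sum.mono_neutral_right) auto
    also have "\<dots> = (\<Sum>s\<in>S c. \<Sum>u\<in>U c. (z $ (c, s, u))\<^sup>2)"
      using z by (intro sum.mono_neutral_right) (auto intro!: sum.neutral)
    finally show "(\<Sum>s\<in>UNIV. \<Sum>u\<in>UNIV. (z $ (c, s, u))\<^sup>2) = (\<Sum>s\<in>S c. \<Sum>u\<in>U c. (z $ (c, s, u))\<^sup>2)" .
  qed
  also have "\<dots> = sq z" unfolding sq_def by (intro sum.cong refl) (rule sum.swap)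
  finally show ?thesis .
qed

lemma zof_out: "\<mu> \<in> popX S U m \<Longrightarrow> \<not> (s \<in> S c \<and> u \<in> U c) \<Longrightarrow> zof \<mu> $ (c, s, u) = 0"
  by (auto simp: zof_nth popX_def)

lemma norm_zof: "\<mu> \<in> popX S U m \<Longrightarrow> (norm (zof \<mu>))\<^sup>2 = sq (zof \<mu>)"
  by (rule norm_sq) (rule zof_out)

lemma sq_le: "(\<And>c s u. s \<in> S c \<Longrightarrow> u \<in> U c \<Longrightarrow> \<bar>z $ (c, s, u)\<bar> \<le> b) \<Longrightarrow>
   sq z \<le> real (CARD('c) * CARD('s \<Rightarrow> 'a) * CARD('s)) * b\<^sup>2"
proof -
  assume h: "\<And>c s u. s \<in> S c \<Longrightarrow> u \<in> U c \<Longrightarrow> \<bar>z $ (c, s, u)\<bar> \<le> b"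
  have "sq z \<le> (\<Sum>c\<in>UNIV. \<Sum>u\<in>U c. \<Sum>s\<in>S c. b\<^sup>2)"
    unfolding sq_def
  proof (intro sum_mono)
    fix c u s assume "u \<in> U c" "s \<in> S c"
    then have "\<bar>z $ (c, s, u)\<bar> \<le> b" by (rule h[rotated])
    then show "(z $ (c, s, u))\<^sup>2 \<le> b\<^sup>2"
      by (subst power2_abs[symmetric], intro power_mono) auto
  qed
  also have "\<dots> \<le> (\<Sum>c\<in>(UNIV::'c set). \<Sum>u\<in>(UNIV::('s\<Rightarrow>'a) set). \<Sum>s\<in>(UNIV::'s set). b\<^sup>2)"
  proof (rule sum_mono)
    fix c
    have "(\<Sum>u\<in>U c. \<Sum>s\<in>S c. b\<^sup>2) \<le> (\<Sum>u\<in>U c. \<Sum>s\<in>(UNIV::'s set). b\<^sup>2)"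
      by (rule sum_mono, rule sum_mono2) auto
    also have "\<dots> \<le> (\<Sum>u\<in>(UNIV::('s\<Rightarrow>'a) set). \<Sum>s\<in>(UNIV::'s set). b\<^sup>2)"
      by (rule sum_mono2) auto
    finally show "(\<Sum>u\<in>U c. \<Sum>s\<in>S c. b\<^sup>2) \<le> (\<Sum>u\<in>(UNIV::('s\<Rightarrow>'a) set). \<Sum>s\<in>(UNIV::'s set). b\<^sup>2)" .
  qed
  also have "\<dots> = real (CARD('c) * CARD('s \<Rightarrow> 'a) * CARD('s)) * b\<^sup>2" by simp
  finally show ?thesis .
qed

definition Lfr :: real where
  "Lfr = (SOME L. L \<ge> 0 \<and> (\<forall>c s u. u \<in> U c \<longrightarrow> (\<forall>\<mu>\<in>popX S U m. \<forall>\<nu>\<in>popX S U m.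
    \<bar>fr S U F rho \<mu> c s u - fr S U F rho \<nu> c s u\<bar> \<le> L * norm (\<mu> - \<nu>))))"

lemma Lfr: "Lfr \<ge> 0" "u \<in> U c \<Longrightarrow> \<mu> \<in> popX S U m \<Longrightarrow> \<nu> \<in> popX S U m \<Longrightarrow>
    \<bar>fr S U F rho \<mu> c s u - fr S U F rho \<nu> c s u\<bar> \<le> Lfr * norm (\<mu> - \<nu>)"
proof -
  have "Lfr \<ge> 0 \<and> (\<forall>c s u. u \<in> U c \<longrightarrow> (\<forall>\<mu>\<in>popX S U m. \<forall>\<nu>\<in>popX S U m.
    \<bar>fr S U F rho \<mu> c s u - fr S U F rho \<nu> c s u\<bar> \<le> Lfr * norm (\<mu> - \<nu>)))"
    unfolding Lfr_def by (rule someI_ex[OF fr_lip])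
  then show "Lfr \<ge> 0" "u \<in> U c \<Longrightarrow> \<mu> \<in> popX S U m \<Longrightarrow> \<nu> \<in> popX S U m \<Longrightarrow>
    \<bar>fr S U F rho \<mu> c s u - fr S U F rho \<nu> c s u\<bar> \<le> Lfr * norm (\<mu> - \<nu>)" by auto
qed

definition Bc :: real where
  "Bc = (SOME b. b > 0 \<and> (\<forall>v. norm (B v) \<le> b * norm v))"

lemma Bc: "Bc > 0" "norm (B v) \<le> Bc * norm v"
proof -
  have "\<exists>b. b > 0 \<and> (\<forall>v. norm (B v) \<le> b * norm v)"
    using linear_bounded_pos[OF linear_B] by blast
  then have "Bc > 0 \<and> (\<forall>v. norm (B v) \<le> Bc * norm v)" unfolding Bc_def by (rule someI_ex)
  then show "Bc > 0" "norm (B v) \<le> Bc * norm v" by auto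
qed

abbreviation "Mset \<equiv> B ` MF"

lemma MF_Dx: "MF \<subseteq> Dx U m" using MF_NE by (auto simp: NE_ss_def)

lemma MF_compact: "compact MF"
  using Dx_bounded MF_Dx MF_closed bounded_subset by (auto simp: compact_eq_bounded_closed)

lemma Mset_compact: "compact Mset"
  using MF_compact linear_continuous_on[OF linear_B[unfolded linear_conv_bounded_linear]]
  by (rule compact_continuous_image[rotated])

lemma Mset_closed: "closed Mset" using Mset_compact by (rule compact_imp_closed)

lemma Mset_ne: "Mset \<noteq> {}" using MF_ne by simp

lemma Mset_popX: "Mset \<subseteq> popX S U m" using MF_Dx B_popX by auto

lemma hh_M: "\<mu> \<in> Mset \<Longrightarrow> hh \<mu> = 0"
proof -
  assume "\<mu> \<in> Mset"
  then obtain x where x: "x \<in> MF" "\<mu> = B x" by auto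
  then have "\<mu> \<in> MSNE S U m phi F" using MF_NE B_NE by auto
  then show ?thesis using hyp_i by (auto simp: hh_def vec_eq_iff)
qed

definition Lh :: real where "Lh = (1 + real CARD('s)) * Lfr"

lemma hh_lip: "\<mu> \<in> popX S U m \<Longrightarrow> \<nu> \<in> popX S U m \<Longrightarrow> \<bar>hh \<mu> $ i - hh \<nu> $ i\<bar> \<le> Lh * norm (\<mu> - \<nu>)"
proof -
  assume mu: "\<mu> \<in> popX S U m" and nu: "\<nu> \<in> popX S U m"
  obtain c s u where i: "i = (c, s, u)" by (cases i)
  have L0: "0 \<le> Lh * norm (\<mu> - \<nu>)" using Lfr(1) by (simp add: Lh_def)
  show ?thesis
  proof (cases "s \<in> S c \<and> u \<in> U c")
    case True
    then have u: "u \<in> U c" and s: "s \<in> S c" by auto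
    define d where "d s' = fr S U F rho \<mu> c s' u - fr S U F rho \<nu> c s' u" for s'
    have d: "\<bar>d s'\<bar> \<le> Lfr * norm (\<mu> - \<nu>)" for s' using Lfr(2)[OF u mu nu] by (simp add: d_def)
    have "hh \<mu> $ i - hh \<nu> $ i = d s - et c u s * (\<Sum>s'\<in>S c. d s')"
      using True by (simp add: hh_def i d_def sum_subtractf algebra_simps)
    also have "\<bar>\<dots>\<bar> \<le> \<bar>d s\<bar> + \<bar>et c u s\<bar> * \<bar>\<Sum>s'\<in>S c. d s'\<bar>"
      using abs_triangle_ineq4[of "d s" "et c u s * (\<Sum>s'\<in>S c. d s')"] by (simp add: abs_mult)
    also have "\<dots> \<le> Lfr * norm (\<mu> - \<nu>) + 1 * (real CARD('s) * (Lfr * norm (\<mu> - \<nu>)))"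
    proof (intro add_mono mult_mono d)
      show "\<bar>et c u s\<bar> \<le> 1" using eta_nonneg[OF u] eta_le1[OF u] by simp
      have "\<bar>\<Sum>s'\<in>S c. d s'\<bar> \<le> (\<Sum>s'\<in>S c. \<bar>d s'\<bar>)" by (rule sum_abs)
      also have "\<dots> \<le> (\<Sum>s'\<in>S c. Lfr * norm (\<mu> - \<nu>))" by (intro sum_mono d)
      also have "\<dots> \<le> (\<Sum>s'\<in>(UNIV::'s set). Lfr * norm (\<mu> - \<nu>))"
        using Lfr(1) by (intro sum_mono2) auto
      finally show "\<bar>\<Sum>s'\<in>S c. d s'\<bar> \<le> real CARD('s) * (Lfr * norm (\<mu> - \<nu>))" by simp
    qed auto
    finally show ?thesis by (simp add: Lh_def algebra_simps)
  next
    case False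
    then have "hh \<mu> $ i = 0" "hh \<nu> $ i = 0" by (auto simp: hh_def i)
    then show ?thesis using L0 by simp
  qed
qed

definition dX :: "('c,'s,'a) pdist \<Rightarrow> real" where "dX x = infdist x MF"
definition dM :: "('c,'s,'a) pstate \<Rightarrow> real" where "dM \<mu> = infdist \<mu> Mset"

lemma hh_bound: "\<mu> \<in> popX S U m \<Longrightarrow> \<bar>hh \<mu> $ i\<bar> \<le> Lh * dM \<mu>"
proof -
  assume mu: "\<mu> \<in> popX S U m"
  obtain y where y: "y \<in> Mset" "infdist \<mu> Mset = dist \<mu> y"
    using infdist_attains_inf[OF Mset_closed Mset_ne] by blast
  have yp: "y \<in> popX S U m" using y(1) Mset_popX by blast
  have "\<bar>hh \<mu> $ i - hh y $ i\<bar> \<le> Lh * norm (\<mu> - y)" by (rule hh_lip[OF mu yp])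
  then show ?thesis using hh_M[OF y(1)] y(2) by (simp add: dM_def dist_norm)
qed

lemma dM_bound: "\<mu> \<in> popX S U m \<Longrightarrow> dM \<mu> \<le> norm (zof \<mu>) + Bc * dX (xof \<mu>)"
proof -
  assume mu: "\<mu> \<in> popX S U m"
  obtain x' where x': "x' \<in> MF" "infdist (xof \<mu>) MF = dist (xof \<mu>) x'"
    using infdist_attains_inf[OF MF_closed MF_ne] by blast
  have "dM \<mu> \<le> dist \<mu> (B x')" unfolding dM_def using x' by (intro infdist_le) auto
  also have "\<mu> - B x' = zof \<mu> + B (xof \<mu> - x')"
    by (simp add: zof_def linear_diff[OF linear_B])
  then have "dist \<mu> (B x') \<le> norm (zof \<mu>) + norm (B (xof \<mu> - x'))" by (simp add: dist_norm norm_triangle_ineq)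
  also have "\<dots> \<le> norm (zof \<mu>) + Bc * dX (xof \<mu>)"
    using Bc(2)[of "xof \<mu> - x'"] x' by (simp add: dX_def dist_norm)
  finally show ?thesis .
qed

definition Le :: real where "Le = real CARD('c \<times> ('s \<Rightarrow> 'a)) * real CARD('s) * Lfr"

lemma e_bound: "\<mu> \<in> popX S U m \<Longrightarrow>
   norm (xof (Efield S U phi R F rho \<mu>) - gred S U phi F rho (xof \<mu>)) \<le> Le * norm (zof \<mu>)"
proof -
  assume mu: "\<mu> \<in> popX S U m"
  define x where "x = xof \<mu>"
  have xD: "x \<in> Dx U m" using xof_Dx[OF mu] by (simp add: x_def)
  have Bx: "B x \<in> popX S U m" by (rule B_popX[OF xD])
  have zz: "\<mu> - B x = zof \<mu>" by (simp add: zof_def x_def)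
  have comp: "\<bar>(xof (Efield S U phi R F rho \<mu>) - gred S U phi F rho x) $ i\<bar> \<le> real CARD('s) * Lfr * norm (zof \<mu>)" for i
  proof -
    obtain c u where i: "i = (c, u)" by (cases i)
    show ?thesis
    proof (cases "u \<in> U c")
      case True
      have eq: "(xof (Efield S U phi R F rho \<mu>) - gred S U phi F rho x) $ i
          = (\<Sum>s\<in>S c. fr S U F rho \<mu> c s u - fr S U F rho (B x) c s u)"
        using True by (simp add: i xof_Efield gred_eq[OF xD True] sum_subtractf)
      have "\<bar>(xof (Efield S U phi R F rho \<mu>) - gred S U phi F rho x) $ i\<bar>
          = \<bar>\<Sum>s\<in>S c. fr S U F rho \<mu> c s u - fr S U F rho (B x) c s u\<bar>" by (simp only: eq)
      also have "\<dots> \<le> (\<Sum>s\<in>S c. \<bar>fr S U F rho \<mu> c s u - fr S U F rho (B x) c s u\<bar>)" by (rule sum_abs)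
      also have "\<dots> \<le> (\<Sum>s\<in>S c. Lfr * norm (zof \<mu>))"
        using Lfr(2)[OF True mu Bx] zz by (intro sum_mono) simp
      also have "\<dots> \<le> (\<Sum>s\<in>(UNIV::'s set). Lfr * norm (zof \<mu>))"
        using Lfr(1) by (intro sum_mono2) auto
      finally show ?thesis by simp
    next
      case False
      then show ?thesis using Lfr(1) by (simp add: i xof_Efield gred_def)
    qed
  qed
  have "norm (xof (Efield S U phi R F rho \<mu>) - gred S U phi F rho x) \<le> (\<Sum>i\<in>UNIV. \<bar>(xof (Efield S U phi R F rho \<mu>) - gred S U phi F rho x) $ i\<bar>)"
    by (rule norm_le_l1_cart)
  also have "\<dots> \<le> (\<Sum>i\<in>(UNIV::('c \<times> ('s \<Rightarrow> 'a)) set). real CARD('s) * Lfr * norm (zof \<mu>))"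
    by (intro sum_mono comp)
  finally show ?thesis by (simp add: Le_def x_def mult.assoc)
qed

end


context setting begin

definition GV :: "('c,'s,'a) pdist set" where
  "GV = (SOME G. open G \<and> Dbar \<subseteq> G \<and>
                 (\<forall>x\<in>G. (V has_derivative blinfun_apply (V' x)) (at x)) \<and> continuous_on G V')"

lemma GV: "open GV" "Dbar \<subseteq> GV" "\<And>x. x \<in> GV \<Longrightarrow> (V has_derivative blinfun_apply (V' x)) (at x)"
  "continuous_on GV V'"
proof -
  have "open GV \<and> Dbar \<subseteq> GV \<and> (\<forall>x\<in>GV. (V has_derivative blinfun_apply (V' x)) (at x)) \<and> continuous_on GV V'"
    unfolding GV_def by (rule someI_ex[OF V_C1])
  then show "open GV" "Dbar \<subseteq> GV" "\<And>x. x \<in> GV \<Longrightarrow> (V has_derivative blinfun_apply (V' x)) (at x)"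
    "continuous_on GV V'" by auto
qed

lemma V_deriv: "x \<in> Dbar \<Longrightarrow> (V has_derivative blinfun_apply (V' x)) (at x)"
  using GV by blast

lemma V_cont: "continuous_on Dbar V"
  by (rule has_derivative_continuous_on) (use V_deriv in \<open>blast intro: has_derivative_at_withinI\<close>)

definition good :: "real \<Rightarrow> bool" where
  "good r \<longleftrightarrow> r > 0 \<and> (\<forall>y\<in>Dx U m. dX y \<le> r \<longrightarrow> y \<in> Dbar)"

lemma dX_nonneg: "dX x \<ge> 0" by (simp add: dX_def infdist_nonneg)

lemma V_quad: "good r \<Longrightarrow> x \<in> Dx U m \<Longrightarrow> dX x \<le> r \<Longrightarrow> V x \<le> \<gamma>2 * (dX x)\<^sup>2"
proof -
  assume g: "good r" and x: "x \<in> Dx U m" and dx: "dX x \<le> r"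
  obtain x' where x': "x' \<in> MF" "infdist x MF = dist x x'"
    using infdist_attains_inf[OF MF_closed MF_ne] by blast
  have x'D: "x' \<in> Dx U m" using x' MF_Dx by auto
  let ?T = "closed_segment x' x"
  have TD: "?T \<subseteq> Dx U m" by (rule closed_segment_subset[OF x'D x Dx_convex])
  have dT: "dX y \<le> dX x" if "y \<in> ?T" for y
  proof -
    have "dX y \<le> dist y x'" unfolding dX_def using x' by (intro infdist_le) auto
    also have "\<dots> \<le> dist x' x" using dist_in_closed_segment[OF that] by auto
    also have "\<dots> = dX x" using x' by (simp add: dX_def dist_commute)
    finally show ?thesis .
  qed
  have TB: "y \<in> Dbar" if "y \<in> ?T" for y using g TD that dT[OF that] dx by (auto simp: good_def)
  have "norm (V x - V x') \<le> (\<gamma>2 * dX x) * norm (x - x')"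
  proof (rule differentiable_bound[OF convex_closed_segment])
    fix y assume y: "y \<in> ?T"
    show "(V has_derivative blinfun_apply (V' y)) (at y within ?T)"
      using V_deriv[OF TB[OF y]] by (rule has_derivative_at_withinI)
    have "norm (V' y) \<le> \<gamma>2 * infdist y MF" by (rule V_grad[OF TB[OF y]])
    also have "\<dots> \<le> \<gamma>2 * dX x" using dT[OF y] \<gamma>2_pos by (simp add: dX_def)
    finally show "onorm (blinfun_apply (V' y)) \<le> \<gamma>2 * dX x" by (simp add: norm_blinfun.rep_eq[symmetric])
  qed auto
  moreover have "V x' = 0" using V_zero x' by simp
  moreover have "norm (x - x') = dX x" using x' by (simp add: dX_def dist_norm)
  ultimately show ?thesis by (simp add: power2_eq_square)
qed

lemma sq_nonneg: "sq z \<ge> 0" by (simp add: sq_def sum_nonneg)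

lemma Phi_lower: "sq z \<le> Phi z"
proof -
  have "(\<Sum>s\<in>S c. (z $ (c, s, u))\<^sup>2) \<le> (\<Sum>k<Nn c u. \<Sum>t\<in>S c. (AP c u k (zc z c u) t)\<^sup>2)" if u: "u \<in> U c" for c u
  proof -
    have N1: "0 \<in> {..<Nn c u}" using Nn[OF u] by auto
    have "(\<Sum>s\<in>S c. (z $ (c, s, u))\<^sup>2) = (\<Sum>t\<in>S c. (AP c u 0 (zc z c u) t)\<^sup>2)"
      by (simp add: mchain.ap0[OF mc[OF u]] zc_def)
    also have "\<dots> \<le> (\<Sum>k<Nn c u. \<Sum>t\<in>S c. (AP c u k (zc z c u) t)\<^sup>2)"
      by (rule member_le_sum[OF N1]) (auto intro: sum_nonneg)
    finally show ?thesis .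
  qed
  then show ?thesis unfolding sq_def Phi_ap by (intro sum_mono) auto
qed

lemma Phi_upper: "Phi z \<le> NP * sq z"
proof -
  have Zle: "(\<Sum>s\<in>S c. (z $ (c, s, u))\<^sup>2) \<le> sq z" if u: "u \<in> U c" for c u
  proof -
    have "(\<Sum>s\<in>S c. (z $ (c, s, u))\<^sup>2) \<le> (\<Sum>u\<in>U c. \<Sum>s\<in>S c. (z $ (c, s, u))\<^sup>2)"
      using u by (intro member_le_sum) (auto intro: sum_nonneg)
    also have "\<dots> \<le> sq z" unfolding sq_def
      by (intro member_le_sum[of c UNIV "\<lambda>c. \<Sum>u\<in>U c. \<Sum>s\<in>S c. (z $ (c, s, u))\<^sup>2"]) (auto intro!: sum_nonneg)
    finally show ?thesis .
  qed
  have "(\<Sum>k<Nn c u. \<Sum>t\<in>S c. (AP c u k (zc z c u) t)\<^sup>2) \<le> real (Nn c u) * (real (card (S c)))\<^sup>2 * sq z"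
    if u: "u \<in> U c" for c u
  proof -
    have "(\<Sum>k<Nn c u. \<Sum>t\<in>S c. (AP c u k (zc z c u) t)\<^sup>2) \<le> (\<Sum>k<Nn c u. (real (card (S c)))\<^sup>2 * sq z)"
    proof (intro sum_mono)
      fix k
      have "(\<Sum>t\<in>S c. (AP c u k (zc z c u) t)\<^sup>2) \<le> (real (card (S c)))\<^sup>2 * (\<Sum>s\<in>S c. (zc z c u s)\<^sup>2)"
        by (rule mchain.ap_l2_bound[OF mc[OF u]])
      also have "\<dots> \<le> (real (card (S c)))\<^sup>2 * sq z" using Zle[OF u] by (intro mult_left_mono) (auto simp: zc_def)
      finally show "(\<Sum>t\<in>S c. (AP c u k (zc z c u) t)\<^sup>2) \<le> (real (card (S c)))\<^sup>2 * sq z" .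
    qed
    then show ?thesis by simp
  qed
  then have "Phi z \<le> (\<Sum>c\<in>UNIV. \<Sum>u\<in>U c. real (Nn c u) * (real (card (S c)))\<^sup>2 * sq z)"
    unfolding Phi_ap by (intro sum_mono) auto
  also have "\<dots> = NP * sq z" by (simp add: NP_def sum_distrib_right)
  finally show ?thesis .
qed

lemma Phi_nonneg: "Phi z \<ge> 0" using Phi_lower sq_nonneg order_trans by blast

lemma NP_pos: "NP > 0"
proof -
  obtain c :: 'c where True by simp
  obtain u where u: "u \<in> U c" using U_ne by blast
  have cS: "card (S c) > 0" using S_ne[of c] by (simp add: card_gt_0_iff)
  have "Nn c u \<ge> 1" using Nn[OF u] by simp
  then have "0 < real (Nn c u) * (real (card (S c)))\<^sup>2" using cS by (intro mult_pos_pos) auto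
  also have "\<dots> \<le> (\<Sum>u\<in>U c. real (Nn c u) * (real (card (S c)))\<^sup>2)"
    using u by (intro member_le_sum) auto
  also have "\<dots> \<le> NP" unfolding NP_def
    by (intro member_le_sum[of c UNIV "\<lambda>c. \<Sum>u\<in>U c. real (Nn c u) * (real (card (S c)))\<^sup>2"]) (auto intro!: sum_nonneg)
  finally show ?thesis .
qed

definition W :: "('c,'s,'a) pstate \<Rightarrow> real" where
  "W \<mu> = V (xof \<mu>) + Phi (zof \<mu>)"

abbreviation "Rr \<epsilon> \<equiv> (\<lambda>c. \<kappa> c / \<epsilon>)"

definition Wd :: "real \<Rightarrow> ('c,'s,'a) pstate \<Rightarrow> real" where
  "Wd \<epsilon> \<mu> = V' (xof \<mu>) (xof (Efield S U phi (Rr \<epsilon>) F rho \<mu>)) + PhiD (zof \<mu>) (zof (Efield S U phi (Rr \<epsilon>) F rho \<mu>))"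

definition C3 :: real where "C3 = real (CARD('c) * CARD('s \<Rightarrow> 'a) * CARD('s))"
definition \<eta>0 :: real where "\<eta>0 = 8 * NP * C3 * Lh\<^sup>2 * Bc\<^sup>2 / \<gamma>1 + 1"
definition c1 :: real where "c1 = \<gamma>2\<^sup>2 * Le\<^sup>2 / (2 * \<gamma>1)"
definition c2 :: real where "c2 = 2 * NP * C3 * Lh\<^sup>2 / \<eta>0"
definition K0 :: real where "K0 = c1 + NP * \<eta>0 + c2"
definition \<epsilon>s :: real where "\<epsilon>s = 3 / (2 * (K0 + 1))"

lemma consts_pos: "C3 \<ge> 0" "\<eta>0 \<ge> 1" "c1 \<ge> 0" "c2 \<ge> 0" "K0 \<ge> 0" "\<epsilon>s > 0"
proof -
  show C: "C3 \<ge> 0" by (simp add: C3_def)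
  show e: "\<eta>0 \<ge> 1" using NP_pos C \<gamma>1_pos by (simp add: \<eta>0_def)
  show a: "c1 \<ge> 0" using \<gamma>1_pos by (simp add: c1_def)
  show b: "c2 \<ge> 0" using NP_pos C e by (simp add: c2_def)
  show "K0 \<ge> 0" using a b e NP_pos by (simp add: K0_def)
  then show "\<epsilon>s > 0" by (simp add: \<epsilon>s_def)
qed

lemma Wd_bound:
  assumes ep: "0 < \<epsilon>" "\<epsilon> \<le> \<epsilon>s" and mu: "\<mu> \<in> popX S U m" and xb: "xof \<mu> \<in> Dbar"
  shows "Wd \<epsilon> \<mu> \<le> - (\<gamma>1 / 4) * (dX (xof \<mu>))\<^sup>2 - (norm (zof \<mu>))\<^sup>2"
proof -
  define x where "x = xof \<mu>"
  define d where "d = dX x"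
  define n where "n = norm (zof \<mu>)"
  define E where "E = Efield S U phi (Rr \<epsilon>) F rho \<mu>"
  have d0: "d \<ge> 0" by (simp add: d_def dX_nonneg)
  have n0: "n \<ge> 0" by (simp add: n_def)
  have xb': "x \<in> Dbar" using xb by (simp add: x_def)
  have Le0: "Le \<ge> 0" using Lfr(1) by (simp add: Le_def)
  have "V' x (xof E) = V' x (gred S U phi F rho x) + V' x (xof E - gred S U phi F rho x)"
    by (simp add: blinfun.diff_right)
  also have "V' x (gred S U phi F rho x) \<le> - \<gamma>1 * d\<^sup>2" using V_decr[OF xb'] by (simp add: d_def dX_def)
  also have "V' x (xof E - gred S U phi F rho x) \<le> \<gamma>2 * d * (Le * n)"
  proof -
    have "V' x (xof E - gred S U phi F rho x) \<le> norm (V' x) * norm (xof E - gred S U phi F rho x)"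
      using norm_blinfun[of "V' x" "xof E - gred S U phi F rho x"] by simp
    also have "\<dots> \<le> (\<gamma>2 * d) * (Le * n)"
    proof (rule mult_mono)
      show "norm (V' x) \<le> \<gamma>2 * d" using V_grad[OF xb'] by (simp add: d_def dX_def)
      show "norm (xof E - gred S U phi F rho x) \<le> Le * n"
        using e_bound[OF mu, of "Rr \<epsilon>"] by (simp add: E_def x_def n_def)
    qed (use \<gamma>2_pos d0 in auto)
    finally show ?thesis by simp
  qed
  also have "\<gamma>2 * d * (Le * n) \<le> \<gamma>1 / 2 * d\<^sup>2 + c1 * n\<^sup>2"
  proof -
    have "2 * d * (\<gamma>2 * Le * n / 2) \<le> (\<gamma>1 / 2) * d\<^sup>2 + (\<gamma>2 * Le * n / 2)\<^sup>2 / (\<gamma>1 / 2)"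
      by (rule two_ab_le) (use \<gamma>1_pos in simp)
    also have "(\<gamma>2 * Le * n / 2)\<^sup>2 / (\<gamma>1 / 2) = c1 * n\<^sup>2"
      using \<gamma>1_pos by (simp add: c1_def power2_eq_square field_simps)
    finally show ?thesis by (simp add: algebra_simps)
  qed
  finally have Vp: "V' x (xof E) \<le> - \<gamma>1 * d\<^sup>2 + (\<gamma>1 / 2 * d\<^sup>2 + c1 * n\<^sup>2)" by simp
  have R: "Rr \<epsilon> c \<ge> 1 / \<epsilon>" for c using \<kappa>_ge[of c] ep(1) by (simp add: divide_right_mono)
  have P1: "PhiD (zof \<mu>) (zof E) \<le> - (3/2) * (1 / \<epsilon>) * sq (zof \<mu>) + NP * (\<eta>0 * sq (zof \<mu>) + sq (hh \<mu>) / \<eta>0)"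
    unfolding E_def by (rule PhiD_bound[OF R ep(1)]) (use consts_pos in simp)
  have sqz: "sq (zof \<mu>) = n\<^sup>2" using norm_zof[OF mu] by (simp add: n_def)
  have dMb: "dM \<mu> \<le> n + Bc * d" using dM_bound[OF mu] by (simp add: n_def d_def x_def)
  have dM0: "dM \<mu> \<ge> 0" by (simp add: dM_def infdist_nonneg)
  have H1: "sq (hh \<mu>) \<le> C3 * (Lh * dM \<mu>)\<^sup>2"
    unfolding C3_def by (rule sq_le) (rule hh_bound[OF mu])
  have "(dM \<mu>)\<^sup>2 \<le> (n + Bc * d)\<^sup>2" using dMb dM0 by (intro power_mono) auto
  also have "\<dots> \<le> 2 * n\<^sup>2 + 2 * Bc\<^sup>2 * d\<^sup>2"
  proof -
    have a: "2 * n * (Bc * d) \<le> n\<^sup>2 + (Bc * d)\<^sup>2" using two_ab_le[of 1 n "Bc * d"] by simp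
    have b: "(n + Bc * d)\<^sup>2 = n\<^sup>2 + (Bc * d)\<^sup>2 + 2 * n * (Bc * d)" by (rule power2_sum)
    have c: "(Bc * d)\<^sup>2 = Bc\<^sup>2 * d\<^sup>2" by (rule power_mult_distrib)
    show ?thesis using a b c by linarith
  qed
  finally have dM2: "(dM \<mu>)\<^sup>2 \<le> 2 * n\<^sup>2 + 2 * Bc\<^sup>2 * d\<^sup>2" .
  have H2: "sq (hh \<mu>) \<le> C3 * Lh\<^sup>2 * (2 * n\<^sup>2 + 2 * Bc\<^sup>2 * d\<^sup>2)"
  proof -
    have a: "(Lh * dM \<mu>)\<^sup>2 = Lh\<^sup>2 * (dM \<mu>)\<^sup>2" by (rule power_mult_distrib)
    have b: "Lh\<^sup>2 * (dM \<mu>)\<^sup>2 \<le> Lh\<^sup>2 * (2 * n\<^sup>2 + 2 * Bc\<^sup>2 * d\<^sup>2)" by (rule mult_left_mono[OF dM2]) simp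
    have c: "C3 * (Lh\<^sup>2 * (dM \<mu>)\<^sup>2) \<le> C3 * (Lh\<^sup>2 * (2 * n\<^sup>2 + 2 * Bc\<^sup>2 * d\<^sup>2))"
      by (rule mult_left_mono[OF b]) (use consts_pos in simp)
    have "sq (hh \<mu>) \<le> C3 * (Lh\<^sup>2 * (dM \<mu>)\<^sup>2)" using H1 a by simp
    also note c
    finally show ?thesis by (simp only: mult.assoc)
  qed
  have H3: "NP * (sq (hh \<mu>) / \<eta>0) \<le> c2 * n\<^sup>2 + \<gamma>1 / 4 * d\<^sup>2"
  proof -
    have e0: "\<eta>0 > 0" using consts_pos by simp
    have "NP * (sq (hh \<mu>) / \<eta>0) \<le> NP * (C3 * Lh\<^sup>2 * (2 * n\<^sup>2 + 2 * Bc\<^sup>2 * d\<^sup>2) / \<eta>0)"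
      using H2 NP_pos e0 by (intro mult_left_mono divide_right_mono) auto
    also have "\<dots> = c2 * n\<^sup>2 + (2 * NP * C3 * Lh\<^sup>2 * Bc\<^sup>2 / \<eta>0) * d\<^sup>2"
      by (simp add: c2_def add_divide_distrib algebra_simps)
    also have "2 * NP * C3 * Lh\<^sup>2 * Bc\<^sup>2 / \<eta>0 \<le> \<gamma>1 / 4"
    proof -
      have "2 * NP * C3 * Lh\<^sup>2 * Bc\<^sup>2 \<le> \<gamma>1 / 4 * \<eta>0"
        using \<gamma>1_pos by (simp add: \<eta>0_def field_simps)
      then show ?thesis using e0 by (simp add: divide_le_eq)
    qed
    then have "c2 * n\<^sup>2 + (2 * NP * C3 * Lh\<^sup>2 * Bc\<^sup>2 / \<eta>0) * d\<^sup>2 \<le> c2 * n\<^sup>2 + \<gamma>1 / 4 * d\<^sup>2"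
      by (intro add_left_mono mult_right_mono) auto
    finally show ?thesis .
  qed
  have Pp: "PhiD (zof \<mu>) (zof E) \<le> - (3/2) * (1 / \<epsilon>) * n\<^sup>2 + NP * \<eta>0 * n\<^sup>2 + (c2 * n\<^sup>2 + \<gamma>1 / 4 * d\<^sup>2)"
    using P1 H3 by (simp add: sqz distrib_left mult.assoc)
  have Eps: "K0 + 1 \<le> (3/2) * (1 / \<epsilon>)"
  proof -
    have "K0 + 1 > 0" using consts_pos by simp
    then have "\<epsilon> * (K0 + 1) \<le> \<epsilon>s * (K0 + 1)" using ep by (intro mult_right_mono) auto
    also have "\<epsilon>s * (K0 + 1) = 3/2" using \<open>K0 + 1 > 0\<close> by (simp add: \<epsilon>s_def field_simps)
    finally show ?thesis using ep(1) by (simp add: field_simps)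
  qed
  have "Wd \<epsilon> \<mu> = V' x (xof E) + PhiD (zof \<mu>) (zof E)" by (simp add: Wd_def x_def E_def)
  also have "\<dots> \<le> (- \<gamma>1 * d\<^sup>2 + (\<gamma>1 / 2 * d\<^sup>2 + c1 * n\<^sup>2)) + (- (3/2) * (1 / \<epsilon>) * n\<^sup>2 + NP * \<eta>0 * n\<^sup>2 + (c2 * n\<^sup>2 + \<gamma>1 / 4 * d\<^sup>2))"
    by (rule add_mono[OF Vp Pp])
  also have "\<dots> = - (\<gamma>1 / 4) * d\<^sup>2 + (K0 - (3/2) * (1 / \<epsilon>)) * n\<^sup>2"
    by (simp add: K0_def algebra_simps)
  also have "\<dots> \<le> - (\<gamma>1 / 4) * d\<^sup>2 + (-1) * n\<^sup>2"
    using Eps by (intro add_left_mono mult_right_mono) auto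
  finally show ?thesis by (simp add: d_def n_def x_def)
qed

end


lemma real_vd: "((f::real \<Rightarrow> real) has_vector_derivative d) F \<Longrightarrow> (f has_real_derivative d) F"
  by (simp add: has_field_derivative_def has_vector_derivative_def mult_commute_abs)

lemma sq_deriv: "(g has_real_derivative g') (at t within S) \<Longrightarrow>
   ((\<lambda>\<tau>. (g \<tau>)\<^sup>2) has_real_derivative 2 * g t * g') (at t within S)"
  by (rule DERIV_cong[OF DERIV_power[of g g' t S 2]]) (simp_all add: numeral_2_eq_2)

lemma prod_deriv: "(\<And>s. s \<in> A \<Longrightarrow> ((\<lambda>\<tau>. f \<tau> s) has_real_derivative f' s) (at t within T)) \<Longrightarrow>
   ((\<lambda>\<tau>. \<Sum>s\<in>A. f \<tau> s * K s) has_real_derivative (\<Sum>s\<in>A. f' s * K s)) (at t within T)"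
  by (intro DERIV_sum DERIV_cmult_right) blast

lemma mono_from_deriv:
  fixes f f' :: "real \<Rightarrow> real"
  assumes t: "0 \<le> t"
    and d: "\<And>\<tau>. 0 \<le> \<tau> \<Longrightarrow> \<tau> \<le> t \<Longrightarrow> (f has_real_derivative f' \<tau>) (at \<tau> within {0..})"
    and n: "\<And>\<tau>. 0 \<le> \<tau> \<Longrightarrow> \<tau> \<le> t \<Longrightarrow> f' \<tau> \<le> 0"
  shows "f t \<le> f 0"
proof (cases "t = 0")
  case True then show ?thesis by simp
next
  case False
  then have tp: "0 < t" using t by simp
  have cont: "continuous_on {0..t} f"
    unfolding continuous_on_eq_continuous_within
  proof
    fix x assume x: "x \<in> {0..t}"
    have "(f has_real_derivative f' x) (at x within {0..t})"
      by (rule DERIV_subset[OF d]) (use x in auto)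
    then show "continuous (at x within {0..t}) f" by (rule DERIV_continuous)
  qed
  have at: "(f has_real_derivative f' x) (at x)" if "0 < x" "x < t" for x
  proof -
    have "x \<in> interior {0::real..}" using that by simp
    then have "at x within {0..} = at x" by (rule at_within_interior)
    then show ?thesis using d[of x] that by simp
  qed
  obtain l z where z: "0 < z" "z < t" "(f has_real_derivative l) (at z)" "f t - f 0 = (t - 0) * l"
    using MVT[OF tp cont] at by (metis real_differentiable_def)
  have "l = f' z" using DERIV_unique[OF z(3) at[OF z(1,2)]] .
  then have "l \<le> 0" using n[of z] z by simp
  then have "(t - 0) * l \<le> 0" using tp by (simp add: mult_nonneg_nonpos)
  then show ?thesis using z(4) by simp
qed

context setting begin

lemma bl_xof: "bounded_linear xof" using linear_xof by (simp add: linear_conv_bounded_linear)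
lemma bl_zof: "bounded_linear zof" using linear_zof by (simp add: linear_conv_bounded_linear)

lemma W_deriv:
  assumes tr: "(traj has_vector_derivative Efield S U phi (Rr \<epsilon>) F rho (traj t)) (at t within {0..})"
    and xb: "xof (traj t) \<in> Dbar"
  shows "((\<lambda>\<tau>. W (traj \<tau>)) has_real_derivative Wd \<epsilon> (traj t)) (at t within {0..})"
proof -
  define Et where "Et = Efield S U phi (Rr \<epsilon>) F rho (traj t)"
  have xd: "((\<lambda>\<tau>. xof (traj \<tau>)) has_vector_derivative xof Et) (at t within {0..})"
    using bounded_linear.has_vector_derivative[OF bl_xof tr] by (simp add: Et_def)
  have zd: "((\<lambda>\<tau>. zof (traj \<tau>)) has_vector_derivative zof Et) (at t within {0..})"
    using bounded_linear.has_vector_derivative[OF bl_zof tr] by (simp add: Et_def)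
  have Vd: "((\<lambda>\<tau>. V (xof (traj \<tau>))) has_real_derivative V' (xof (traj t)) (xof Et)) (at t within {0..})"
  proof -
    have g: "(V has_derivative blinfun_apply (V' (xof (traj t)))) (at (xof (traj t)) within (\<lambda>\<tau>. xof (traj \<tau>)) ` {0..})"
      by (rule has_derivative_at_withinI[OF V_deriv[OF xb]])
    have "((V \<circ> (\<lambda>\<tau>. xof (traj \<tau>))) has_derivative (blinfun_apply (V' (xof (traj t))) \<circ> (\<lambda>h. h *\<^sub>R xof Et))) (at t within {0..})"
      by (rule diff_chain_within[OF xd[unfolded has_vector_derivative_def] g])
    moreover have "(blinfun_apply (V' (xof (traj t))) \<circ> (\<lambda>h. h *\<^sub>R xof Et)) = (\<lambda>h. V' (xof (traj t)) (xof Et) * h)"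
      by (simp add: fun_eq_iff blinfun.scaleR_right)
    ultimately show ?thesis by (simp add: has_field_derivative_def o_def)
  qed
  have cd: "((\<lambda>\<tau>. zof (traj \<tau>) $ i) has_real_derivative zof Et $ i) (at t within {0..})" for i
    by (rule real_vd) (rule bounded_linear.has_vector_derivative[OF bounded_linear_vec_nth zd])
  have Pd: "((\<lambda>\<tau>. Phi (zof (traj \<tau>))) has_real_derivative PhiD (zof (traj t)) (zof Et)) (at t within {0..})"
    unfolding Phi_def PhiD_def
    by (intro DERIV_sum sq_deriv prod_deriv cd)
  have "((\<lambda>\<tau>. V (xof (traj \<tau>)) + Phi (zof (traj \<tau>))) has_real_derivative
      V' (xof (traj t)) (xof Et) + PhiD (zof (traj t)) (zof Et)) (at t within {0..})"
    by (rule DERIV_add[OF Vd Pd])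
  then show ?thesis by (simp add: W_def Wd_def Et_def)
qed


definition cW :: real where "cW = min (\<gamma>1 / (4 * \<gamma>2)) (1 / NP)"

lemma cW_pos: "cW > 0" using \<gamma>1_pos \<gamma>2_pos NP_pos by (simp add: cW_def)

lemma xb_good: "good r \<Longrightarrow> \<mu> \<in> popX S U m \<Longrightarrow> dX (xof \<mu>) \<le> r \<Longrightarrow> xof \<mu> \<in> Dbar"
  using xof_Dx by (auto simp: good_def)

lemma W_upper: "good r \<Longrightarrow> \<mu> \<in> popX S U m \<Longrightarrow> dX (xof \<mu>) \<le> r \<Longrightarrow>
   W \<mu> \<le> \<gamma>2 * (dX (xof \<mu>))\<^sup>2 + NP * (norm (zof \<mu>))\<^sup>2"
proof -
  assume g: "good r" and mu: "\<mu> \<in> popX S U m" and d: "dX (xof \<mu>) \<le> r"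
  have "V (xof \<mu>) \<le> \<gamma>2 * (dX (xof \<mu>))\<^sup>2" by (rule V_quad[OF g xof_Dx[OF mu] d])
  moreover have "Phi (zof \<mu>) \<le> NP * (norm (zof \<mu>))\<^sup>2" using Phi_upper norm_zof[OF mu] by simp
  ultimately show ?thesis by (simp add: W_def)
qed

lemma W_lower: "\<mu> \<in> popX S U m \<Longrightarrow> xof \<mu> \<in> Dbar \<Longrightarrow>
   (norm (zof \<mu>))\<^sup>2 \<le> W \<mu> \<and> V (xof \<mu>) \<le> W \<mu> \<and> 0 \<le> W \<mu>"
  using Phi_lower[of "zof \<mu>"] norm_zof[of \<mu>] V_nonneg[of "xof \<mu>"] Phi_nonneg[of "zof \<mu>"]
  by (simp add: W_def)

lemma Wd_cW:
  assumes ep: "0 < \<epsilon>" "\<epsilon> \<le> \<epsilon>s" and g: "good r" and mu: "\<mu> \<in> popX S U m" and d: "dX (xof \<mu>) \<le> r"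
  shows "Wd \<epsilon> \<mu> \<le> - cW * W \<mu>"
proof -
  define D where "D = (dX (xof \<mu>))\<^sup>2"
  define N where "N = (norm (zof \<mu>))\<^sup>2"
  have D0: "D \<ge> 0" "N \<ge> 0" by (auto simp: D_def N_def)
  have c0: "cW \<ge> 0" using cW_pos by simp
  have c1: "cW * \<gamma>2 \<le> \<gamma>1 / 4"
  proof -
    have "cW \<le> \<gamma>1 / (4 * \<gamma>2)" by (simp add: cW_def)
    then have "cW * \<gamma>2 \<le> \<gamma>1 / (4 * \<gamma>2) * \<gamma>2" using \<gamma>2_pos by (intro mult_right_mono) auto
    then show ?thesis using \<gamma>2_pos by simp
  qed
  have c2: "cW * NP \<le> 1"
  proof -
    have "cW \<le> 1 / NP" by (simp add: cW_def)
    then have "cW * NP \<le> 1 / NP * NP" using NP_pos by (intro mult_right_mono) auto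
    then show ?thesis using NP_pos by simp
  qed
  have "cW * W \<mu> \<le> cW * (\<gamma>2 * D + NP * N)"
    using W_upper[OF g mu d] c0 by (intro mult_left_mono) (auto simp: D_def N_def)
  also have "\<dots> = (cW * \<gamma>2) * D + (cW * NP) * N" by (simp add: algebra_simps)
  also have "\<dots> \<le> (\<gamma>1 / 4) * D + 1 * N"
    using c1 c2 D0 by (intro add_mono mult_right_mono) auto
  finally have "cW * W \<mu> \<le> \<gamma>1 / 4 * D + N" by simp
  moreover have "Wd \<epsilon> \<mu> \<le> - (\<gamma>1 / 4) * D - N"
    using Wd_bound[OF ep mu xb_good[OF g mu d]] by (simp add: D_def N_def)
  ultimately show ?thesis by simp
qed

lemma sol_popX: "E_solution S U m phi R F rho \<mu>0 traj \<Longrightarrow> t \<ge> 0 \<Longrightarrow> traj t \<in> popX S U m"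
  by (simp add: E_solution_def)

lemma sol_deriv: "E_solution S U m phi R F rho \<mu>0 traj \<Longrightarrow> t \<ge> 0 \<Longrightarrow>
    (traj has_vector_derivative Efield S U phi R F rho (traj t)) (at t within {0..})"
  by (simp add: E_solution_def)

lemma decay:
  assumes ep: "0 < \<epsilon>" "\<epsilon> \<le> \<epsilon>s" and g: "good r"
    and sol: "E_solution S U m phi (Rr \<epsilon>) F rho \<mu>0 traj" and T: "T \<ge> 0"
    and reg: "\<And>\<tau>. 0 \<le> \<tau> \<Longrightarrow> \<tau> \<le> T \<Longrightarrow> dX (xof (traj \<tau>)) \<le> r"
  shows "W (traj T) \<le> W \<mu>0 * exp (- cW * T)"
proof -
  define f where "f \<tau> = W (traj \<tau>) * exp (cW * \<tau>)" for \<tau>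
  define f' where "f' \<tau> = Wd \<epsilon> (traj \<tau>) * exp (cW * \<tau>) + W (traj \<tau>) * (exp (cW * \<tau>) * cW)" for \<tau>
  have "f T \<le> f 0"
  proof (rule mono_from_deriv[OF T])
    fix \<tau> assume t: "0 \<le> \<tau>" "\<tau> \<le> T"
    have mu: "traj \<tau> \<in> popX S U m" using sol_popX[OF sol t(1)] .
    have xb: "xof (traj \<tau>) \<in> Dbar" using xb_good[OF g mu reg[OF t]] .
    have dW: "((\<lambda>\<tau>. W (traj \<tau>)) has_real_derivative Wd \<epsilon> (traj \<tau>)) (at \<tau> within {0..})"
      by (rule W_deriv[OF sol_deriv[OF sol t(1)] xb])
    have dE: "((\<lambda>\<tau>. exp (cW * \<tau>)) has_real_derivative exp (cW * \<tau>) * cW) (at \<tau> within {0..})"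
      by (auto intro!: derivative_eq_intros)
    show "(f has_real_derivative f' \<tau>) (at \<tau> within {0..})"
      unfolding f_def f'_def by (rule DERIV_cong[OF DERIV_mult[OF dW dE]]) (simp add: algebra_simps)
    have "Wd \<epsilon> (traj \<tau>) + cW * W (traj \<tau>) \<le> 0" using Wd_cW[OF ep g mu reg[OF t]] by simp
    then have "(Wd \<epsilon> (traj \<tau>) + cW * W (traj \<tau>)) * exp (cW * \<tau>) \<le> 0"
      by (simp add: mult_nonpos_nonneg)
    then show "f' \<tau> \<le> 0" by (simp add: f'_def algebra_simps)
  qed
  moreover have "traj 0 = \<mu>0" using sol by (simp add: E_solution_def)
  ultimately have le: "W (traj T) * exp (cW * T) \<le> W \<mu>0" by (simp add: f_def)
  have e1: "exp (cW * T) * exp (- cW * T) = 1" by (simp add: exp_add[symmetric])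
  have "W (traj T) = (W (traj T) * exp (cW * T)) * exp (- cW * T)" by (simp only: mult.assoc e1 mult_1_right)
  also have "\<dots> \<le> W \<mu>0 * exp (- cW * T)" using le by (intro mult_right_mono) auto
  finally show ?thesis .
qed

lemma beta:
  assumes g: "good r" and e: "\<eta> > 0"
  shows "\<exists>\<beta>>0. \<forall>x\<in>Dx U m. \<eta> \<le> dX x \<and> dX x \<le> r \<longrightarrow> \<beta> \<le> V x"
proof -
  define K where "K = {x \<in> Dx U m. \<eta> \<le> dX x \<and> dX x \<le> r}"
  have cdX: "continuous_on UNIV dX" unfolding dX_def by (intro continuous_on_infdist continuous_on_id)
  have "closed K"
  proof -
    have "K = {x \<in> Dx U m. (\<lambda>_. \<eta>) x \<le> dX x} \<inter> {x \<in> Dx U m. dX x \<le> (\<lambda>_. r) x}"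
      by (auto simp: K_def)
    moreover have "closed {x \<in> Dx U m. (\<lambda>_. \<eta>) x \<le> dX x}"
      by (rule continuous_on_closed_Collect_le[OF continuous_on_const continuous_on_subset[OF cdX] Dx_closed]) auto
    moreover have "closed {x \<in> Dx U m. dX x \<le> (\<lambda>_. r) x}"
      by (rule continuous_on_closed_Collect_le[OF continuous_on_subset[OF cdX] continuous_on_const Dx_closed]) auto
    ultimately show ?thesis by auto
  qed
  moreover have "bounded K" using Dx_bounded by (rule bounded_subset) (auto simp: K_def)
  ultimately have cK: "compact K" by (simp add: compact_eq_bounded_closed)
  have KB: "K \<subseteq> Dbar" using g by (auto simp: K_def good_def)
  show ?thesis
  proof (cases "K = {}")
    case True then show ?thesis by (intro exI[of _ 1]) (auto simp: K_def)
  next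
    case False
    obtain x0 where x0: "x0 \<in> K" "\<forall>y\<in>K. V x0 \<le> V y"
      using continuous_attains_inf[OF cK False continuous_on_subset[OF V_cont KB]] by blast
    have "x0 \<notin> MF"
    proof
      assume "x0 \<in> MF"
      then have "dX x0 = 0" by (simp add: dX_def)
      then show False using x0 e by (auto simp: K_def)
    qed
    then have "V x0 > 0" using V_pos x0 KB by auto
    then show ?thesis using x0 by (intro exI[of _ "V x0"]) (auto simp: K_def)
  qed
qed

lemma good_exists: "\<exists>r. good r"
proof -
  obtain Wn where Wn: "open Wn" "MF \<subseteq> Wn" "Wn \<inter> Dx U m \<subseteq> Dbar" using Dbar_nbhd by blast
  have "MF \<inter> (- Wn) = {}" using Wn by auto
  then obtain \<delta> where \<delta>: "\<delta> > 0" "\<forall>x\<in>MF. \<forall>y\<in>- Wn. \<delta> \<le> dist x y"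
    using separate_compact_closed[OF MF_compact] Wn(1) by (metis closed_Compl)
  have "good (\<delta> / 2)" unfolding good_def
  proof (intro conjI ballI impI)
    show "0 < \<delta> / 2" using \<delta> by simp
    fix y assume y: "y \<in> Dx U m" and dy: "dX y \<le> \<delta> / 2"
    obtain x' where x': "x' \<in> MF" "infdist y MF = dist y x'"
      using infdist_attains_inf[OF MF_closed MF_ne] by blast
    have "y \<in> Wn"
    proof (rule ccontr)
      assume "y \<notin> Wn"
      then have "\<delta> \<le> dist x' y" using \<delta> x' by auto
      then show False using dy x' \<delta> by (simp add: dX_def dist_commute)
    qed
    then show "y \<in> Dbar" using Wn y by auto
  qed
  then show ?thesis by blast
qed

lemma good_all: "Dbar = Dx U m \<Longrightarrow> \<exists>r. good r \<and> (\<forall>x\<in>Dx U m. dX x \<le> r)"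
proof -
  assume D: "Dbar = Dx U m"
  obtain b where b: "\<forall>x\<in>Dx U m. norm x \<le> b" using Dx_bounded by (auto simp: bounded_iff)
  obtain x0 where x0: "x0 \<in> MF" using MF_ne by auto
  have x0D: "x0 \<in> Dx U m" using x0 MF_Dx by auto
  have b0: "b \<ge> 0" using b x0D norm_ge_zero order_trans by blast
  have "dX x \<le> 2 * b + 1" if x: "x \<in> Dx U m" for x
  proof -
    have "dX x \<le> dist x x0" unfolding dX_def using x0 by (rule infdist_le)
    also have "\<dots> \<le> norm x + norm x0" by (simp add: dist_norm norm_triangle_ineq4)
    also have "\<dots> \<le> 2 * b + 1" using b x x0D by (smt (verit))
    finally show ?thesis .
  qed
  moreover have "good (2 * b + 1)" unfolding good_def using b0 D by simp
  ultimately show ?thesis by blast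
qed

end


lemma exp_small:
  fixes c M W0 :: real
  assumes c: "c > 0" and M: "M > 0"
  shows "\<exists>T. \<forall>t\<ge>T. W0 * exp (- c * t) < M"
proof (cases "W0 \<le> 0")
  case True
  then show ?thesis using M by (intro exI[of _ 0]) (auto intro: le_less_trans[OF mult_nonpos_nonneg])
next
  case False
  then have W: "W0 > 0" by simp
  define T where "T = ln (W0 / M) / c + 1"
  show ?thesis
  proof (intro exI[of _ T] allI impI)
    fix t assume t: "T \<le> t"
    have "ln (W0 / M) < c * t"
    proof -
      have "ln (W0 / M) < c * T" using c by (simp add: T_def field_simps)
      also have "\<dots> \<le> c * t" using c t by simp
      finally show ?thesis .
    qed
    then have "exp (ln (W0 / M)) < exp (c * t)" by simp
    then have "W0 / M < exp (c * t)" using W M by simp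
    then have "W0 < M * exp (c * t)" using M by (simp add: divide_less_eq mult.commute)
    then have "W0 / exp (c * t) < M" by (simp add: divide_less_eq)
    then show "W0 * exp (- c * t) < M" by (simp add: exp_minus divide_inverse)
  qed
qed

context setting begin

lemma cont_traj: "E_solution S U m phi R F rho \<mu>0 traj \<Longrightarrow> continuous_on {0..} traj"
  by (rule continuous_on_vector_derivative) (auto dest: sol_deriv)

lemma cont_phi: "E_solution S U m phi R F rho \<mu>0 traj \<Longrightarrow> continuous_on {0..} (\<lambda>t. dX (xof (traj t)))"
  unfolding dX_def
  by (intro continuous_on_infdist continuous_on_compose2[OF linear_continuous_on[OF bl_xof] cont_traj]) auto

lemma trap:
  assumes ep: "0 < \<epsilon>" "\<epsilon> \<le> \<epsilon>s" and g: "good r"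
    and sol: "E_solution S U m phi (Rr \<epsilon>) F rho \<mu>0 traj"
    and \<eta>: "0 < \<eta>" "\<eta> \<le> r" and d0: "dX (xof \<mu>0) < \<eta>"
    and \<beta>: "\<forall>x\<in>Dx U m. \<eta> \<le> dX x \<and> dX x \<le> r \<longrightarrow> \<beta> \<le> V x"
    and W0: "W \<mu>0 < \<beta>"
  shows "\<forall>t\<ge>0. dX (xof (traj t)) < \<eta> \<and> W (traj t) \<le> W \<mu>0 * exp (- cW * t)"
proof -
  define \<phi> where "\<phi> t = dX (xof (traj t))" for t
  have t0: "traj 0 = \<mu>0" using sol by (simp add: E_solution_def)
  have mu0: "\<mu>0 \<in> popX S U m" using sol_popX[OF sol, of 0] t0 by simp
  have cphi: "continuous_on {0..} \<phi>" using cont_phi[OF sol] by (simp add: \<phi>_def)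
  have W0nn: "W \<mu>0 \<ge> 0" using W_lower[OF mu0 xb_good[OF g mu0]] d0 \<eta> by simp
  have A: "\<forall>t\<ge>0. \<phi> t < \<eta>"
  proof (rule ccontr)
    assume "\<not> (\<forall>t\<ge>0. \<phi> t < \<eta>)"
    then have Zne: "{t \<in> {0..}. (\<lambda>_. \<eta>) t \<le> \<phi> t} \<noteq> {}" by (auto simp: not_less)
    define Z where "Z = {t \<in> {0..}. (\<lambda>_. \<eta>) t \<le> \<phi> t}"
    have Zc: "closed Z" unfolding Z_def
      by (rule continuous_on_closed_Collect_le[OF continuous_on_const cphi]) simp
    have Zb: "bdd_below Z" by (auto simp: Z_def bdd_below_def)
    define t1 where "t1 = Inf Z"
    have t1Z: "t1 \<in> Z" unfolding t1_def using closed_contains_Inf[OF Zne[folded Z_def] Zb Zc] .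
    then have t1: "t1 \<ge> 0" "\<eta> \<le> \<phi> t1" by (auto simp: Z_def)
    have "t1 \<noteq> 0" using t1 d0 t0 by (auto simp: \<phi>_def)
    then have t1p: "t1 > 0" using t1 by simp
    have below: "\<phi> \<tau> < \<eta>" if "0 \<le> \<tau>" "\<tau> < t1" for \<tau>
    proof (rule ccontr)
      assume "\<not> \<phi> \<tau> < \<eta>"
      then have "\<tau> \<in> Z" using that by (auto simp: Z_def)
      then have "t1 \<le> \<tau>" unfolding t1_def using Zb by (rule cInf_lower)
      then show False using that by simp
    qed
    have "{0..<t1} \<subseteq> {\<tau> \<in> {0..t1}. \<phi> \<tau> \<le> (\<lambda>_. \<eta>) \<tau>}" using below by (auto intro: less_imp_le)
    moreover have "closed {\<tau> \<in> {0..t1}. \<phi> \<tau> \<le> (\<lambda>_. \<eta>) \<tau>}"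
      by (rule continuous_on_closed_Collect_le[OF continuous_on_subset[OF cphi] continuous_on_const]) auto
    ultimately have "closure {0..<t1} \<subseteq> {\<tau> \<in> {0..t1}. \<phi> \<tau> \<le> \<eta>}" by (rule closure_minimal)
    then have reg: "\<phi> \<tau> \<le> \<eta>" if "0 \<le> \<tau>" "\<tau> \<le> t1" for \<tau>
      using that closure_atLeastLessThan[OF t1p] by auto
    have "W (traj t1) \<le> W \<mu>0 * exp (- cW * t1)"
      by (rule decay[OF ep g sol t1(1)]) (use reg \<eta> in \<open>force simp: \<phi>_def\<close>)
    also have "\<dots> \<le> W \<mu>0 * 1" using W0nn cW_pos t1 by (intro mult_left_mono) auto
    finally have Wt1: "W (traj t1) < \<beta>" using W0 by simp
    have mu1: "traj t1 \<in> popX S U m" by (rule sol_popX[OF sol t1(1)])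
    have p1: "\<phi> t1 \<le> r" using reg[of t1] t1 \<eta> by simp
    have "\<beta> \<le> V (xof (traj t1))" using \<beta> xof_Dx[OF mu1] t1 p1 by (auto simp: \<phi>_def)
    also have "\<dots> \<le> W (traj t1)" using W_lower[OF mu1 xb_good[OF g mu1]] p1 by (simp add: \<phi>_def)
    finally show False using Wt1 by simp
  qed
  show ?thesis
  proof (intro allI impI conjI)
    fix t :: real assume t: "0 \<le> t"
    show "dX (xof (traj t)) < \<eta>" using A t by (simp add: \<phi>_def)
    show "W (traj t) \<le> W \<mu>0 * exp (- cW * t)"
      by (rule decay[OF ep g sol t]) (use A \<eta> in \<open>force simp: \<phi>_def\<close>)
  qed
qed

definition Cx :: real where "Cx = (SOME b. b > 0 \<and> (\<forall>v. norm (xof v) \<le> b * norm v))"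
definition Cz :: real where "Cz = (SOME b. b > 0 \<and> (\<forall>v. norm (zof v) \<le> b * norm v))"

lemma Cx: "Cx > 0" "norm (xof v) \<le> Cx * norm v"
proof -
  have "\<exists>b. b > 0 \<and> (\<forall>v. norm (xof v) \<le> b * norm v)" using linear_bounded_pos[OF linear_xof] by blast
  then have "Cx > 0 \<and> (\<forall>v. norm (xof v) \<le> Cx * norm v)" unfolding Cx_def by (rule someI_ex)
  then show "Cx > 0" "norm (xof v) \<le> Cx * norm v" by auto
qed

lemma Cz: "Cz > 0" "norm (zof v) \<le> Cz * norm v"
proof -
  have "\<exists>b. b > 0 \<and> (\<forall>v. norm (zof v) \<le> b * norm v)" using linear_bounded_pos[OF linear_zof] by blast
  then have "Cz > 0 \<and> (\<forall>v. norm (zof v) \<le> Cz * norm v)" unfolding Cz_def by (rule someI_ex)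
  then show "Cz > 0" "norm (zof v) \<le> Cz * norm v" by auto
qed

lemma dX_n_dM: "dX (xof \<mu>) \<le> Cx * dM \<mu> \<and> norm (zof \<mu>) \<le> Cz * dM \<mu>"
proof -
  obtain y where y: "y \<in> Mset" "infdist \<mu> Mset = dist \<mu> y"
    using infdist_attains_inf[OF Mset_closed Mset_ne] by blast
  then obtain x' where x': "x' \<in> MF" "y = B x'" by auto
  have xy: "xof y = x'" using xof_B_Dx x' MF_Dx by auto
  have zy: "zof y = 0" unfolding zof_def xy using x'(2) by simp
  have "dX (xof \<mu>) \<le> dist (xof \<mu>) x'" unfolding dX_def using x' by (intro infdist_le)
  also have "\<dots> = norm (xof (\<mu> - y))" by (simp add: dist_norm linear_diff[OF linear_xof] xy)
  also have "\<dots> \<le> Cx * dM \<mu>" using Cx(2)[of "\<mu> - y"] y by (simp add: dM_def dist_norm)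
  finally have 1: "dX (xof \<mu>) \<le> Cx * dM \<mu>" .
  have "norm (zof \<mu>) = norm (zof (\<mu> - y))" by (simp add: linear_diff[OF linear_zof] zy)
  also have "\<dots> \<le> Cz * dM \<mu>" using Cz(2)[of "\<mu> - y"] y by (simp add: dM_def dist_norm)
  finally show ?thesis using 1 by simp
qed

lemma dM_nonneg: "dM \<mu> \<ge> 0" by (simp add: dM_def infdist_nonneg)

definition r0 :: real where "r0 = (SOME r. good r)"
lemma r0: "good r0" unfolding r0_def using good_exists by (rule someI_ex)

lemma conv:
  assumes g: "good r" and mu: "\<forall>t\<ge>0. traj t \<in> popX S U m" and reg: "\<forall>t\<ge>0. dX (xof (traj t)) \<le> r"
    and Wb: "\<forall>t\<ge>0. W (traj t) \<le> W0 * exp (- cW * t)"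
  shows "((\<lambda>t. dM (traj t)) \<longlongrightarrow> 0) at_top"
proof (rule tendstoI)
  fix e :: real assume e: "e > 0"
  have r: "r > 0" using g by (simp add: good_def)
  define \<eta> where "\<eta> = min (e / (2 * (Bc + 1))) r"
  have \<eta>: "\<eta> > 0" using e r Bc(1) by (simp add: \<eta>_def)
  obtain \<beta> where \<beta>: "\<beta> > 0" "\<forall>x\<in>Dx U m. \<eta> \<le> dX x \<and> dX x \<le> r \<longrightarrow> \<beta> \<le> V x"
    using beta[OF g \<eta>] by blast
  define M0 where "M0 = min \<beta> (e\<^sup>2 / 4)"
  have M0: "M0 > 0" using \<beta> e by (simp add: M0_def)
  obtain T where T: "\<forall>t\<ge>T. W0 * exp (- cW * t) < M0" using exp_small[OF cW_pos M0] by blast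
  show "\<forall>\<^sub>F t in at_top. dist (dM (traj t)) 0 < e"
    unfolding eventually_at_top_linorder
  proof (intro exI[of _ "max T 0"] allI impI)
    fix t assume t: "max T 0 \<le> t"
    then have t0: "t \<ge> 0" and tT: "t \<ge> T" by auto
    have mut: "traj t \<in> popX S U m" using mu t0 by simp
    have rt: "dX (xof (traj t)) \<le> r" using reg t0 by simp
    have Wt: "W (traj t) < M0" using Wb T t0 tT by (meson le_less_trans)
    have L: "(norm (zof (traj t)))\<^sup>2 \<le> W (traj t) \<and> V (xof (traj t)) \<le> W (traj t) \<and> 0 \<le> W (traj t)"
      by (rule W_lower[OF mut xb_good[OF g mut rt]])
    have "(norm (zof (traj t)))\<^sup>2 < (e / 2)\<^sup>2" using L Wt by (simp add: M0_def power_divide)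
    then have n: "norm (zof (traj t)) < e / 2" by (rule power_less_imp_less_base) (use e in simp)
    have dx: "dX (xof (traj t)) < \<eta>"
    proof (rule ccontr)
      assume "\<not> dX (xof (traj t)) < \<eta>"
      then have "\<beta> \<le> V (xof (traj t))" using \<beta>(2) xof_Dx[OF mut] rt by auto
      then show False using L Wt by (simp add: M0_def)
    qed
    have "Bc * dX (xof (traj t)) \<le> Bc * (e / (2 * (Bc + 1)))"
      using dx Bc(1) by (intro mult_left_mono) (auto simp: \<eta>_def)
    also have "\<dots> < e / 2" using Bc(1) e by (simp add: field_simps)
    finally have "dM (traj t) < e" using dM_bound[OF mut] n by simp
    then show "dist (dM (traj t)) 0 < e" using dM_nonneg by simp
  qed
qed

lemma stab:
  assumes ep: "0 < \<epsilon>" "\<epsilon> \<le> \<epsilon>s" and e: "e > 0"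
  shows "\<exists>d>0. \<forall>\<mu>0\<in>popX S U m. \<forall>traj. dM \<mu>0 < d \<and> E_solution S U m phi (Rr \<epsilon>) F rho \<mu>0 traj \<longrightarrow>
     (\<forall>t\<ge>0. dM (traj t) < e \<and> dX (xof (traj t)) \<le> r0 \<and> W (traj t) \<le> W \<mu>0 * exp (- cW * t))"
proof -
  have g: "good r0" by (rule r0)
  have r: "r0 > 0" using g by (simp add: good_def)
  define \<eta> where "\<eta> = min (e / (2 * (Bc + 1))) r0"
  have \<eta>: "\<eta> > 0" "\<eta> \<le> r0" using e r Bc(1) by (auto simp: \<eta>_def)
  obtain \<beta> where \<beta>: "\<beta> > 0" "\<forall>x\<in>Dx U m. \<eta> \<le> dX x \<and> dX x \<le> r0 \<longrightarrow> \<beta> \<le> V x"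
    using beta[OF g \<eta>(1)] by blast
  define M0 where "M0 = min \<beta> (e\<^sup>2 / 4)"
  have M0: "M0 > 0" using \<beta> e by (simp add: M0_def)
  define Q where "Q = \<gamma>2 * Cx\<^sup>2 + NP * Cz\<^sup>2 + 1"
  have Q: "Q > 0" using \<gamma>2_pos NP_pos by (simp add: Q_def add_nonneg_pos)
  define d where "d = min 1 (min (\<eta> / (Cx + 1)) (M0 / (2 * Q)))"
  have d: "d > 0" "d \<le> 1" "d \<le> \<eta> / (Cx + 1)" "d \<le> M0 / (2 * Q)"
    using \<eta> Cx(1) M0 Q by (auto simp: d_def)
  show ?thesis
  proof (rule exI[of _ d], rule conjI[OF d(1)], intro ballI allI impI)
    fix \<mu>0 traj and t :: real assume mu0: "\<mu>0 \<in> popX S U m" and h: "dM \<mu>0 < d \<and> E_solution S U m phi (Rr \<epsilon>) F rho \<mu>0 traj"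
      and t: "0 \<le> t"
    have sol: "E_solution S U m phi (Rr \<epsilon>) F rho \<mu>0 traj" using h by simp
    have dm: "dM \<mu>0 < d" using h by simp
    have dm0: "dM \<mu>0 \<ge> 0" by (rule dM_nonneg)
    have bnd: "dX (xof \<mu>0) \<le> Cx * dM \<mu>0" "norm (zof \<mu>0) \<le> Cz * dM \<mu>0" using dX_n_dM by auto
    have "Cx * dM \<mu>0 \<le> Cx * (\<eta> / (Cx + 1))" using dm d(3) Cx(1) by (intro mult_left_mono) auto
    also have "\<dots> < \<eta>" using Cx(1) \<eta>(1) by (simp add: field_simps)
    finally have dx0: "dX (xof \<mu>0) < \<eta>" using bnd(1) by simp
    have "W \<mu>0 \<le> \<gamma>2 * (dX (xof \<mu>0))\<^sup>2 + NP * (norm (zof \<mu>0))\<^sup>2"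
      by (rule W_upper[OF g mu0]) (use dx0 \<eta> in simp)
    also have "\<dots> \<le> \<gamma>2 * (Cx * dM \<mu>0)\<^sup>2 + NP * (Cz * dM \<mu>0)\<^sup>2"
      using bnd dX_nonneg \<gamma>2_pos NP_pos
      by (intro add_mono mult_left_mono power_mono) auto
    also have "\<dots> = (Q - 1) * (dM \<mu>0)\<^sup>2" by (simp add: Q_def power_mult_distrib algebra_simps)
    also have "\<dots> \<le> Q * d\<^sup>2"
    proof -
      have "(dM \<mu>0)\<^sup>2 \<le> d\<^sup>2" using dm dm0 by (intro power_mono) auto
      then have "Q * (dM \<mu>0)\<^sup>2 \<le> Q * d\<^sup>2" using Q by (intro mult_left_mono) auto
      moreover have "(Q - 1) * (dM \<mu>0)\<^sup>2 \<le> Q * (dM \<mu>0)\<^sup>2" by (simp add: algebra_simps)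
      ultimately show ?thesis by linarith
    qed
    also have "\<dots> \<le> Q * d" using d Q by (simp add: power2_eq_square mult_left_le)
    also have "\<dots> \<le> Q * (M0 / (2 * Q))" using d(4) Q by (intro mult_left_mono) auto
    also have "\<dots> < M0" using Q M0 by simp
    finally have W0: "W \<mu>0 < M0" .
    have tr: "\<forall>t\<ge>0. dX (xof (traj t)) < \<eta> \<and> W (traj t) \<le> W \<mu>0 * exp (- cW * t)"
      by (rule trap[OF ep g sol \<eta> dx0 \<beta>(2)]) (use W0 in \<open>simp add: M0_def\<close>)
    have mut: "traj t \<in> popX S U m" by (rule sol_popX[OF sol t])
    have dxt: "dX (xof (traj t)) < \<eta>" and Wt: "W (traj t) \<le> W \<mu>0 * exp (- cW * t)" using tr t by auto
    have rt: "dX (xof (traj t)) \<le> r0" using dxt \<eta> by simp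
    have L: "(norm (zof (traj t)))\<^sup>2 \<le> W (traj t) \<and> V (xof (traj t)) \<le> W (traj t) \<and> 0 \<le> W (traj t)"
      by (rule W_lower[OF mut xb_good[OF g mut rt]])
    have mu0L: "0 \<le> W \<mu>0" using W_lower[OF mu0 xb_good[OF g mu0]] dx0 \<eta> by simp
    have "W (traj t) \<le> W \<mu>0 * 1"
    proof -
      have "exp (- cW * t) \<le> 1" using cW_pos t by simp
      then have "W \<mu>0 * exp (- cW * t) \<le> W \<mu>0 * 1" using mu0L by (rule mult_left_mono)
      then show ?thesis using Wt by linarith
    qed
    then have "(norm (zof (traj t)))\<^sup>2 < (e / 2)\<^sup>2" using L W0 by (simp add: M0_def power_divide)
    then have n: "norm (zof (traj t)) < e / 2" by (rule power_less_imp_less_base) (use e in simp)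
    have "Bc * dX (xof (traj t)) \<le> Bc * (e / (2 * (Bc + 1)))"
      using dxt Bc(1) by (intro mult_left_mono) (auto simp: \<eta>_def)
    also have "\<dots> < e / 2" using Bc(1) e by (simp add: field_simps)
    finally have "dM (traj t) < e" using dM_bound[OF mut] n by simp
    then show "dM (traj t) < e \<and> dX (xof (traj t)) \<le> r0 \<and> W (traj t) \<le> W \<mu>0 * exp (- cW * t)"
      using rt Wt by simp
  qed
qed

end


context setting begin

lemma LAS1: "0 < \<epsilon> \<Longrightarrow> \<epsilon> \<le> \<epsilon>s \<Longrightarrow> \<forall>e>0. \<exists>d>0. \<forall>\<mu>0\<in>popX S U m. \<forall>traj.
        infdist \<mu>0 Mset < d \<and> E_solution S U m phi (Rr \<epsilon>) F rho \<mu>0 traj \<longrightarrow>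
        (\<forall>t\<ge>0. infdist (traj t) Mset < e)"
proof (intro allI impI)
  fix e :: real assume ep: "0 < \<epsilon>" "\<epsilon> \<le> \<epsilon>s" and e: "0 < e"
  obtain d where d: "d > 0" "\<forall>\<mu>0\<in>popX S U m. \<forall>traj. dM \<mu>0 < d \<and> E_solution S U m phi (Rr \<epsilon>) F rho \<mu>0 traj \<longrightarrow>
     (\<forall>t\<ge>0. dM (traj t) < e \<and> dX (xof (traj t)) \<le> r0 \<and> W (traj t) \<le> W \<mu>0 * exp (- cW * t))"
    using stab[OF ep e] by blast
  show "\<exists>d>0. \<forall>\<mu>0\<in>popX S U m. \<forall>traj.
        infdist \<mu>0 Mset < d \<and> E_solution S U m phi (Rr \<epsilon>) F rho \<mu>0 traj \<longrightarrow>
        (\<forall>t\<ge>0. infdist (traj t) Mset < e)"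
    using d unfolding dM_def by blast
qed

lemma LAS: "0 < \<epsilon> \<Longrightarrow> \<epsilon> \<le> \<epsilon>s \<Longrightarrow> E_LAS S U m phi (Rr \<epsilon>) F rho Mset"
proof -
  assume ep: "0 < \<epsilon>" "\<epsilon> \<le> \<epsilon>s"
  obtain d where d: "d > 0" "\<forall>\<mu>0\<in>popX S U m. \<forall>traj. dM \<mu>0 < d \<and> E_solution S U m phi (Rr \<epsilon>) F rho \<mu>0 traj \<longrightarrow>
     (\<forall>t\<ge>0. dM (traj t) < 1 \<and> dX (xof (traj t)) \<le> r0 \<and> W (traj t) \<le> W \<mu>0 * exp (- cW * t))"
    using stab[OF ep, of 1] by auto
  have "\<forall>\<mu>0\<in>popX S U m. \<forall>traj.
        infdist \<mu>0 Mset < d \<and> E_solution S U m phi (Rr \<epsilon>) F rho \<mu>0 traj \<longrightarrow>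
        ((\<lambda>t. infdist (traj t) Mset) \<longlongrightarrow> 0) at_top"
  proof (intro ballI allI impI)
    fix \<mu>0 traj assume mu0: "\<mu>0 \<in> popX S U m" and h: "infdist \<mu>0 Mset < d \<and> E_solution S U m phi (Rr \<epsilon>) F rho \<mu>0 traj"
    have sol: "E_solution S U m phi (Rr \<epsilon>) F rho \<mu>0 traj" using h by simp
    have all: "\<forall>t\<ge>0. dM (traj t) < 1 \<and> dX (xof (traj t)) \<le> r0 \<and> W (traj t) \<le> W \<mu>0 * exp (- cW * t)"
      using d(2) mu0 h by (simp add: dM_def)
    have "((\<lambda>t. dM (traj t)) \<longlongrightarrow> 0) at_top"
      by (rule conv[OF r0]) (use all sol_popX[OF sol] in auto)
    then show "((\<lambda>t. infdist (traj t) Mset) \<longlongrightarrow> 0) at_top" by (simp add: dM_def)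
  qed
  then show ?thesis unfolding E_LAS_def using LAS1[OF ep] d(1) by blast
qed

lemma GAS: "0 < \<epsilon> \<Longrightarrow> \<epsilon> \<le> \<epsilon>s \<Longrightarrow> Dbar = Dx U m \<Longrightarrow> E_GAS S U m phi (Rr \<epsilon>) F rho Mset"
proof -
  assume ep: "0 < \<epsilon>" "\<epsilon> \<le> \<epsilon>s" and D: "Dbar = Dx U m"
  obtain r where g: "good r" and rall: "\<forall>x\<in>Dx U m. dX x \<le> r" using good_all[OF D] by blast
  have "\<forall>\<mu>0\<in>popX S U m. \<forall>traj. E_solution S U m phi (Rr \<epsilon>) F rho \<mu>0 traj \<longrightarrow>
        ((\<lambda>t. infdist (traj t) Mset) \<longlongrightarrow> 0) at_top"
  proof (intro ballI allI impI)
    fix \<mu>0 traj assume mu0: "\<mu>0 \<in> popX S U m" and sol: "E_solution S U m phi (Rr \<epsilon>) F rho \<mu>0 traj"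
    have reg: "\<forall>t\<ge>0. dX (xof (traj t)) \<le> r" using rall xof_Dx sol_popX[OF sol] by blast
    have Wb: "\<forall>t\<ge>0. W (traj t) \<le> W \<mu>0 * exp (- cW * t)"
      using decay[OF ep g sol] reg by blast
    have "((\<lambda>t. dM (traj t)) \<longlongrightarrow> 0) at_top"
      by (rule conv[OF g _ reg Wb]) (use sol_popX[OF sol] in auto)
    then show "((\<lambda>t. infdist (traj t) Mset) \<longlongrightarrow> 0) at_top" by (simp add: dM_def)
  qed
  then show ?thesis unfolding E_GAS_def using LAS1[OF ep] by blast
qed

end

theorem theorem3:
  fixes S :: "'c::finite \<Rightarrow> 's::finite set"
    and A :: "'c \<Rightarrow> 's \<Rightarrow> 'a::finite set"
    and phi :: "'c \<Rightarrow> 's \<Rightarrow> 'a \<Rightarrow> 's \<Rightarrow> real"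
    and U :: "'c \<Rightarrow> ('s \<Rightarrow> 'a) set"
    and m :: "'c \<Rightarrow> real"
    and \<kappa> :: "'c \<Rightarrow> real"
    and F :: "'c \<Rightarrow> ('c,'s,'a) pstate \<Rightarrow> ('s \<Rightarrow> 'a) \<Rightarrow> real"
    and rho :: "'c \<Rightarrow> real^('s \<Rightarrow> 'a) \<Rightarrow> real^('s \<Rightarrow> 'a) \<Rightarrow> ('s \<Rightarrow> 'a) \<Rightarrow> ('s \<Rightarrow> 'a) \<Rightarrow> real"
    and MF :: "('c,'s,'a) pdist set"
    and Dbar :: "('c,'s,'a) pdist set"
    and V :: "('c,'s,'a) pdist \<Rightarrow> real"
    and V' :: "('c,'s,'a) pdist \<Rightarrow> ('c,'s,'a) pdist \<Rightarrow>\<^sub>L real"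
    and \<gamma>1 \<gamma>2 :: real
  \<comment> \<open>the model\<close>
  assumes S_ne: "\<And>c. S c \<noteq> {}"
    and A_ne: "\<And>c s. s \<in> S c \<Longrightarrow> A c s \<noteq> {}"
    and phi_nonneg: "\<And>c s a s'. s \<in> S c \<Longrightarrow> a \<in> A c s \<Longrightarrow> s' \<in> S c \<Longrightarrow> phi c s a s' \<ge> 0"
    and phi_sum: "\<And>c s a. s \<in> S c \<Longrightarrow> a \<in> A c s \<Longrightarrow> (\<Sum>s'\<in>S c. phi c s a s') = 1"
    and U_ne: "\<And>c. U c \<noteq> {}"
    and U_pol: "\<And>c u s. u \<in> U c \<Longrightarrow> s \<in> S c \<Longrightarrow> u s \<in> A c s"
    and unichain: "\<And>c u. u \<in> U c \<Longrightarrow> unique_recurrent_class (S c) (kern phi c u)"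
    and m_pos: "\<And>c. m c > 0"
    and \<kappa>_ge: "\<And>c. \<kappa> c \<ge> 1"
    and \<kappa>_min: "\<exists>c. \<kappa> c = 1"
    and F_C1: "\<exists>G. open G \<and> popX S U m \<subseteq> G \<and> (\<forall>c. \<forall>u\<in>U c. C1_on G (\<lambda>\<mu>. F c \<mu> u))"
    and rho_nonneg: "\<And>c p q u v. (\<forall>i. q $ i \<ge> 0) \<Longrightarrow> u \<in> U c \<Longrightarrow> v \<in> U c \<Longrightarrow> rho c p q u v \<ge> 0"
    and rho_lip: "\<And>c. \<exists>L. \<forall>u\<in>U c. \<forall>v\<in>U c.
                    L-lipschitz_on {(p, q). \<forall>i. q $ i \<ge> 0} (\<lambda>(p, q). rho c p q u v)"
  \<comment> \<open>the set of equilibria\<close>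
    and MF_ne: "MF \<noteq> {}"
    and MF_closed: "closed MF"
    and MF_NE: "MF \<subseteq> NE_ss S U m phi F"
  \<comment> \<open>(i)\<close>
    and hyp_i: "\<And>\<mu> c s u. \<mu> \<in> MSNE S U m phi F \<Longrightarrow> s \<in> S c \<Longrightarrow> u \<in> U c \<Longrightarrow> fr S U F rho \<mu> c s u = 0"
  \<comment> \<open>(ii)\<close>
    and Dbar_sub: "Dbar \<subseteq> Dx U m"
    and Dbar_nbhd: "\<exists>W. open W \<and> MF \<subseteq> W \<and> W \<inter> Dx U m \<subseteq> Dbar"
    and V_C1: "\<exists>G. open G \<and> Dbar \<subseteq> G \<and>
                 (\<forall>x\<in>G. (V has_derivative blinfun_apply (V' x)) (at x)) \<and> continuous_on G V'"
    and V_nonneg: "\<And>x. x \<in> Dbar \<Longrightarrow> V x \<ge> 0"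
    and V_pos: "\<And>x. x \<in> Dbar - MF \<Longrightarrow> V x > 0"
    and V_zero: "\<And>x. x \<in> MF \<Longrightarrow> V x = 0"
    and \<gamma>_pos: "\<gamma>1 > 0" "\<gamma>2 > 0"
    and V_decr: "\<And>x. x \<in> Dbar \<Longrightarrow> V' x (gred S U phi F rho x) \<le> - \<gamma>1 * (infdist x MF)\<^sup>2"
    and V_grad: "\<And>x. x \<in> Dbar \<Longrightarrow> norm (V' x) \<le> \<gamma>2 * infdist x MF"
  shows "\<exists>\<epsilon>s>0. \<forall>\<epsilon>. 0 < \<epsilon> \<and> \<epsilon> < \<epsilon>s \<longrightarrow>
           E_LAS S U m phi (\<lambda>c. \<kappa> c / \<epsilon>) F rho (BSK S U phi ` MF) \<and>
           (Dbar = Dx U m \<longrightarrow> E_GAS S U m phi (\<lambda>c. \<kappa> c / \<epsilon>) F rho (BSK S U phi ` MF))"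
proof -
  interpret st: setting S A phi U m F rho \<kappa> MF Dbar V V' \<gamma>1 \<gamma>2
    by unfold_locales (fact S_ne phi_nonneg phi_sum U_ne U_pol unichain m_pos F_C1 rho_lip \<kappa>_ge
        MF_ne MF_closed MF_NE hyp_i Dbar_sub Dbar_nbhd V_C1 V_nonneg V_pos V_zero \<gamma>_pos V_decr V_grad)+
  show ?thesis
  proof (intro exI[of _ st.\<epsilon>s] conjI allI impI)
    show "0 < st.\<epsilon>s" by (rule st.consts_pos(6))
  next
    fix \<epsilon> :: real assume "0 < \<epsilon> \<and> \<epsilon> < st.\<epsilon>s"
    then have ep: "0 < \<epsilon>" "\<epsilon> \<le> st.\<epsilon>s" by auto
    show "E_LAS S U m phi (\<lambda>c. \<kappa> c / \<epsilon>) F rho (BSK S U phi ` MF)" by (rule st.LAS[OF ep])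
  next
    fix \<epsilon> :: real assume "0 < \<epsilon> \<and> \<epsilon> < st.\<epsilon>s" and D: "Dbar = Dx U m"
    then have ep: "0 < \<epsilon>" "\<epsilon> \<le> st.\<epsilon>s" by auto
    show "E_GAS S U m phi (\<lambda>c. \<kappa> c / \<epsilon>) F rho (BSK S U phi ` MF)" by (rule st.GAS[OF ep D])
  qed
qed


end
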